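(* For every integer $n>16$, the generalized Petersen graph $GP(n,3)$ is not $\ell$-distance-balanced for any integer $\ell$ with $3\le \ell<{\rm diam}(GP(n,3))$.
   Context: For a connected graph $G$ and $x,y\in V(G)$, $d_G(x,y)$ denotes the distance and ${\rm diam}(G)$ the diameter. Let $W_{xy}=\{w\in V(G): d_G(w,x)<d_G(w,y)\}$. $G$ is called $\ell$-distance-balanced if $|W_{xy}|=|W_{yx}|$ for every pair $x,y\in V(G)$ with $d_G(x,y)=\ell$. For integers $n\ge 3$ and $1\le k<n/2$, the generalized Petersen graph $GP(n,k)$ has vertex set $\{u_i: i\in\mathbb{Z}_n\}\cup\{v_i: i\in\mathbb{Z}_n\}$ and edge set $\{u_iu_{i+1}: i\in\mathbb{Z}_n\}\cup\{v_iv_{i+k}: i\in\mathbb{Z}_n\}\cup\{u_iv_i: i\in\mathbb{Z}_n\}$. *)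

theory Defs
  imports Main
begin

definition is_walk :: "('a \<Rightarrow> 'a \<Rightarrow> bool) \<Rightarrow> 'a set \<Rightarrow> 'a list \<Rightarrow> bool" where
  "is_walk E V xs \<longleftrightarrow> xs \<noteq> [] \<and> set xs \<subseteq> V \<and>
     (\<forall>i. Suc i < length xs \<longrightarrow> E (xs ! i) (xs ! Suc i))"

text \<open>Distance: least number of edges of a walk from x to y (graph is assumed connected).\<close>
definition gdist :: "'a set \<Rightarrow> ('a \<Rightarrow> 'a \<Rightarrow> bool) \<Rightarrow> 'a \<Rightarrow> 'a \<Rightarrow> nat" where
  "gdist V E x y = (LEAST m. \<exists>xs. is_walk E V xs \<and> hd xs = x \<and> last xs = y \<and> length xs = Suc m)"

definition gdiam :: "'a set \<Rightarrow> ('a \<Rightarrow> 'a \<Rightarrow> bool) \<Rightarrow> nat" where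
  "gdiam V E = Max {gdist V E x y | x y. x \<in> V \<and> y \<in> V}"

definition Wset :: "'a set \<Rightarrow> ('a \<Rightarrow> 'a \<Rightarrow> bool) \<Rightarrow> 'a \<Rightarrow> 'a \<Rightarrow> 'a set" where
  "Wset V E x y = {w \<in> V. gdist V E w x < gdist V E w y}"

definition distance_balanced_at :: "'a set \<Rightarrow> ('a \<Rightarrow> 'a \<Rightarrow> bool) \<Rightarrow> nat \<Rightarrow> bool" where
  "distance_balanced_at V E l \<longleftrightarrow>
     (\<forall>x\<in>V. \<forall>y\<in>V. gdist V E x y = l \<longrightarrow> card (Wset V E x y) = card (Wset V E y x))"

text \<open>Generalized Petersen graph GP(n,k). Vertex (False, i) is u_i, (True, i) is v_i, i < n.\<close>
definition gp_verts :: "nat \<Rightarrow> (bool \<times> nat) set" where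
  "gp_verts n = UNIV \<times> {0..<n}"

definition gp_edge1 :: "nat \<Rightarrow> nat \<Rightarrow> bool \<times> nat \<Rightarrow> bool \<times> nat \<Rightarrow> bool" where
  "gp_edge1 n k x y \<longleftrightarrow>
     (x = (False, snd x) \<and> y = (False, (snd x + 1) mod n)) \<or>
     (x = (True, snd x) \<and> y = (True, (snd x + k) mod n)) \<or>
     (x = (False, snd x) \<and> y = (True, snd x))"

definition gp_adj :: "nat \<Rightarrow> nat \<Rightarrow> bool \<times> nat \<Rightarrow> bool \<times> nat \<Rightarrow> bool" where
  "gp_adj n k x y \<longleftrightarrow> x \<in> gp_verts n \<and> y \<in> gp_verts n \<and> (gp_edge1 n k x y \<or> gp_edge1 n k y x)"

end

theory Submission
  imports Defs
begin

definition guu :: "int \<Rightarrow> int" where "guu a = min a (a div 3 + 2 + a mod 3)"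
definition guv :: "int \<Rightarrow> int" where "guv a = a div 3 + a mod 3 + 1"
definition gvv :: "int \<Rightarrow> int" where "gvv a = (if a mod 3 = 0 then a div 3 else a div 3 + a mod 3 + 2)"
definition gg :: "bool \<Rightarrow> bool \<Rightarrow> int \<Rightarrow> int" where
  "gg p q a = (if p = q then (if p then gvv a else guu a) else guv a)"

lemma d3: "(3*q + c) div 3 = q + c div (3::int)" by simp
lemma m3: "(3*q + c) mod 3 = c mod (3::int)" by simp

lemma split3: obtains q r where "a = 3*q + r" "r = 0 \<or> r = 1 \<or> r = (2::int)"
proof -
  have "a = 3*(a div 3) + a mod 3" by simp
  moreover have "a mod 3 = 0 \<or> a mod 3 = 1 \<or> a mod 3 = 2" by presburger
  ultimately show ?thesis using that[of "a div 3" "a mod 3"] by argo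
qed

lemma guu_lip1: "a \<ge> 0 \<Longrightarrow> \<bar>guu (a+1) - guu a\<bar> \<le> 1"
  apply (rule split3[of a]) unfolding guu_def
  by (elim disjE; simp add: d3 m3 add.assoc min_def abs_if; linarith?)
lemma guv_lip1: "a \<ge> 0 \<Longrightarrow> \<bar>guv (a+1) - guv a\<bar> \<le> 1"
  apply (rule split3[of a]) unfolding guv_def
  by (elim disjE; simp add: d3 m3 add.assoc min_def abs_if; linarith?)
lemma guv_lip3a: "a \<ge> 0 \<Longrightarrow> \<bar>guv (a+3) - guv a\<bar> \<le> 1"
  apply (rule split3[of a]) unfolding guv_def
  by (elim disjE; simp add: d3 m3 add.assoc min_def abs_if; linarith?)
lemma gvv_lip3a: "a \<ge> 0 \<Longrightarrow> \<bar>gvv (a+3) - gvv a\<bar> \<le> 1"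
  apply (rule split3[of a]) unfolding gvv_def
  by (elim disjE; simp add: d3 m3 add.assoc min_def abs_if; linarith?)
lemma small4: "0 \<le> a \<Longrightarrow> a \<le> 3 \<Longrightarrow> a = 0 \<or> a = 1 \<or> a = 2 \<or> a = (3::int)" by auto
lemma guv_lip3b: "a \<ge> 0 \<Longrightarrow> b \<ge> 0 \<Longrightarrow> a + b = 3 \<Longrightarrow> \<bar>guv b - guv a\<bar> \<le> 1"
proof -
  assume "a \<ge> 0" "b \<ge> 0" "a + b = 3"
  then have "a = 0 \<and> b = 3 \<or> a = 1 \<and> b = 2 \<or> a = 2 \<and> b = 1 \<or> a = 3 \<and> b = 0" by linarith
  then show ?thesis by (elim disjE; simp add: guv_def)
qed
lemma gvv_lip3b: "a \<ge> 0 \<Longrightarrow> b \<ge> 0 \<Longrightarrow> a + b = 3 \<Longrightarrow> \<bar>gvv b - gvv a\<bar> \<le> 1"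
proof -
  assume "a \<ge> 0" "b \<ge> 0" "a + b = 3"
  then have "a = 0 \<and> b = 3 \<or> a = 1 \<and> b = 2 \<or> a = 2 \<and> b = 1 \<or> a = 3 \<and> b = 0" by linarith
  then show ?thesis by (elim disjE; simp add: gvv_def)
qed
lemma sw1: "a \<ge> 0 \<Longrightarrow> \<bar>guu a - guv a\<bar> \<le> 1"
  apply (rule split3[of a]) unfolding guu_def guv_def
  by (elim disjE; simp add: d3 m3 add.assoc min_def abs_if; linarith?)
lemma sw2: "a \<ge> 0 \<Longrightarrow> \<bar>gvv a - guv a\<bar> \<le> 1"
  apply (rule split3[of a]) unfolding gvv_def guv_def
  by (elim disjE; simp add: d3 m3 add.assoc min_def abs_if; linarith?)
lemma g_ge: "a \<ge> 0 \<Longrightarrow> gg p q a \<ge> a div 3"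
  apply (rule split3[of a]) unfolding gg_def guu_def gvv_def guv_def
  by (elim disjE; simp add: d3 m3 add.assoc min_def abs_if; linarith?)
lemma g_le: "a \<ge> 0 \<Longrightarrow> gg p q a \<le> a div 3 + 4"
  apply (rule split3[of a]) unfolding gg_def guu_def gvv_def guv_def
  by (elim disjE; simp add: d3 m3 add.assoc min_def abs_if; linarith?)
lemma g_nonneg: "a \<ge> 0 \<Longrightarrow> gg p q a \<ge> 0"
  using g_ge[of a p q] by (smt (verit) pos_imp_zdiv_nonneg_iff)
lemma small_le_big: "0 \<le> a \<Longrightarrow> a \<le> 3 \<Longrightarrow> 12 \<le> b \<Longrightarrow> gg p q a \<le> gg p q b"
proof -
  assume h: "0 \<le> a" "a \<le> 3" "12 \<le> b"
  have "a = 0 \<or> a = 1 \<or> a = 2 \<or> a = 3" using h by linarith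
  then have "gg p q a \<le> 4" by (elim disjE; simp add: gg_def guu_def guv_def gvv_def)
  moreover have "b div 3 \<ge> 4" using h by simp
  moreover have "gg p q b \<ge> b div 3" using g_ge h by auto
  ultimately show ?thesis by simp
qed


lemma gg_lip: assumes "0 \<le> a" "0 \<le> b" "s = (if q then 3 else 1)" "(b = a + s \<or> a = b + s \<or> a + b = s)"
  shows "\<bar>gg p q b - gg p q a\<bar> \<le> 1"
proof (cases q)
  case True
  then have s: "s = 3" using assms by simp
  have "\<bar>guv b - guv a\<bar> \<le> 1 \<and> \<bar>gvv b - gvv a\<bar> \<le> 1"
    using assms(4) unfolding s
  proof (elim disjE)
    assume "b = a + 3" then show ?thesis using guv_lip3a[of a] gvv_lip3a[of a] assms by simp
  next
    assume "a = b + 3" then show ?thesis using guv_lip3a[of b] gvv_lip3a[of b] assms(2) by (simp add: abs_minus_commute)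
  next
    assume "a + b = 3" then show ?thesis using guv_lip3b[of a b] gvv_lip3b[of a b] assms by simp
  qed
  then show ?thesis unfolding gg_def using True by (cases p) auto
next
  case False
  then have s: "s = 1" using assms by simp
  have "\<bar>guv b - guv a\<bar> \<le> 1 \<and> \<bar>guu b - guu a\<bar> \<le> 1"
    using assms(4) unfolding s
  proof (elim disjE)
    assume "b = a + 1" then show ?thesis using guv_lip1[of a] guu_lip1[of a] assms by simp
  next
    assume "a = b + 1" then show ?thesis using guv_lip1[of b] guu_lip1[of b] assms(2) by (simp add: abs_minus_commute)
  next
    assume "a + b = 1" then have "b = a + 1 \<or> a = b + 1" using assms(1,2) by arith
    then show ?thesis using guv_lip1[of a] guu_lip1[of a] guv_lip1[of b] guu_lip1[of b] assms(1,2) by (auto simp: abs_minus_commute)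
  qed
  then show ?thesis unfolding gg_def using False by (cases p) auto
qed

lemma gg_sw: "0 \<le> a \<Longrightarrow> \<bar>gg p True a - gg p False a\<bar> \<le> 1"
  using sw1[of a] sw2[of a] unfolding gg_def by (cases p) (auto simp: abs_minus_commute)

lemma gg_desc: "0 \<le> a \<Longrightarrow> (a > 0 \<or> p \<noteq> q) \<Longrightarrow> s = (if q then 3 else 1) \<Longrightarrow>
   (a \<ge> s \<and> gg p q (a - s) < gg p q a) \<or> gg p (\<not> q) a < gg p q a"
  apply (rule split3[of a]) unfolding gg_def guu_def guv_def gvv_def
  apply (cases p; cases q; simp)
  apply (elim disjE; simp add: d3 m3 add.assoc min_def; linarith?)+
  done
definition HH :: "nat \<Rightarrow> bool \<Rightarrow> bool \<Rightarrow> int \<Rightarrow> int" where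
  "HH n p q d = min (gg p q d) (gg p q (int n - d))"

lemma HH_step: assumes "n \<ge> 15" "0 \<le> d" "d < int n" "s = (if q then 3 else 1)"
  shows "\<bar>HH n p q ((d + s) mod int n) - HH n p q d\<bar> \<le> 1"
proof (cases "d + s < int n")
  case True
  then have m: "(d + s) mod int n = d + s" using assms by simp
  have s0: "s > 0" "s \<le> 3" using assms by auto
  have 1: "\<bar>gg p q (d+s) - gg p q d\<bar> \<le> 1" by (rule gg_lip) (use assms s0 in auto)
  have 2: "\<bar>gg p q (int n - (d+s)) - gg p q (int n - d)\<bar> \<le> 1" by (rule gg_lip) (use assms s0 True in auto)
  show ?thesis unfolding m HH_def using 1 2 by linarith
next
  case False
  have s0: "s > 0" "s \<le> 3" using assms by auto
  have m: "(d + s) mod int n = d + s - int n"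
  proof -
    have "(d + s) mod int n = ((d + s - int n) + int n) mod int n" by simp
    also have "... = (d+s - int n) mod int n" by (rule mod_add_self2)
    also have "... = d + s - int n" by (rule mod_pos_pos_trivial) (use assms False s0 in auto)
    finally show ?thesis .
  qed
  define a where "a = int n - d"
  have a: "0 < a" "a \<le> s" using assms False a_def by auto
  have "gg p q a \<le> gg p q d" by (rule small_le_big) (use a s0 assms a_def in auto)
  then have h1: "HH n p q d = gg p q a" unfolding HH_def a_def by simp
  have "gg p q (d + s - int n) \<le> gg p q (int n - (d + s - int n))"
    by (rule small_le_big) (use a s0 assms a_def in auto)
  then have h2: "HH n p q (d + s - int n) = gg p q (d + s - int n)" unfolding HH_def by simp
  have 3: "\<bar>gg p q (d + s - int n) - gg p q a\<bar> \<le> 1" by (rule gg_lip) (use assms s0 a a_def in auto)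
  show ?thesis unfolding m h1 h2 using 3 .
qed

lemma HH_sw: "0 \<le> d \<Longrightarrow> d \<le> int n \<Longrightarrow> \<bar>HH n p True d - HH n p False d\<bar> \<le> 1"
  unfolding HH_def using gg_sw[of d p] gg_sw[of "int n - d" p] by linarith

lemma HH_desc: assumes "n \<ge> 15" "0 \<le> d" "d < int n" "s = (if q then 3 else 1)" "\<not> (p = q \<and> d = 0)"
  shows "HH n p q ((d + s) mod int n) < HH n p q d \<or> HH n p q ((d - s) mod int n) < HH n p q d
     \<or> HH n p (\<not> q) d < HH n p q d"
proof -
  have s0: "s > 0" "s \<le> 3" using assms by auto
  show ?thesis
  proof (cases "gg p q d \<le> gg p q (int n - d)")
    case True
    then have H: "HH n p q d = gg p q d" unfolding HH_def by simp
    have "(d \<ge> s \<and> gg p q (d - s) < gg p q d) \<or> gg p (\<not> q) d < gg p q d"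
      by (rule gg_desc) (use assms in auto)
    then show ?thesis
    proof
      assume "d \<ge> s \<and> gg p q (d - s) < gg p q d"
      moreover then have "(d - s) mod int n = d - s" using assms by simp
      ultimately have "HH n p q ((d - s) mod int n) < HH n p q d" unfolding H by (simp add: HH_def min_less_iff_disj)
      then show ?thesis by simp
    next
      assume "gg p (\<not> q) d < gg p q d"
      then show ?thesis unfolding H by (simp add: HH_def min_less_iff_disj)
    qed
  next
    case False
    then have H: "HH n p q d = gg p q (int n - d)" unfolding HH_def by simp
    have "(int n - d \<ge> s \<and> gg p q (int n - d - s) < gg p q (int n - d)) \<or> gg p (\<not> q) (int n - d) < gg p q (int n - d)"
      by (rule gg_desc) (use assms in auto)
    then show ?thesis
    proof
      assume A: "int n - d \<ge> s \<and> gg p q (int n - d - s) < gg p q (int n - d)"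
      show ?thesis
      proof (cases "d + s < int n")
        case True
        then have "(d + s) mod int n = d + s" using assms s0 by simp
        then have "HH n p q ((d + s) mod int n) \<le> gg p q (int n - d - s)" by (simp add: HH_def algebra_simps)
        then show ?thesis using A H by linarith
      next
        case False
        then have "d + s = int n" using A by linarith
        then have "(d + s) mod int n = 0" by simp
        then have "HH n p q ((d + s) mod int n) \<le> gg p q (int n - d - s)" 
          using \<open>d + s = int n\<close> by (simp add: HH_def algebra_simps)
        then show ?thesis using A H by linarith
      qed
    next
      assume "gg p (\<not> q) (int n - d) < gg p q (int n - d)"
      then show ?thesis unfolding H by (simp add: HH_def min_less_iff_disj)
    qed
  qed
qed



lemma walk_lower:
  assumes "is_walk E V xs" "hd xs = x" "f x = (0::nat)" "\<And>a b. E a b \<Longrightarrow> f b \<le> f a + 1"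
  shows "i < length xs \<Longrightarrow> f (xs ! i) \<le> i"
proof (induction i)
  case 0
  then show ?case using assms by (simp add: is_walk_def hd_conv_nth)
next
  case (Suc i)
  then have "E (xs ! i) (xs ! Suc i)" using assms(1) unfolding is_walk_def by auto
  then show ?case using Suc assms(4)[of "xs ! i" "xs ! Suc i"] by simp
qed

lemma walk_exists:
  assumes "x \<in> V" "\<And>v. v \<in> V \<Longrightarrow> v \<noteq> x \<Longrightarrow> \<exists>w\<in>V. E w v \<and> f w < (f v::nat)"
  shows "v \<in> V \<Longrightarrow> \<exists>xs. is_walk E V xs \<and> hd xs = x \<and> last xs = v \<and> length xs \<le> Suc (f v)"
proof (induction "f v" arbitrary: v rule: less_induct)
  case less
  show ?case
  proof (cases "v = x")
    case True
    then show ?thesis using assms(1) by (intro exI[of _ "[x]"]) (auto simp: is_walk_def)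
  next
    case False
    then obtain w where w: "w \<in> V" "E w v" "f w < f v" using assms(2) less.prems by blast
    then obtain xs where xs: "is_walk E V xs" "hd xs = x" "last xs = w" "length xs \<le> Suc (f w)"
      using less.hyps by blast
    have ne: "xs \<noteq> []" using xs(1) unfolding is_walk_def by simp
    have "is_walk E V (xs @ [v])"
      unfolding is_walk_def
    proof (intro conjI allI impI)
      show "xs @ [v] \<noteq> []" by simp
      show "set (xs @ [v]) \<subseteq> V" using xs(1) less.prems unfolding is_walk_def by auto
      fix i assume i: "Suc i < length (xs @ [v])"
      show "E ((xs @ [v]) ! i) ((xs @ [v]) ! Suc i)"
      proof (cases "Suc i < length xs")
        case True
        then show ?thesis using xs(1) unfolding is_walk_def by (simp add: nth_append)
      next
        case False
        then have "i = length xs - 1" "Suc i = length xs" using i by auto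
        then show ?thesis using ne xs(3) w(2) by (simp add: nth_append last_conv_nth)
      qed
    qed
    then show ?thesis using xs ne w(3) by (intro exI[of _ "xs @ [v]"]) auto
  qed
qed

lemma gdist_eqI:
  assumes xV: "x \<in> V" and f0: "f x = 0"
  and lip: "\<And>a b. E a b \<Longrightarrow> f b \<le> f a + 1"
  and desc: "\<And>v. v \<in> V \<Longrightarrow> v \<noteq> x \<Longrightarrow> \<exists>w\<in>V. E w v \<and> f w < f v"
  and yV: "y \<in> V"
  shows "gdist V E x y = f y"
proof -
  obtain xs where xs: "is_walk E V xs" "hd xs = x" "last xs = y" "length xs \<le> Suc (f y)"
    using walk_exists[of x V E f y] xV desc yV by blast
  have low: "f y \<le> m" if "is_walk E V ys" "hd ys = x" "last ys = y" "length ys = Suc m" for ys m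
  proof -
    have "ys \<noteq> []" using that unfolding is_walk_def by simp
    then have "last ys = ys ! m" using that by (simp add: last_conv_nth)
    then show ?thesis using walk_lower[of E V ys x f m] that f0 lip by simp
  qed
  have ne: "xs \<noteq> []" using xs(1) unfolding is_walk_def by simp
  then obtain m where m: "length xs = Suc m" by (cases xs) auto
  have "f y \<le> m" using low xs m by blast
  then have "m = f y" using xs(4) m by simp
  then have P: "\<exists>xs. is_walk E V xs \<and> hd xs = x \<and> last xs = y \<and> length xs = Suc (f y)"
    using xs m by blast
  show ?thesis unfolding gdist_def
    by (rule Least_equality) (use P low in auto)
qed

definition DD :: "nat \<Rightarrow> nat \<Rightarrow> nat \<Rightarrow> int" where "DD n i k = (int k - int i) mod int n"
definition FF :: "nat \<Rightarrow> bool \<times> nat \<Rightarrow> bool \<times> nat \<Rightarrow> nat" where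
  "FF n x y = nat (HH n (fst x) (fst y) (DD n (snd x) (snd y)))"

lemma DD_range: "n > 0 \<Longrightarrow> 0 \<le> DD n i k \<and> DD n i k < int n"
  unfolding DD_def by simp

lemma DD_plus: "n > 0 \<Longrightarrow> DD n i ((k + s) mod n) = (DD n i k + int s) mod int n"
  unfolding DD_def by (simp add: of_nat_mod mod_simps algebra_simps)

lemma DD_minus: assumes "n > 0" "s \<le> n" shows "DD n i ((k + n - s) mod n) = (DD n i k - int s) mod int n"
proof -
  have "DD n i ((k + n - s) mod n) = ((int k - int i - int s) + int n) mod int n"
    unfolding DD_def using assms by (simp add: of_nat_mod mod_simps algebra_simps of_nat_diff)
  also have "... = (int k - int i - int s) mod int n" by (rule mod_add_self2)
  also have "... = (DD n i k - int s) mod int n" unfolding DD_def by (simp add: mod_simps)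
  finally show ?thesis .
qed

lemma HH_nonneg: "0 \<le> d \<Longrightarrow> d \<le> int n \<Longrightarrow> HH n p q d \<ge> 0"
  unfolding HH_def using g_nonneg[of d p q] g_nonneg[of "int n - d" p q] by simp

lemma gp_adj_sym: "gp_adj n k a b = gp_adj n k b a"
  unfolding gp_adj_def by auto


abbreviation HX :: "nat \<Rightarrow> bool \<times> nat \<Rightarrow> bool \<times> nat \<Rightarrow> int" where
  "HX n x a \<equiv> HH n (fst x) (fst a) (DD n (snd x) (snd a))"

lemma HX_nonneg: "n > 0 \<Longrightarrow> HX n x a \<ge> 0"
  using HH_nonneg DD_range by (simp add: less_imp_le)

lemma HX_edge1: assumes "n \<ge> 15" "gp_edge1 n 3 a b"
  shows "\<bar>HX n x b - HX n x a\<bar> \<le> 1"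
proof -
  obtain pa k where a: "a = (pa, k)" by (cases a)
  have n0: "n > 0" using assms by simp
  have dr: "0 \<le> DD n (snd x) k" "DD n (snd x) k < int n" using DD_range[OF n0] by auto
  from assms(2) consider (r) "pa = False" "b = (False, (k + 1) mod n)"
    | (i) "pa = True" "b = (True, (k + 3) mod n)" | (s) "pa = False" "b = (True, k)"
    unfolding gp_edge1_def a by auto
  then show ?thesis
  proof cases
    case r
    have "DD n (snd x) (snd b) = (DD n (snd x) k + 1) mod int n"
      using DD_plus[OF n0, of "snd x" k 1] r by simp
    then show ?thesis unfolding a using HH_step[of n "DD n (snd x) k" 1 False "fst x"] dr assms r
      by simp
  next
    case i
    have "DD n (snd x) (snd b) = (DD n (snd x) k + 3) mod int n"
      using DD_plus[OF n0, of "snd x" k 3] i by simp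
    then show ?thesis unfolding a using HH_step[of n "DD n (snd x) k" 3 True "fst x"] dr assms i
      by simp
  next
    case s
    then show ?thesis unfolding a using HH_sw[of "DD n (snd x) k" n "fst x"] dr by simp
  qed
qed

lemma FF_lip: assumes "n \<ge> 15" "gp_adj n 3 a b" shows "FF n x b \<le> FF n x a + 1"
proof -
  have "\<bar>HX n x b - HX n x a\<bar> \<le> 1"
    using assms HX_edge1[of n a b x] HX_edge1[of n b a x] unfolding gp_adj_def
    by (auto simp: abs_minus_commute)
  then show ?thesis unfolding FF_def using HX_nonneg[of n x a] HX_nonneg[of n x b] assms by simp
qed

lemma FF_desc: assumes "n \<ge> 15" "x \<in> gp_verts n" "y \<in> gp_verts n" "y \<noteq> x"
  shows "\<exists>w\<in>gp_verts n. gp_adj n 3 w y \<and> FF n x w < FF n x y"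
proof -
  obtain p i where x: "x = (p, i)" by (cases x)
  obtain q k where y: "y = (q, k)" by (cases y)
  have n0: "n > 0" using assms by simp
  have ik: "i < n" "k < n" using assms x y unfolding gp_verts_def by auto
  define d where "d = DD n i k"
  define s where "s = (if q then 3 else (1::nat))"
  have dr: "0 \<le> d" "d < int n" using DD_range[OF n0] d_def by auto
  have nz: "\<not> (p = q \<and> d = 0)"
  proof
    assume "p = q \<and> d = 0"
    then have "(int k - int i) mod int n = 0" "p = q" unfolding d_def DD_def by auto
    then have "k = i"
    proof (cases "k \<ge> i")
      case True
      then have "(int k - int i) mod int n = int k - int i" using ik by (intro mod_pos_pos_trivial) auto
      then show ?thesis using \<open>(int k - int i) mod int n = 0\<close> by simp
    next
      case False
      have "(int k - int i) mod int n = ((int k - int i) + int n) mod int n" by simp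
      also have "... = int k - int i + int n" using ik False by (intro mod_pos_pos_trivial) auto
      finally show ?thesis using \<open>(int k - int i) mod int n = 0\<close> ik by simp
    qed
    then show False using assms(4) x y \<open>p = q\<close> by simp
  qed
  have "HH n p q ((d + int s) mod int n) < HH n p q d \<or> HH n p q ((d - int s) mod int n) < HH n p q d
     \<or> HH n p (\<not> q) d < HH n p q d"
    by (rule HH_desc) (use assms dr nz s_def in auto)
  moreover
  define w1 where "w1 = (q, (k + s) mod n)"
  define w2 where "w2 = (q, (k + n - s) mod n)"
  define w3 where "w3 = (\<not> q, k)"
  have sn: "s \<le> n" using s_def assms by auto
  have V: "w1 \<in> gp_verts n" "w2 \<in> gp_verts n" "w3 \<in> gp_verts n"
    unfolding w1_def w2_def w3_def gp_verts_def using n0 ik by auto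
  have "gp_edge1 n 3 y w1" unfolding y w1_def gp_edge1_def s_def by auto
  then have a1: "gp_adj n 3 w1 y" unfolding gp_adj_def using V assms(3) by auto
  have "((k + n - s) mod n + s) mod n = k" using ik sn by (simp add: mod_add_left_eq)
  then have "gp_edge1 n 3 w2 y" unfolding y w2_def gp_edge1_def s_def by (cases q) auto
  then have a2: "gp_adj n 3 w2 y" unfolding gp_adj_def using V assms(3) by auto
  have "gp_edge1 n 3 w3 y \<or> gp_edge1 n 3 y w3" unfolding y w3_def gp_edge1_def by (cases q) auto
  then have a3: "gp_adj n 3 w3 y" unfolding gp_adj_def using V assms(3) by auto
  have h1: "HX n x w1 = HH n p q ((d + int s) mod int n)" unfolding w1_def x d_def using DD_plus[OF n0] by simp
  have h2: "HX n x w2 = HH n p q ((d - int s) mod int n)" unfolding w2_def x d_def using DD_minus[OF n0 sn] by simp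
  have h3: "HX n x w3 = HH n p (\<not> q) d" unfolding w3_def x d_def by simp
  have hy: "HX n x y = HH n p q d" unfolding x y d_def by simp
  have nn: "HX n x w1 \<ge> 0" "HX n x w2 \<ge> 0" "HX n x w3 \<ge> 0" using HX_nonneg n0 by auto
  have hyn: "HX n x y \<ge> 0" using HX_nonneg n0 by auto
  have lt: "HX n x w < HX n x y \<Longrightarrow> FF n x w < FF n x y" for w
    unfolding FF_def using HX_nonneg[OF n0, of x w] hyn by simp
  ultimately show ?thesis using V a1 a2 a3 h1 h2 h3 hy lt by metis
qed

lemma FF_self: "n > 0 \<Longrightarrow> FF n x x = 0"
  unfolding FF_def DD_def HH_def gg_def guu_def gvv_def
  using g_nonneg[of "int n" "fst x" "fst x"] by (auto simp: gg_def guu_def gvv_def)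

theorem gp_dist: assumes "n \<ge> 15" "x \<in> gp_verts n" "y \<in> gp_verts n"
  shows "gdist (gp_verts n) (gp_adj n 3) x y = FF n x y"
  by (rule gdist_eqI[where f = "FF n x"]) (use assms FF_lip FF_desc FF_self in auto)



lemma mod_plus_n[simp]: "(a + int n - b) mod int n = (a - b) mod int n"
proof -
  have e: "a + int n - b = (a - b) + int n" by simp
  show ?thesis unfolding e by (rule mod_add_self2)
qed

definition hh :: "nat \<Rightarrow> int \<Rightarrow> int" where "hh n d = min d (int n - d)"

lemma hh_neg: "n > 0 \<Longrightarrow> hh n ((- x) mod int n) = hh n (x mod int n)"
proof -
  assume n: "n > 0"
  show ?thesis
  proof (cases "x mod int n = 0")
    case True
    then have "(- x) mod int n = 0" by (simp add: zmod_zminus1_eq_if)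
    then show ?thesis using True by simp
  next
    case False
    then have "(- x) mod int n = int n - x mod int n" by (simp add: zmod_zminus1_eq_if)
    then show ?thesis unfolding hh_def by simp
  qed
qed

definition RR :: "nat \<Rightarrow> nat \<Rightarrow> nat \<Rightarrow> int" where
  "RR n j t = sgn (hh n (DD n t j) - hh n (DD n t 0))"

lemma RR_sum: assumes "n > 0" "j < n" shows "(\<Sum>t\<in>{0..<n}. RR n j t) = 0"
proof -
  define r where "r t = (j + n - t) mod n" for t
  have bij: "bij_betw r {0..<n} {0..<n}"
  proof (rule bij_betw_imageI)
    show "inj_on r {0..<n}"
    proof (rule inj_onI)
      fix a b assume ab: "a \<in> {0..<n}" "b \<in> {0..<n}" "r a = r b"
      then have "int ((j + n - a) mod n) = int ((j + n - b) mod n)" unfolding r_def by simp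
      then have "(int j + int n - int a) mod int n = (int j + int n - int b) mod int n"
        using ab assms by (simp add: of_nat_mod of_nat_diff)
      then have "(int j - int a + int n) mod int n = (int j - int b + int n) mod int n"
        by (simp add: algebra_simps)
      then have "(int j - int a) mod int n = (int j - int b) mod int n" by simp
      then have "int n dvd (int j - int a) - (int j - int b)" by (simp add: mod_eq_dvd_iff)
      then obtain c where c: "int b - int a = int n * c" by (auto elim!: dvdE)
      have "- int n < int b - int a" "int b - int a < int n" using ab by auto
      then have "c = 0" unfolding c
        by (smt (verit, best) mult_le_cancel_left1 mult_minus_right mult_less_cancel_left2)
      then show "a = b" using c by simp
    qed
    show "r ` {0..<n} = {0..<n}"
    proof
      show "r ` {0..<n} \<subseteq> {0..<n}" unfolding r_def using assms by auto
      show "{0..<n} \<subseteq> r ` {0..<n}"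
      proof
        fix t assume t: "t \<in> {0..<n}"
        have "r (r t) = t"
        proof -
          have rtn: "r t < n" using assms unfolding r_def by simp
          have "int (r (r t)) = int (j + n - r t) mod int n" unfolding r_def by (simp add: of_nat_mod)
          also have "... = (int j + int n - int (r t)) mod int n" using rtn by (simp add: of_nat_diff)
          also have "... = (int j - int (r t)) mod int n" by (rule mod_plus_n)
          also have "int (r t) = (int j - int t) mod int n"
            unfolding r_def using assms t by (simp add: of_nat_mod of_nat_diff mod_simps)
          finally have "int (r (r t)) = (int j - (int j - int t) mod int n) mod int n" .
          also have "... = int t mod int n" by (simp add: mod_simps)
          also have "... = int t" using t by simp
          finally show ?thesis by simp
        qed
        moreover have "r t \<in> {0..<n}" unfolding r_def using assms by auto
        ultimately show "t \<in> r ` {0..<n}" by force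
      qed
    qed
  qed
  have neg: "RR n j (r t) = - RR n j t" if t: "t \<in> {0..<n}" for t
  proof -
    have rt: "int (r t) = (int j - int t) mod int n"
      unfolding r_def using assms t by (simp add: of_nat_mod of_nat_diff mod_simps)
    have 1: "DD n (r t) j = int t mod int n" unfolding DD_def rt by (simp add: mod_simps)
    have 2: "DD n (r t) 0 = (- (int j - int t)) mod int n" unfolding DD_def rt by (simp add: mod_simps)
    have 3: "DD n t 0 = (- int t) mod int n" unfolding DD_def by simp
    have "hh n (DD n (r t) j) = hh n (DD n t 0)"
      unfolding 1 3 using hh_neg[of n "int t"] assms by simp
    moreover have "hh n (DD n (r t) 0) = hh n (DD n t j)"
      unfolding 2 using hh_neg[of n "int j - int t"] assms by (simp add: DD_def)
    ultimately show ?thesis unfolding RR_def by (simp add: sgn_minus[symmetric])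
  qed
  have "(\<Sum>t\<in>{0..<n}. RR n j t) = (\<Sum>t\<in>{0..<n}. RR n j (r t))"
    using sum.reindex_bij_betw[OF bij, of "RR n j"] by simp
  also have "... = - (\<Sum>t\<in>{0..<n}. RR n j t)" using neg by (simp add: sum_negf)
  finally show ?thesis by simp
qed


lemma guv_b: "0 \<le> a \<Longrightarrow> a + 3 \<le> 3 * guv a \<and> 3 * guv a \<le> a + 7"
  apply (rule split3[of a]) unfolding guv_def
  by (elim disjE; simp add: d3 m3 add.assoc)
lemma guu_up: "0 \<le> a \<Longrightarrow> 3 * guu a \<le> a + 10"
  apply (rule split3[of a]) unfolding guu_def
  by (elim disjE; simp add: d3 m3 add.assoc min_def)
lemma guu_lo: "3 \<le> a \<Longrightarrow> a + 6 \<le> 3 * guu a"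
  apply (rule split3[of a]) unfolding guu_def
  by (elim disjE; simp add: d3 m3 add.assoc min_def)
lemma gvv_b: "0 \<le> a \<Longrightarrow> a \<le> 3 * gvv a \<and> 3 * gvv a \<le> a + 10"
  apply (rule split3[of a]) unfolding gvv_def
  by (elim disjE; simp add: d3 m3 add.assoc)

definition UB :: "bool \<Rightarrow> bool \<Rightarrow> int" where "UB p q = (if p = q then 10 else 7)"
definition LB :: "bool \<Rightarrow> bool \<Rightarrow> int" where "LB p q = (if p = q then (if p then 0 else 6) else 3)"

lemma gg_up: "0 \<le> a \<Longrightarrow> 3 * gg p q a \<le> a + UB p q"
  unfolding gg_def UB_def using guv_b[of a] guu_up[of a] gvv_b[of a] by auto
lemma gg_lo: "3 \<le> a \<Longrightarrow> a + LB p q \<le> 3 * gg p q a"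
  unfolding gg_def LB_def using guv_b[of a] guu_lo[of a] gvv_b[of a] by auto
lemma gg_lo0: "0 \<le> a \<Longrightarrow> (p \<noteq> q \<or> p) \<Longrightarrow> a + LB p q \<le> 3 * gg p q a"
  unfolding gg_def LB_def using guv_b[of a] gvv_b[of a] by auto

lemma HH_up: "0 \<le> d \<Longrightarrow> d \<le> int n \<Longrightarrow> 3 * HH n p q d \<le> hh n d + UB p q"
  unfolding HH_def hh_def using gg_up[of d p q] gg_up[of "int n - d" p q]
  by (auto simp: min_def)
lemma HH_lo: "0 \<le> d \<Longrightarrow> d \<le> int n \<Longrightarrow> (3 \<le> hh n d \<or> p \<noteq> q \<or> p) \<Longrightarrow> hh n d + LB p q \<le> 3 * HH n p q d"
proof -
  assume h: "0 \<le> d" "d \<le> int n" "3 \<le> hh n d \<or> p \<noteq> q \<or> p"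
  have "hh n d + LB p q \<le> 3 * gg p q d"
    using h gg_lo[of d p q] gg_lo0[of d p q] unfolding hh_def by (auto simp: min_def split: if_splits)
  moreover have "hh n d + LB p q \<le> 3 * gg p q (int n - d)"
    using h gg_lo[of "int n - d" p q] gg_lo0[of "int n - d" p q] unfolding hh_def by (auto simp: min_def split: if_splits)
  ultimately show ?thesis unfolding HH_def by (simp add: min_def)
qed

definition sig :: "nat \<Rightarrow> nat \<Rightarrow> bool \<Rightarrow> nat \<Rightarrow> int" where
  "sig n j p t = sgn (HH n p True (DD n t j) - HH n p False (DD n t 0))"

lemma sig_outside: assumes "n > 0" "8 \<le> \<bar>hh n (DD n t j) - hh n (DD n t 0)\<bar>"
  shows "sig n j p t = RR n j t"
proof -
  define d0 where "d0 = DD n t 0"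
  define dj where "dj = DD n t j"
  have r: "0 \<le> d0" "d0 \<le> int n" "0 \<le> dj" "dj \<le> int n" using DD_range[OF assms(1)] d0_def dj_def
    by (auto simp: less_imp_le)
  have h0: "0 \<le> hh n d0" "0 \<le> hh n dj" using r unfolding hh_def by auto
  have dd: "8 \<le> \<bar>hh n dj - hh n d0\<bar>" using assms(2) d0_def dj_def by simp
  have uA: "3 * HH n p False d0 \<le> hh n d0 + UB p False" using HH_up r by auto
  have uC: "3 * HH n p True dj \<le> hh n dj + UB p True" using HH_up r by auto
  show ?thesis
  proof (cases "hh n dj - hh n d0 \<ge> 8")
    case True
    have lC: "hh n dj + LB p True \<le> 3 * HH n p True dj" by (rule HH_lo) (use r True h0 in auto)
    have "HH n p True dj > HH n p False d0" using uA lC True unfolding UB_def LB_def by (cases p) auto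
    then show ?thesis unfolding sig_def RR_def d0_def[symmetric] dj_def[symmetric] using True by simp
  next
    case False
    then have F: "hh n dj - hh n d0 \<le> -8" using dd by linarith
    have lA: "hh n d0 + LB p False \<le> 3 * HH n p False d0" by (rule HH_lo) (use r F h0 in auto)
    have "HH n p True dj < HH n p False d0" using uC lA F unfolding UB_def LB_def by (cases p) auto
    then show ?thesis unfolding sig_def RR_def d0_def[symmetric] dj_def[symmetric] using F by simp
  qed
qed


lemma DD0: "t < n \<Longrightarrow> DD n t 0 = (if t = 0 then 0 else int n - int t)"
proof -
  assume t: "t < n"
  show ?thesis
  proof (cases "t = 0")
    case False
    have "DD n t 0 = (- int t + int n) mod int n" unfolding DD_def by simp
    also have "... = - int t + int n" by (rule mod_pos_pos_trivial) (use t False in auto)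
    finally show ?thesis using False by simp
  qed (simp add: DD_def)
qed

lemma DDj: "t < n \<Longrightarrow> j < n \<Longrightarrow> DD n t j = (if t \<le> j then int j - int t else int j - int t + int n)"
proof -
  assume t: "t < n" "j < n"
  show ?thesis
  proof (cases "t \<le> j")
    case True
    then show ?thesis unfolding DD_def using t by simp
  next
    case False
    have "DD n t j = (int j - int t + int n) mod int n" unfolding DD_def by simp
    also have "... = int j - int t + int n" by (rule mod_pos_pos_trivial) (use t False in auto)
    finally show ?thesis using False by simp
  qed
qed

lemma hh0: "t < n \<Longrightarrow> hh n (DD n t 0) = min (int t) (int n - int t)"
  unfolding DD0 hh_def by auto
lemma hhj: "t < n \<Longrightarrow> j < n \<Longrightarrow> hh n (DD n t j) = min \<bar>int j - int t\<bar> (int n - \<bar>int j - int t\<bar>)"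
  unfolding DDj hh_def by auto

lemma window_cover: assumes "8 \<le> j" "2 * j \<le> n" "t < n" "\<bar>hh n (DD n t j) - hh n (DD n t 0)\<bar> < 8"
  shows "\<bar>2 * int t - int j\<bar> < 8 \<or> \<bar>2 * int t - int j - int n\<bar> < 8"
proof -
  have "j < n" using assms by simp
  then have "\<bar>min \<bar>int j - int t\<bar> (int n - \<bar>int j - int t\<bar>) - min (int t) (int n - int t)\<bar> < 8"
    using assms hh0 hhj by simp
  then show ?thesis using assms unfolding min_def abs_if by (auto split: if_splits)
qed



definition MM :: "nat \<Rightarrow> int" where "MM n = int (n div 6) + (if n mod 6 = 4 then 4 else 3)"

lemma guv_sh: "guv (3*K + c) = K + guv c" unfolding guv_def by simp
lemma gvv_sh: "gvv (3*K + c) = K + gvv c" unfolding gvv_def by simp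
lemma guu_sh: assumes "3 \<le> 3*K + c" shows "guu (3*K + c) = K + (c div 3 + 2 + c mod 3)"
proof -
  have "c = 3 * (c div 3) + c mod 3" "0 \<le> c mod 3" "c mod 3 < 3" by auto
  then have "3*K + c \<ge> K + (c div 3 + 2 + c mod 3)" using assms by (smt (verit))
  then show ?thesis unfolding guu_def min_def by (simp add: algebra_simps)
qed
lemma guv_sh2: "guv (3*K - c) = K + guv (- c)" using guv_sh[of K "- c"] by simp
lemma gvv_sh2: "gvv (3*K - c) = K + gvv (- c)" using gvv_sh[of K "- c"] by simp
lemma guu_sh2: "3 \<le> 3*K - c \<Longrightarrow> guu (3*K - c) = K + ((- c) div 3 + 2 + (- c) mod 3)"
  using guu_sh[of K "- c"] by simp
lemma guv_sh3: "guv (3*K) = K + 1" using guv_sh[of K 0] by (simp add: guv_def)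
lemma gvv_sh3: "gvv (3*K) = K" using gvv_sh[of K 0] by (simp add: gvv_def)
lemma guu_sh3: "1 \<le> K \<Longrightarrow> guu (3*K) = K + 2" using guu_sh[of K 0] by simp
lemma gnum: "guv 0 = 1" "guv 1 = 2" "gvv 0 = 0" "gvv 1 = 3" "guu 0 = 0" "guu 1 = 1"
  "guv (-1) = 2" "gvv (-1) = 3" "guu (-1) = -1"
  "guv (numeral w) = numeral w div 3 + numeral w mod 3 + 1"
  "gvv (numeral w) = (if numeral w mod 3 = (0::int) then numeral w div 3 else numeral w div 3 + numeral w mod 3 + 2)"
  "guu (numeral w) = min (numeral w) (numeral w div 3 + 2 + numeral w mod 3)"
  "guv (- numeral w) = (- numeral w) div 3 + (- numeral w) mod 3 + 1"
  "gvv (- numeral w) = (if (- numeral w) mod 3 = (0::int) then (- numeral w) div 3 else (- numeral w) div 3 + (- numeral w) mod 3 + 2)"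
  "guu (- numeral w) = min (- numeral w) ((- numeral w) div 3 + 2 + (- numeral w) mod 3)"
  by (simp_all add: guv_def gvv_def guu_def)
lemma guv_sh4: "guv (c + 3*K) = K + guv c" using guv_sh[of K c] by (simp add: add.commute)
lemma gvv_sh4: "gvv (c + 3*K) = K + gvv c" using gvv_sh[of K c] by (simp add: add.commute)
lemma guu_sh4: "3 \<le> c + 3*K \<Longrightarrow> guu (c + 3*K) = K + (c div 3 + 2 + c mod 3)"
  using guu_sh[of K c] by (simp add: add.commute)
lemma guv_sh6: "guv (6*K + c) = 2*K + guv c" using guv_sh[of "2*K" c] by simp
lemma gvv_sh6: "gvv (6*K + c) = 2*K + gvv c" using gvv_sh[of "2*K" c] by simp
lemma guu_sh6: "3 \<le> 6*K + c \<Longrightarrow> guu (6*K + c) = 2*K + (c div 3 + 2 + c mod 3)" using guu_sh[of "2*K" c] by simp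
lemma guv_sh7: "guv (c + 6*K) = 2*K + guv c" using guv_sh6[of K c] by (simp add: add.commute)
lemma gvv_sh7: "gvv (c + 6*K) = 2*K + gvv c" using gvv_sh6[of K c] by (simp add: add.commute)
lemma guu_sh7: "3 \<le> c + 6*K \<Longrightarrow> guu (c + 6*K) = 2*K + (c div 3 + 2 + c mod 3)" using guu_sh6[of K c] by (simp add: add.commute)
lemma guv_sh8: "guv (6*K) = 2*K + 1" using guv_sh6[of K 0] by (simp add: guv_def)
lemma gvv_sh8: "gvv (6*K) = 2*K" using gvv_sh6[of K 0] by (simp add: gvv_def)
lemma guu_sh8: "1 \<le> K \<Longrightarrow> guu (6*K) = 2*K + 2" using guu_sh6[of K 0] by simp
lemma guv_sh9: "guv (6*K - c) = 2*K + guv (- c)" using guv_sh6[of K "- c"] by simp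
lemma gvv_sh9: "gvv (6*K - c) = 2*K + gvv (- c)" using gvv_sh6[of K "- c"] by simp
lemma guu_sh9: "3 \<le> 6*K - c \<Longrightarrow> guu (6*K - c) = 2*K + ((- c) div 3 + 2 + (- c) mod 3)" using guu_sh6[of K "- c"] by simp
lemmas gsh6 = guv_sh6 gvv_sh6 guu_sh6 guv_sh7 gvv_sh7 guu_sh7 guv_sh8 gvv_sh8 guu_sh8 guv_sh9 gvv_sh9 guu_sh9
lemmas gsh = guv_sh4 gvv_sh4 guu_sh4 guv_sh gvv_sh guu_sh guv_sh2 gvv_sh2 guu_sh2 guv_sh3 gvv_sh3 guu_sh3 gnum

lemma HH_MM_0: assumes "int n = 6*K + 0" "K \<ge> 3" "0 - 12 < 2*c" "2*c < 0 + 12"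
  shows "HH n p q (3*K + c) \<le> K + 3"
proof -
  have e: "int n - (3*K + c') = 3*K + (0 - c')" for c' using assms(1) by simp
  have "c = -5 \<or> c = -4 \<or> c = -3 \<or> c = -2 \<or> c = -1 \<or> c = 0 \<or> c = 1 \<or> c = 2 \<or> c = 3 \<or> c = 4 \<or> c = 5" using assms(3,4) by presburger
  then show ?thesis unfolding HH_def e using assms(2)
    by (elim disjE; cases p; cases q; simp add: gg_def gsh)
qed

lemma HH_MM_1: assumes "int n = 6*K + 1" "K \<ge> 3" "1 - 12 < 2*c" "2*c < 1 + 12"
  shows "HH n p q (3*K + c) \<le> K + 3"
proof -
  have e: "int n - (3*K + c') = 3*K + (1 - c')" for c' using assms(1) by simp
  have "c = -5 \<or> c = -4 \<or> c = -3 \<or> c = -2 \<or> c = -1 \<or> c = 0 \<or> c = 1 \<or> c = 2 \<or> c = 3 \<or> c = 4 \<or> c = 5 \<or> c = 6" using assms(3,4) by presburger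
  then show ?thesis unfolding HH_def e using assms(2)
    by (elim disjE; cases p; cases q; simp add: gg_def gsh)
qed

lemma HH_MM_2: assumes "int n = 6*K + 2" "K \<ge> 3" "2 - 12 < 2*c" "2*c < 2 + 12"
  shows "HH n p q (3*K + c) \<le> K + 3"
proof -
  have e: "int n - (3*K + c') = 3*K + (2 - c')" for c' using assms(1) by simp
  have "c = -4 \<or> c = -3 \<or> c = -2 \<or> c = -1 \<or> c = 0 \<or> c = 1 \<or> c = 2 \<or> c = 3 \<or> c = 4 \<or> c = 5 \<or> c = 6" using assms(3,4) by presburger
  then show ?thesis unfolding HH_def e using assms(2)
    by (elim disjE; cases p; cases q; simp add: gg_def gsh)
qed

lemma HH_MM_3: assumes "int n = 6*K + 3" "K \<ge> 3" "3 - 12 < 2*c" "2*c < 3 + 12"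
  shows "HH n p q (3*K + c) \<le> K + 3"
proof -
  have e: "int n - (3*K + c') = 3*K + (3 - c')" for c' using assms(1) by simp
  have "c = -4 \<or> c = -3 \<or> c = -2 \<or> c = -1 \<or> c = 0 \<or> c = 1 \<or> c = 2 \<or> c = 3 \<or> c = 4 \<or> c = 5 \<or> c = 6 \<or> c = 7" using assms(3,4) by presburger
  then show ?thesis unfolding HH_def e using assms(2)
    by (elim disjE; cases p; cases q; simp add: gg_def gsh)
qed

lemma HH_MM_4: assumes "int n = 6*K + 4" "K \<ge> 3" "4 - 12 < 2*c" "2*c < 4 + 12"
  shows "HH n p q (3*K + c) \<le> K + 4"
proof -
  have e: "int n - (3*K + c') = 3*K + (4 - c')" for c' using assms(1) by simp
  have "c = -3 \<or> c = -2 \<or> c = -1 \<or> c = 0 \<or> c = 1 \<or> c = 2 \<or> c = 3 \<or> c = 4 \<or> c = 5 \<or> c = 6 \<or> c = 7" using assms(3,4) by presburger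
  then show ?thesis unfolding HH_def e using assms(2)
    by (elim disjE; cases p; cases q; simp add: gg_def gsh)
qed

lemma HH_MM_5: assumes "int n = 6*K + 5" "K \<ge> 3" "5 - 12 < 2*c" "2*c < 5 + 12"
  shows "HH n p q (3*K + c) \<le> K + 3"
proof -
  have e: "int n - (3*K + c') = 3*K + (5 - c')" for c' using assms(1) by simp
  have "c = -3 \<or> c = -2 \<or> c = -1 \<or> c = 0 \<or> c = 1 \<or> c = 2 \<or> c = 3 \<or> c = 4 \<or> c = 5 \<or> c = 6 \<or> c = 7 \<or> c = 8" using assms(3,4) by presburger
  then show ?thesis unfolding HH_def e using assms(2)
    by (elim disjE; cases p; cases q; simp add: gg_def gsh)
qed



definition ff :: "nat \<Rightarrow> nat \<Rightarrow> nat \<Rightarrow> int" where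
  "ff n j t = sig n j False t + sig n j True t - 2 * RR n j t"
definition SS :: "nat \<Rightarrow> nat \<Rightarrow> int" where
  "SS n j = (\<Sum>t\<in>{0..<n}. sig n j False t + sig n j True t)"

lemma SS_ff: "n > 0 \<Longrightarrow> j < n \<Longrightarrow> SS n j = (\<Sum>t\<in>{0..<n}. ff n j t)"
  unfolding SS_def ff_def using RR_sum[of n j]
  by (simp add: sum.distrib sum_subtractf sum_distrib_left[symmetric])

lemma SS_decomp:
  assumes "n > 0" "j < n" "A \<subseteq> {0..<n}" "B \<subseteq> {0..<n}" "A \<inter> B = {}"
    "\<And>t. t < n \<Longrightarrow> t \<notin> A \<Longrightarrow> t \<notin> B \<Longrightarrow> ff n j t = 0"
  shows "SS n j = (\<Sum>t\<in>A. ff n j t) + (\<Sum>t\<in>B. ff n j t)"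
proof -
  have fin: "finite A" "finite B" using assms(3,4) finite_subset by auto
  have "SS n j = (\<Sum>t\<in>{0..<n}. ff n j t)" using SS_ff assms by simp
  also have "... = (\<Sum>t\<in>A \<union> B. ff n j t)"
  proof (rule sum.mono_neutral_right)
    show "finite {0..<n}" by simp
    show "A \<union> B \<subseteq> {0..<n}" using assms by auto
    show "\<forall>i\<in>{0..<n} - (A \<union> B). ff n j i = 0" using assms(6) by auto
  qed
  also have "... = (\<Sum>t\<in>A. ff n j t) + (\<Sum>t\<in>B. ff n j t)"
    by (rule sum.union_disjoint) (use fin assms in auto)
  finally show ?thesis .
qed

definition NWs :: "nat \<Rightarrow> nat \<Rightarrow> nat set" where
  "NWs n j = {t. t < n \<and> \<bar>2 * int t - int j\<bar> < 8}"
definition FWs :: "nat \<Rightarrow> nat \<Rightarrow> nat set" where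
  "FWs n j = {t. t < n \<and> \<bar>2 * int t - int j - int n\<bar> < 8}"

lemma ff_zero_general: assumes "8 \<le> j" "2 * j \<le> n" "t < n" "t \<notin> NWs n j" "t \<notin> FWs n j"
  shows "ff n j t = 0"
proof -
  have "\<not> \<bar>hh n (DD n t j) - hh n (DD n t 0)\<bar> < 8"
    using window_cover[of j n t] assms unfolding NWs_def FWs_def by auto
  then have "8 \<le> \<bar>hh n (DD n t j) - hh n (DD n t 0)\<bar>" by simp
  then show ?thesis unfolding ff_def using sig_outside[of n t j] assms by simp
qed

lemma SS_windows: assumes "17 \<le> n" "j < n"
  "\<And>t. t < n \<Longrightarrow> t \<notin> NWs n j \<Longrightarrow> t \<notin> FWs n j \<Longrightarrow> ff n j t = 0"
  shows "SS n j = (\<Sum>t\<in>NWs n j. ff n j t) + (\<Sum>t\<in>FWs n j. ff n j t)"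
  by (rule SS_decomp) (use assms in \<open>auto simp: NWs_def FWs_def\<close>)

lemma sum_sgn_card: assumes "finite V"
  shows "(\<Sum>w\<in>V. sgn (c w - a w :: int)) = int (card {w\<in>V. a w < c w}) - int (card {w\<in>V. c w < a w})"
proof -
  have "(\<Sum>w\<in>V. sgn (c w - a w)) = (\<Sum>w\<in>V. (if a w < c w then 1 else 0) - (if c w < a w then 1 else 0))"
    by (rule sum.cong) (auto simp: sgn_if)
  also have "... = (\<Sum>w\<in>V. (if a w < c w then 1 else 0)) - (\<Sum>w\<in>V. (if c w < a w then 1 else (0::int)))"
    by (simp add: sum_subtractf)
  also have "... = int (card {w\<in>V. a w < c w}) - int (card {w\<in>V. c w < a w})"
    using assms by (simp add: sum.If_cases Int_def)
  finally show ?thesis .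
qed



definition phi :: "int \<Rightarrow> int \<Rightarrow> int" where
  "phi J s = sgn (guv (J - s) - guu s) + sgn (gvv (J - s) - guv s) - 2 * sgn (J - 2*s)"
definition WS :: "int \<Rightarrow> int set" where "WS J = {s. \<bar>2*s - J\<bar> < 8}"
definition PHI :: "int \<Rightarrow> int" where "PHI J = (\<Sum>s\<in>WS J. phi J s)"

lemma sum_upto_int: "sum f {i..j::int} = sum_list (map f [i..j])"
  by (metis distinct_upto set_upto sum.distinct_set_conv_list)

lemma sum_shift_int: "sum f {k + a..k + b} = (\<Sum>i\<in>{a..b}. f (k + i))" for k a b :: int
proof -
  have "sum f {k + a..k + b} = sum f (plus k ` {a..b})" by (simp add: add.commute)
  also have "... = (\<Sum>i\<in>{a..b}. f (k + i))" by (subst sum.reindex) (auto simp: inj_on_def)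
  finally show ?thesis .
qed

lemma WS_eq: "WS J = {(J - 7) div 2 + (if even J then 1 else 0) .. (J + 7) div 2}"
  unfolding WS_def by (auto simp: abs_less_iff; presburger)

lemma gg_elim: "0 \<le> a \<Longrightarrow> a + 12 \<le> b \<Longrightarrow> gg p q a \<le> gg p q b"
proof -
  assume h: "0 \<le> a" "a + 12 \<le> b"
  have "gg p q a \<le> a div 3 + 4" using g_le h by auto
  moreover have "a div 3 + 4 \<le> b div 3" using h by linarith
  moreover have "b div 3 \<le> gg p q b" using g_ge h by auto
  ultimately show ?thesis by linarith
qed

lemma HH_elim1: "0 \<le> d \<Longrightarrow> 2*d + 12 \<le> int n \<Longrightarrow> HH n p q d = gg p q d"
  unfolding HH_def using gg_elim[of d "int n - d" p q] by simp
lemma HH_elim2: "d \<le> int n \<Longrightarrow> 2*(int n - d) + 12 \<le> int n \<Longrightarrow> HH n p q d = gg p q (int n - d)"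
  unfolding HH_def using gg_elim[of "int n - d" d p q] by simp

lemma near_eval: assumes "40 \<le> n" "6 \<le> j" "2*j \<le> n" "t \<in> NWs n j"
  shows "ff n j t = phi (int j) (int t)"
proof -
  have t: "t < n" "\<bar>2 * int t - int j\<bar> < 8" using assms(4) unfolding NWs_def by auto
  have "2 * int t < int j + 8" using t(2) by (auto simp: abs_less_iff)
  then have tj: "t \<le> j" using assms by presburger
  have A: "HH n p False (DD n t 0) = gg p False (int t)" for p
  proof (cases "t = 0")
    case True then show ?thesis using DD0[of t n] t HH_elim1[of 0 n p False] assms by simp
  next
    case False then show ?thesis using DD0[of t n] t HH_elim2[of "int n - int t" n p False] assms by simp
  qed
  have C: "HH n p True (DD n t j) = gg p True (int j - int t)" for p
    using DDj[of t n j] t tj HH_elim1[of "int j - int t" n p True] assms by simp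
  have R: "RR n j t = sgn (int j - 2 * int t)"
    unfolding RR_def using hh0[of t n] hhj[of t n j] t tj assms by (simp add: min_def)
  show ?thesis unfolding ff_def sig_def A C R phi_def by (simp add: gg_def)
qed

lemma far_eval: assumes "40 \<le> n" "20 \<le> j" "2*j \<le> n" "t \<in> FWs n j"
  shows "ff n j t = phi (int n - int j) (int n - int t)"
proof -
  have t: "t < n" "\<bar>2 * int t - int j - int n\<bar> < 8" using assms(4) unfolding FWs_def by auto
  have tb: "int n + int j - 8 < 2 * int t" "2 * int t < int n + int j + 8" using t(2) by (auto simp: abs_less_iff)
  have tj: "j < t" "t \<noteq> 0" using tb assms by auto
  have A: "HH n p False (DD n t 0) = gg p False (int n - int t)" for p
    using DD0[of t n] t tj tb HH_elim1[of "int n - int t" n p False] assms by simp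
  have C: "HH n p True (DD n t j) = gg p True (int t - int j)" for p
    using DDj[of t n j] t tj tb HH_elim2[of "int j - int t + int n" n p True] assms by simp
  have h1: "hh n (DD n t 0) = int n - int t" using hh0[of t n] t tj tb assms by (simp add: min_def)
  have h2: "hh n (DD n t j) = int t - int j" using hhj[of t n j] t tj tb assms by (simp add: min_def)
  have R: "RR n j t = sgn (2 * int t - int j - int n)"
    unfolding RR_def h1 h2 by (simp add: algebra_simps)
  show ?thesis unfolding ff_def sig_def A C R phi_def by (simp add: gg_def algebra_simps)
qed

lemma near_sum: assumes "40 \<le> n" "6 \<le> j" "2*j \<le> n"
  shows "(\<Sum>t\<in>NWs n j. ff n j t) = PHI (int j)"
proof -
  have "(\<Sum>t\<in>NWs n j. ff n j t) = (\<Sum>t\<in>NWs n j. phi (int j) (int t))"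
    using near_eval[OF assms] by simp
  also have "... = (\<Sum>s\<in>int ` NWs n j. phi (int j) s)" by (simp add: sum.reindex)
  also have "int ` NWs n j = WS (int j)"
  proof
    show "int ` NWs n j \<subseteq> WS (int j)" unfolding NWs_def WS_def by auto
    show "WS (int j) \<subseteq> int ` NWs n j"
    proof
      fix s assume s: "s \<in> WS (int j)"
      then have "0 \<le> s" "\<bar>2*s - int j\<bar> < 8" unfolding WS_def using assms by auto
      then have "nat s \<in> NWs n j" "s = int (nat s)" unfolding NWs_def using assms by auto
      then show "s \<in> int ` NWs n j" by blast
    qed
  qed
  finally show ?thesis unfolding PHI_def .
qed

lemma far_sum: assumes "40 \<le> n" "20 \<le> j" "2*j \<le> n"
  shows "(\<Sum>t\<in>FWs n j. ff n j t) = PHI (int n - int j)"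
proof -
  have "(\<Sum>t\<in>FWs n j. ff n j t) = (\<Sum>t\<in>FWs n j. phi (int n - int j) (int n - int t))"
    using far_eval[OF assms] by simp
  also have "... = (\<Sum>s\<in>(\<lambda>t. int n - int t) ` FWs n j. phi (int n - int j) s)"
    by (subst sum.reindex) (auto simp: inj_on_def)
  also have "(\<lambda>t. int n - int t) ` FWs n j = WS (int n - int j)"
  proof
    show "(\<lambda>t. int n - int t) ` FWs n j \<subseteq> WS (int n - int j)" unfolding FWs_def WS_def by auto
    show "WS (int n - int j) \<subseteq> (\<lambda>t. int n - int t) ` FWs n j"
    proof
      fix s assume s: "s \<in> WS (int n - int j)"
      then have "\<bar>2*s - (int n - int j)\<bar> < 8" unfolding WS_def by auto
      then have "nat (int n - s) \<in> FWs n j" "s = int n - int (nat (int n - s))" unfolding FWs_def using assms by auto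
      then show "s \<in> (\<lambda>t. int n - int t) ` FWs n j" by blast
    qed
  qed
  finally show ?thesis unfolding PHI_def .
qed

lemma PHI_0: assumes "J = 6*K + 0" "K \<ge> 3" shows "PHI J = -2"
proof -
  have w: "WS J = {3*K + -3 .. 3*K + 3}" unfolding WS_def assms(1) by (auto simp: abs_less_iff; presburger)
  have e: "6*K + 0 - (3*K + i) = 3*K + (0 - i)" for i by simp
  show ?thesis unfolding PHI_def w sum_shift_int sum_upto_int using assms(2)
    by (simp add: assms(1) phi_def e gsh upto_rec1)
qed

lemma PHI_1: assumes "J = 6*K + 1" "K \<ge> 3" shows "PHI J = -2"
proof -
  have w: "WS J = {3*K + -3 .. 3*K + 4}" unfolding WS_def assms(1) by (auto simp: abs_less_iff; presburger)
  have e: "6*K + 1 - (3*K + i) = 3*K + (1 - i)" for i by simp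
  show ?thesis unfolding PHI_def w sum_shift_int sum_upto_int using assms(2)
    by (simp add: assms(1) phi_def e gsh upto_rec1)
qed

lemma PHI_2: assumes "J = 6*K + 2" "K \<ge> 3" shows "PHI J = -2"
proof -
  have w: "WS J = {3*K + -2 .. 3*K + 4}" unfolding WS_def assms(1) by (auto simp: abs_less_iff; presburger)
  have e: "6*K + 2 - (3*K + i) = 3*K + (2 - i)" for i by simp
  show ?thesis unfolding PHI_def w sum_shift_int sum_upto_int using assms(2)
    by (simp add: assms(1) phi_def e gsh upto_rec1)
qed

lemma PHI_3: assumes "J = 6*K + 3" "K \<ge> 3" shows "PHI J = -2"
proof -
  have w: "WS J = {3*K + -2 .. 3*K + 5}" unfolding WS_def assms(1) by (auto simp: abs_less_iff; presburger)
  have e: "6*K + 3 - (3*K + i) = 3*K + (3 - i)" for i by simp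
  show ?thesis unfolding PHI_def w sum_shift_int sum_upto_int using assms(2)
    by (simp add: assms(1) phi_def e gsh upto_rec1)
qed

lemma PHI_4: assumes "J = 6*K + 4" "K \<ge> 3" shows "PHI J = -2"
proof -
  have w: "WS J = {3*K + -1 .. 3*K + 5}" unfolding WS_def assms(1) by (auto simp: abs_less_iff; presburger)
  have e: "6*K + 4 - (3*K + i) = 3*K + (4 - i)" for i by simp
  show ?thesis unfolding PHI_def w sum_shift_int sum_upto_int using assms(2)
    by (simp add: assms(1) phi_def e gsh upto_rec1)
qed

lemma PHI_5: assumes "J = 6*K + 5" "K \<ge> 3" shows "PHI J = -2"
proof -
  have w: "WS J = {3*K + -1 .. 3*K + 6}" unfolding WS_def assms(1) by (auto simp: abs_less_iff; presburger)
  have e: "6*K + 5 - (3*K + i) = 3*K + (5 - i)" for i by simp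
  show ?thesis unfolding PHI_def w sum_shift_int sum_upto_int using assms(2)
    by (simp add: assms(1) phi_def e gsh upto_rec1)
qed

lemma PHI_c6: "PHI 6 = 0"
proof -
  have w: "WS 6 = {0 .. 6}" unfolding WS_def by (auto simp: abs_less_iff)
  show ?thesis unfolding PHI_def w sum_upto_int by (simp add: phi_def gsh upto_rec1)
qed

lemma PHI_c8: "PHI 8 = 0"
proof -
  have w: "WS 8 = {1 .. 7}" unfolding WS_def by (auto simp: abs_less_iff)
  show ?thesis unfolding PHI_def w sum_upto_int by (simp add: phi_def gsh upto_rec1)
qed

lemma PHI_c9: "PHI 9 = -1"
proof -
  have w: "WS 9 = {1 .. 8}" unfolding WS_def by (auto simp: abs_less_iff)
  show ?thesis unfolding PHI_def w sum_upto_int by (simp add: phi_def gsh upto_rec1)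
qed

lemma PHI_c11: "PHI 11 = -1"
proof -
  have w: "WS 11 = {2 .. 9}" unfolding WS_def by (auto simp: abs_less_iff)
  show ?thesis unfolding PHI_def w sum_upto_int by (simp add: phi_def gsh upto_rec1)
qed

lemma PHI_c14: "PHI 14 = -2"
proof -
  have w: "WS 14 = {4 .. 10}" unfolding WS_def by (auto simp: abs_less_iff)
  show ?thesis unfolding PHI_def w sum_upto_int by (simp add: phi_def gsh upto_rec1)
qed

lemma PHI_c17: "PHI 17 = -2"
proof -
  have w: "WS 17 = {5 .. 12}" unfolding WS_def by (auto simp: abs_less_iff)
  show ?thesis unfolding PHI_def w sum_upto_int by (simp add: phi_def gsh upto_rec1)
qed

lemma PHI_ge: assumes "J \<ge> 18" shows "PHI J = -2"
proof -
  define K where "K = J div 6"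
  have K: "K \<ge> 3" using assms K_def by simp
  have "J = 6*K + J mod 6" unfolding K_def by simp
  moreover have "J mod 6 = 0 \<or> J mod 6 = 1 \<or> J mod 6 = 2 \<or> J mod 6 = 3 \<or> J mod 6 = 4 \<or> J mod 6 = 5" by presburger
  ultimately show ?thesis using PHI_0 PHI_1 PHI_2 PHI_3 PHI_4 PHI_5 K by metis
qed



definition farF :: "int \<Rightarrow> int \<Rightarrow> int \<Rightarrow> int \<Rightarrow> int" where
  "farF K r j c = sgn (min (guv (3*K + (j + r - c))) (guv (3*K + (c - j))) - min (guu (3*K + (r - c))) (guu (3*K + c)))
  + sgn (min (gvv (3*K + (j + r - c))) (gvv (3*K + (c - j))) - min (guv (3*K + (r - c))) (guv (3*K + c)))
  - 2 * sgn (min (3*K + (j + r - c)) (3*K + (c - j)) - min (3*K + (r - c)) (3*K + c))"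

lemma far_pt0: assumes "int n = 6*K + r" "int j < 3*K + c" "3*K + c < 6*K + r" "0 \<le> int j"
  shows "ff n j (nat (3*K + c)) =
    sgn (min (guv (3*K + (int j + r - c))) (guv (3*K + (c - int j))) - min (guu (3*K + (r - c))) (guu (3*K + c)))
  + sgn (min (gvv (3*K + (int j + r - c))) (gvv (3*K + (c - int j))) - min (guv (3*K + (r - c))) (guv (3*K + c)))
  - 2 * sgn (min (3*K + (int j + r - c)) (3*K + (c - int j)) - min (3*K + (r - c)) (3*K + c))"
proof -
  define t where "t = nat (3*K + c)"
  have ti: "int t = 3*K + c" unfolding t_def using assms by simp
  have t: "t < n" "j < t" "t \<noteq> 0" using ti assms by auto
  have d0: "DD n t 0 = 3*K + (r - c)" using DD0[of t n] t ti assms by simp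
  have dj: "DD n t j = 3*K + (int j + r - c)" using DDj[of t n j] t ti assms by simp
  have e0: "int n - (3*K + (r - c)) = 3*K + c" using assms by simp
  have ej: "int n - (3*K + (int j + r - c)) = 3*K + (c - int j)" using assms by simp
  show ?thesis unfolding t_def[symmetric] ff_def sig_def RR_def d0 dj HH_def hh_def e0 ej
    by (simp add: gg_def)
qed

lemma far_pt: assumes "int n = 6*K + r" "int j < 3*K + c" "3*K + c < 6*K + r"
  shows "ff n j (nat (3*K + c)) = farF K r (int j) c"
  unfolding farF_def using far_pt0[OF assms] by simp

lemma sum_FWs_int: "(\<Sum>t\<in>FWs n j. f t) = (\<Sum>s\<in>{s. 0 \<le> s \<and> s < int n \<and> \<bar>2*s - int j - int n\<bar> < 8}. f (nat s))"
proof -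
  have "int ` FWs n j = {s. 0 \<le> s \<and> s < int n \<and> \<bar>2*s - int j - int n\<bar> < 8}"
  proof
    show "int ` FWs n j \<subseteq> {s. 0 \<le> s \<and> s < int n \<and> \<bar>2*s - int j - int n\<bar> < 8}" unfolding FWs_def by auto
    show "{s. 0 \<le> s \<and> s < int n \<and> \<bar>2*s - int j - int n\<bar> < 8} \<subseteq> int ` FWs n j"
    proof
      fix s assume "s \<in> {s. 0 \<le> s \<and> s < int n \<and> \<bar>2*s - int j - int n\<bar> < 8}"
      then have "nat s \<in> FWs n j" "s = int (nat s)" unfolding FWs_def by auto
      then show "s \<in> int ` FWs n j" by blast
    qed
  qed
  then have "(\<Sum>s\<in>{s. 0 \<le> s \<and> s < int n \<and> \<bar>2*s - int j - int n\<bar> < 8}. f (nat s)) = (\<Sum>s\<in>int ` FWs n j. f (nat s))" by simp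
  also have "... = (\<Sum>t\<in>FWs n j. f t)" by (simp add: sum.reindex)
  finally show ?thesis by simp
qed

lemma PSI_6_0: assumes "int n = 6*K + 0" "K \<ge> 4" shows "(\<Sum>t\<in>FWs n 6. ff n 6 t) = -2"
proof -
  have w: "{s. 0 \<le> s \<and> s < int n \<and> \<bar>2*s - int 6 - int n\<bar> < 8} = {3*K + 0 .. 3*K + 6}"
    unfolding assms(1) using assms(2) by (auto simp: abs_less_iff; presburger)
  have c: "(\<Sum>i\<in>{0..6}. ff n 6 (nat (3*K + i))) = (\<Sum>i\<in>{0..6}. farF K 0 6 i)"
    by (rule sum.cong) (use assms(2) in \<open>simp_all add: far_pt[OF assms(1)]\<close>)
  show ?thesis unfolding sum_FWs_int w unfolding sum_shift_int unfolding c unfolding sum_upto_int using assms(2)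
    by (simp add: farF_def gsh upto_rec1)
qed

lemma PSI_6_1: assumes "int n = 6*K + 1" "K \<ge> 4" shows "(\<Sum>t\<in>FWs n 6. ff n 6 t) = -2"
proof -
  have w: "{s. 0 \<le> s \<and> s < int n \<and> \<bar>2*s - int 6 - int n\<bar> < 8} = {3*K + 0 .. 3*K + 7}"
    unfolding assms(1) using assms(2) by (auto simp: abs_less_iff; presburger)
  have c: "(\<Sum>i\<in>{0..7}. ff n 6 (nat (3*K + i))) = (\<Sum>i\<in>{0..7}. farF K 1 6 i)"
    by (rule sum.cong) (use assms(2) in \<open>simp_all add: far_pt[OF assms(1)]\<close>)
  show ?thesis unfolding sum_FWs_int w unfolding sum_shift_int unfolding c unfolding sum_upto_int using assms(2)
    by (simp add: farF_def gsh upto_rec1)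
qed

lemma PSI_6_2: assumes "int n = 6*K + 2" "K \<ge> 4" shows "(\<Sum>t\<in>FWs n 6. ff n 6 t) = -2"
proof -
  have w: "{s. 0 \<le> s \<and> s < int n \<and> \<bar>2*s - int 6 - int n\<bar> < 8} = {3*K + 1 .. 3*K + 7}"
    unfolding assms(1) using assms(2) by (auto simp: abs_less_iff; presburger)
  have c: "(\<Sum>i\<in>{1..7}. ff n 6 (nat (3*K + i))) = (\<Sum>i\<in>{1..7}. farF K 2 6 i)"
    by (rule sum.cong) (use assms(2) in \<open>simp_all add: far_pt[OF assms(1)]\<close>)
  show ?thesis unfolding sum_FWs_int w unfolding sum_shift_int unfolding c unfolding sum_upto_int using assms(2)
    by (simp add: farF_def gsh upto_rec1)
qed

lemma PSI_6_3: assumes "int n = 6*K + 3" "K \<ge> 4" shows "(\<Sum>t\<in>FWs n 6. ff n 6 t) = -2"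
proof -
  have w: "{s. 0 \<le> s \<and> s < int n \<and> \<bar>2*s - int 6 - int n\<bar> < 8} = {3*K + 1 .. 3*K + 8}"
    unfolding assms(1) using assms(2) by (auto simp: abs_less_iff; presburger)
  have c: "(\<Sum>i\<in>{1..8}. ff n 6 (nat (3*K + i))) = (\<Sum>i\<in>{1..8}. farF K 3 6 i)"
    by (rule sum.cong) (use assms(2) in \<open>simp_all add: far_pt[OF assms(1)]\<close>)
  show ?thesis unfolding sum_FWs_int w unfolding sum_shift_int unfolding c unfolding sum_upto_int using assms(2)
    by (simp add: farF_def gsh upto_rec1)
qed

lemma PSI_6_4: assumes "int n = 6*K + 4" "K \<ge> 4" shows "(\<Sum>t\<in>FWs n 6. ff n 6 t) = -2"
proof -
  have w: "{s. 0 \<le> s \<and> s < int n \<and> \<bar>2*s - int 6 - int n\<bar> < 8} = {3*K + 2 .. 3*K + 8}"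
    unfolding assms(1) using assms(2) by (auto simp: abs_less_iff; presburger)
  have c: "(\<Sum>i\<in>{2..8}. ff n 6 (nat (3*K + i))) = (\<Sum>i\<in>{2..8}. farF K 4 6 i)"
    by (rule sum.cong) (use assms(2) in \<open>simp_all add: far_pt[OF assms(1)]\<close>)
  show ?thesis unfolding sum_FWs_int w unfolding sum_shift_int unfolding c unfolding sum_upto_int using assms(2)
    by (simp add: farF_def gsh upto_rec1)
qed

lemma PSI_6_5: assumes "int n = 6*K + 5" "K \<ge> 4" shows "(\<Sum>t\<in>FWs n 6. ff n 6 t) = -2"
proof -
  have w: "{s. 0 \<le> s \<and> s < int n \<and> \<bar>2*s - int 6 - int n\<bar> < 8} = {3*K + 2 .. 3*K + 9}"
    unfolding assms(1) using assms(2) by (auto simp: abs_less_iff; presburger)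
  have c: "(\<Sum>i\<in>{2..9}. ff n 6 (nat (3*K + i))) = (\<Sum>i\<in>{2..9}. farF K 5 6 i)"
    by (rule sum.cong) (use assms(2) in \<open>simp_all add: far_pt[OF assms(1)]\<close>)
  show ?thesis unfolding sum_FWs_int w unfolding sum_shift_int unfolding c unfolding sum_upto_int using assms(2)
    by (simp add: farF_def gsh upto_rec1)
qed

lemma PSI_8_0: assumes "int n = 6*K + 0" "K \<ge> 4" shows "(\<Sum>t\<in>FWs n 8. ff n 8 t) = -2"
proof -
  have w: "{s. 0 \<le> s \<and> s < int n \<and> \<bar>2*s - int 8 - int n\<bar> < 8} = {3*K + 1 .. 3*K + 7}"
    unfolding assms(1) using assms(2) by (auto simp: abs_less_iff; presburger)
  have c: "(\<Sum>i\<in>{1..7}. ff n 8 (nat (3*K + i))) = (\<Sum>i\<in>{1..7}. farF K 0 8 i)"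
    by (rule sum.cong) (use assms(2) in \<open>simp_all add: far_pt[OF assms(1)]\<close>)
  show ?thesis unfolding sum_FWs_int w unfolding sum_shift_int unfolding c unfolding sum_upto_int using assms(2)
    by (simp add: farF_def gsh upto_rec1)
qed

lemma PSI_8_1: assumes "int n = 6*K + 1" "K \<ge> 4" shows "(\<Sum>t\<in>FWs n 8. ff n 8 t) = -2"
proof -
  have w: "{s. 0 \<le> s \<and> s < int n \<and> \<bar>2*s - int 8 - int n\<bar> < 8} = {3*K + 1 .. 3*K + 8}"
    unfolding assms(1) using assms(2) by (auto simp: abs_less_iff; presburger)
  have c: "(\<Sum>i\<in>{1..8}. ff n 8 (nat (3*K + i))) = (\<Sum>i\<in>{1..8}. farF K 1 8 i)"
    by (rule sum.cong) (use assms(2) in \<open>simp_all add: far_pt[OF assms(1)]\<close>)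
  show ?thesis unfolding sum_FWs_int w unfolding sum_shift_int unfolding c unfolding sum_upto_int using assms(2)
    by (simp add: farF_def gsh upto_rec1)
qed

lemma PSI_8_2: assumes "int n = 6*K + 2" "K \<ge> 4" shows "(\<Sum>t\<in>FWs n 8. ff n 8 t) = -2"
proof -
  have w: "{s. 0 \<le> s \<and> s < int n \<and> \<bar>2*s - int 8 - int n\<bar> < 8} = {3*K + 2 .. 3*K + 8}"
    unfolding assms(1) using assms(2) by (auto simp: abs_less_iff; presburger)
  have c: "(\<Sum>i\<in>{2..8}. ff n 8 (nat (3*K + i))) = (\<Sum>i\<in>{2..8}. farF K 2 8 i)"
    by (rule sum.cong) (use assms(2) in \<open>simp_all add: far_pt[OF assms(1)]\<close>)
  show ?thesis unfolding sum_FWs_int w unfolding sum_shift_int unfolding c unfolding sum_upto_int using assms(2)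
    by (simp add: farF_def gsh upto_rec1)
qed

lemma PSI_8_3: assumes "int n = 6*K + 3" "K \<ge> 4" shows "(\<Sum>t\<in>FWs n 8. ff n 8 t) = -2"
proof -
  have w: "{s. 0 \<le> s \<and> s < int n \<and> \<bar>2*s - int 8 - int n\<bar> < 8} = {3*K + 2 .. 3*K + 9}"
    unfolding assms(1) using assms(2) by (auto simp: abs_less_iff; presburger)
  have c: "(\<Sum>i\<in>{2..9}. ff n 8 (nat (3*K + i))) = (\<Sum>i\<in>{2..9}. farF K 3 8 i)"
    by (rule sum.cong) (use assms(2) in \<open>simp_all add: far_pt[OF assms(1)]\<close>)
  show ?thesis unfolding sum_FWs_int w unfolding sum_shift_int unfolding c unfolding sum_upto_int using assms(2)
    by (simp add: farF_def gsh upto_rec1)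
qed

lemma PSI_8_4: assumes "int n = 6*K + 4" "K \<ge> 4" shows "(\<Sum>t\<in>FWs n 8. ff n 8 t) = -2"
proof -
  have w: "{s. 0 \<le> s \<and> s < int n \<and> \<bar>2*s - int 8 - int n\<bar> < 8} = {3*K + 3 .. 3*K + 9}"
    unfolding assms(1) using assms(2) by (auto simp: abs_less_iff; presburger)
  have c: "(\<Sum>i\<in>{3..9}. ff n 8 (nat (3*K + i))) = (\<Sum>i\<in>{3..9}. farF K 4 8 i)"
    by (rule sum.cong) (use assms(2) in \<open>simp_all add: far_pt[OF assms(1)]\<close>)
  show ?thesis unfolding sum_FWs_int w unfolding sum_shift_int unfolding c unfolding sum_upto_int using assms(2)
    by (simp add: farF_def gsh upto_rec1)
qed

lemma PSI_8_5: assumes "int n = 6*K + 5" "K \<ge> 4" shows "(\<Sum>t\<in>FWs n 8. ff n 8 t) = -2"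
proof -
  have w: "{s. 0 \<le> s \<and> s < int n \<and> \<bar>2*s - int 8 - int n\<bar> < 8} = {3*K + 3 .. 3*K + 10}"
    unfolding assms(1) using assms(2) by (auto simp: abs_less_iff; presburger)
  have c: "(\<Sum>i\<in>{3..10}. ff n 8 (nat (3*K + i))) = (\<Sum>i\<in>{3..10}. farF K 5 8 i)"
    by (rule sum.cong) (use assms(2) in \<open>simp_all add: far_pt[OF assms(1)]\<close>)
  show ?thesis unfolding sum_FWs_int w unfolding sum_shift_int unfolding c unfolding sum_upto_int using assms(2)
    by (simp add: farF_def gsh upto_rec1)
qed

lemma PSI_9_0: assumes "int n = 6*K + 0" "K \<ge> 4" shows "(\<Sum>t\<in>FWs n 9. ff n 9 t) = -2"
proof -
  have w: "{s. 0 \<le> s \<and> s < int n \<and> \<bar>2*s - int 9 - int n\<bar> < 8} = {3*K + 1 .. 3*K + 8}"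
    unfolding assms(1) using assms(2) by (auto simp: abs_less_iff; presburger)
  have c: "(\<Sum>i\<in>{1..8}. ff n 9 (nat (3*K + i))) = (\<Sum>i\<in>{1..8}. farF K 0 9 i)"
    by (rule sum.cong) (use assms(2) in \<open>simp_all add: far_pt[OF assms(1)]\<close>)
  show ?thesis unfolding sum_FWs_int w unfolding sum_shift_int unfolding c unfolding sum_upto_int using assms(2)
    by (simp add: farF_def gsh upto_rec1)
qed

lemma PSI_9_1: assumes "int n = 6*K + 1" "K \<ge> 4" shows "(\<Sum>t\<in>FWs n 9. ff n 9 t) = -2"
proof -
  have w: "{s. 0 \<le> s \<and> s < int n \<and> \<bar>2*s - int 9 - int n\<bar> < 8} = {3*K + 2 .. 3*K + 8}"
    unfolding assms(1) using assms(2) by (auto simp: abs_less_iff; presburger)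
  have c: "(\<Sum>i\<in>{2..8}. ff n 9 (nat (3*K + i))) = (\<Sum>i\<in>{2..8}. farF K 1 9 i)"
    by (rule sum.cong) (use assms(2) in \<open>simp_all add: far_pt[OF assms(1)]\<close>)
  show ?thesis unfolding sum_FWs_int w unfolding sum_shift_int unfolding c unfolding sum_upto_int using assms(2)
    by (simp add: farF_def gsh upto_rec1)
qed

lemma PSI_9_2: assumes "int n = 6*K + 2" "K \<ge> 4" shows "(\<Sum>t\<in>FWs n 9. ff n 9 t) = -2"
proof -
  have w: "{s. 0 \<le> s \<and> s < int n \<and> \<bar>2*s - int 9 - int n\<bar> < 8} = {3*K + 2 .. 3*K + 9}"
    unfolding assms(1) using assms(2) by (auto simp: abs_less_iff; presburger)
  have c: "(\<Sum>i\<in>{2..9}. ff n 9 (nat (3*K + i))) = (\<Sum>i\<in>{2..9}. farF K 2 9 i)"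
    by (rule sum.cong) (use assms(2) in \<open>simp_all add: far_pt[OF assms(1)]\<close>)
  show ?thesis unfolding sum_FWs_int w unfolding sum_shift_int unfolding c unfolding sum_upto_int using assms(2)
    by (simp add: farF_def gsh upto_rec1)
qed

lemma PSI_9_3: assumes "int n = 6*K + 3" "K \<ge> 4" shows "(\<Sum>t\<in>FWs n 9. ff n 9 t) = -2"
proof -
  have w: "{s. 0 \<le> s \<and> s < int n \<and> \<bar>2*s - int 9 - int n\<bar> < 8} = {3*K + 3 .. 3*K + 9}"
    unfolding assms(1) using assms(2) by (auto simp: abs_less_iff; presburger)
  have c: "(\<Sum>i\<in>{3..9}. ff n 9 (nat (3*K + i))) = (\<Sum>i\<in>{3..9}. farF K 3 9 i)"
    by (rule sum.cong) (use assms(2) in \<open>simp_all add: far_pt[OF assms(1)]\<close>)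
  show ?thesis unfolding sum_FWs_int w unfolding sum_shift_int unfolding c unfolding sum_upto_int using assms(2)
    by (simp add: farF_def gsh upto_rec1)
qed

lemma PSI_9_4: assumes "int n = 6*K + 4" "K \<ge> 4" shows "(\<Sum>t\<in>FWs n 9. ff n 9 t) = -2"
proof -
  have w: "{s. 0 \<le> s \<and> s < int n \<and> \<bar>2*s - int 9 - int n\<bar> < 8} = {3*K + 3 .. 3*K + 10}"
    unfolding assms(1) using assms(2) by (auto simp: abs_less_iff; presburger)
  have c: "(\<Sum>i\<in>{3..10}. ff n 9 (nat (3*K + i))) = (\<Sum>i\<in>{3..10}. farF K 4 9 i)"
    by (rule sum.cong) (use assms(2) in \<open>simp_all add: far_pt[OF assms(1)]\<close>)
  show ?thesis unfolding sum_FWs_int w unfolding sum_shift_int unfolding c unfolding sum_upto_int using assms(2)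
    by (simp add: farF_def gsh upto_rec1)
qed

lemma PSI_9_5: assumes "int n = 6*K + 5" "K \<ge> 4" shows "(\<Sum>t\<in>FWs n 9. ff n 9 t) = -2"
proof -
  have w: "{s. 0 \<le> s \<and> s < int n \<and> \<bar>2*s - int 9 - int n\<bar> < 8} = {3*K + 4 .. 3*K + 10}"
    unfolding assms(1) using assms(2) by (auto simp: abs_less_iff; presburger)
  have c: "(\<Sum>i\<in>{4..10}. ff n 9 (nat (3*K + i))) = (\<Sum>i\<in>{4..10}. farF K 5 9 i)"
    by (rule sum.cong) (use assms(2) in \<open>simp_all add: far_pt[OF assms(1)]\<close>)
  show ?thesis unfolding sum_FWs_int w unfolding sum_shift_int unfolding c unfolding sum_upto_int using assms(2)
    by (simp add: farF_def gsh upto_rec1)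
qed

lemma PSI_11_0: assumes "int n = 6*K + 0" "K \<ge> 4" shows "(\<Sum>t\<in>FWs n 11. ff n 11 t) = -2"
proof -
  have w: "{s. 0 \<le> s \<and> s < int n \<and> \<bar>2*s - int 11 - int n\<bar> < 8} = {3*K + 2 .. 3*K + 9}"
    unfolding assms(1) using assms(2) by (auto simp: abs_less_iff; presburger)
  have c: "(\<Sum>i\<in>{2..9}. ff n 11 (nat (3*K + i))) = (\<Sum>i\<in>{2..9}. farF K 0 11 i)"
    by (rule sum.cong) (use assms(2) in \<open>simp_all add: far_pt[OF assms(1)]\<close>)
  show ?thesis unfolding sum_FWs_int w unfolding sum_shift_int unfolding c unfolding sum_upto_int using assms(2)
    by (simp add: farF_def gsh upto_rec1)
qed

lemma PSI_11_1: assumes "int n = 6*K + 1" "K \<ge> 4" shows "(\<Sum>t\<in>FWs n 11. ff n 11 t) = -2"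
proof -
  have w: "{s. 0 \<le> s \<and> s < int n \<and> \<bar>2*s - int 11 - int n\<bar> < 8} = {3*K + 3 .. 3*K + 9}"
    unfolding assms(1) using assms(2) by (auto simp: abs_less_iff; presburger)
  have c: "(\<Sum>i\<in>{3..9}. ff n 11 (nat (3*K + i))) = (\<Sum>i\<in>{3..9}. farF K 1 11 i)"
    by (rule sum.cong) (use assms(2) in \<open>simp_all add: far_pt[OF assms(1)]\<close>)
  show ?thesis unfolding sum_FWs_int w unfolding sum_shift_int unfolding c unfolding sum_upto_int using assms(2)
    by (simp add: farF_def gsh upto_rec1)
qed

lemma PSI_11_2: assumes "int n = 6*K + 2" "K \<ge> 4" shows "(\<Sum>t\<in>FWs n 11. ff n 11 t) = -2"
proof -
  have w: "{s. 0 \<le> s \<and> s < int n \<and> \<bar>2*s - int 11 - int n\<bar> < 8} = {3*K + 3 .. 3*K + 10}"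
    unfolding assms(1) using assms(2) by (auto simp: abs_less_iff; presburger)
  have c: "(\<Sum>i\<in>{3..10}. ff n 11 (nat (3*K + i))) = (\<Sum>i\<in>{3..10}. farF K 2 11 i)"
    by (rule sum.cong) (use assms(2) in \<open>simp_all add: far_pt[OF assms(1)]\<close>)
  show ?thesis unfolding sum_FWs_int w unfolding sum_shift_int unfolding c unfolding sum_upto_int using assms(2)
    by (simp add: farF_def gsh upto_rec1)
qed

lemma PSI_11_3: assumes "int n = 6*K + 3" "K \<ge> 4" shows "(\<Sum>t\<in>FWs n 11. ff n 11 t) = -2"
proof -
  have w: "{s. 0 \<le> s \<and> s < int n \<and> \<bar>2*s - int 11 - int n\<bar> < 8} = {3*K + 4 .. 3*K + 10}"
    unfolding assms(1) using assms(2) by (auto simp: abs_less_iff; presburger)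
  have c: "(\<Sum>i\<in>{4..10}. ff n 11 (nat (3*K + i))) = (\<Sum>i\<in>{4..10}. farF K 3 11 i)"
    by (rule sum.cong) (use assms(2) in \<open>simp_all add: far_pt[OF assms(1)]\<close>)
  show ?thesis unfolding sum_FWs_int w unfolding sum_shift_int unfolding c unfolding sum_upto_int using assms(2)
    by (simp add: farF_def gsh upto_rec1)
qed

lemma PSI_11_4: assumes "int n = 6*K + 4" "K \<ge> 4" shows "(\<Sum>t\<in>FWs n 11. ff n 11 t) = -2"
proof -
  have w: "{s. 0 \<le> s \<and> s < int n \<and> \<bar>2*s - int 11 - int n\<bar> < 8} = {3*K + 4 .. 3*K + 11}"
    unfolding assms(1) using assms(2) by (auto simp: abs_less_iff; presburger)
  have c: "(\<Sum>i\<in>{4..11}. ff n 11 (nat (3*K + i))) = (\<Sum>i\<in>{4..11}. farF K 4 11 i)"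
    by (rule sum.cong) (use assms(2) in \<open>simp_all add: far_pt[OF assms(1)]\<close>)
  show ?thesis unfolding sum_FWs_int w unfolding sum_shift_int unfolding c unfolding sum_upto_int using assms(2)
    by (simp add: farF_def gsh upto_rec1)
qed

lemma PSI_11_5: assumes "int n = 6*K + 5" "K \<ge> 4" shows "(\<Sum>t\<in>FWs n 11. ff n 11 t) = -2"
proof -
  have w: "{s. 0 \<le> s \<and> s < int n \<and> \<bar>2*s - int 11 - int n\<bar> < 8} = {3*K + 5 .. 3*K + 11}"
    unfolding assms(1) using assms(2) by (auto simp: abs_less_iff; presburger)
  have c: "(\<Sum>i\<in>{5..11}. ff n 11 (nat (3*K + i))) = (\<Sum>i\<in>{5..11}. farF K 5 11 i)"
    by (rule sum.cong) (use assms(2) in \<open>simp_all add: far_pt[OF assms(1)]\<close>)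
  show ?thesis unfolding sum_FWs_int w unfolding sum_shift_int unfolding c unfolding sum_upto_int using assms(2)
    by (simp add: farF_def gsh upto_rec1)
qed

lemma PSI_14_0: assumes "int n = 6*K + 0" "K \<ge> 5" shows "(\<Sum>t\<in>FWs n 14. ff n 14 t) = -2"
proof -
  have w: "{s. 0 \<le> s \<and> s < int n \<and> \<bar>2*s - int 14 - int n\<bar> < 8} = {3*K + 4 .. 3*K + 10}"
    unfolding assms(1) using assms(2) by (auto simp: abs_less_iff; presburger)
  have c: "(\<Sum>i\<in>{4..10}. ff n 14 (nat (3*K + i))) = (\<Sum>i\<in>{4..10}. farF K 0 14 i)"
    by (rule sum.cong) (use assms(2) in \<open>simp_all add: far_pt[OF assms(1)]\<close>)
  show ?thesis unfolding sum_FWs_int w unfolding sum_shift_int unfolding c unfolding sum_upto_int using assms(2)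
    by (simp add: farF_def gsh upto_rec1)
qed

lemma PSI_14_1: assumes "int n = 6*K + 1" "K \<ge> 5" shows "(\<Sum>t\<in>FWs n 14. ff n 14 t) = -2"
proof -
  have w: "{s. 0 \<le> s \<and> s < int n \<and> \<bar>2*s - int 14 - int n\<bar> < 8} = {3*K + 4 .. 3*K + 11}"
    unfolding assms(1) using assms(2) by (auto simp: abs_less_iff; presburger)
  have c: "(\<Sum>i\<in>{4..11}. ff n 14 (nat (3*K + i))) = (\<Sum>i\<in>{4..11}. farF K 1 14 i)"
    by (rule sum.cong) (use assms(2) in \<open>simp_all add: far_pt[OF assms(1)]\<close>)
  show ?thesis unfolding sum_FWs_int w unfolding sum_shift_int unfolding c unfolding sum_upto_int using assms(2)
    by (simp add: farF_def gsh upto_rec1)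
qed

lemma PSI_14_2: assumes "int n = 6*K + 2" "K \<ge> 5" shows "(\<Sum>t\<in>FWs n 14. ff n 14 t) = -2"
proof -
  have w: "{s. 0 \<le> s \<and> s < int n \<and> \<bar>2*s - int 14 - int n\<bar> < 8} = {3*K + 5 .. 3*K + 11}"
    unfolding assms(1) using assms(2) by (auto simp: abs_less_iff; presburger)
  have c: "(\<Sum>i\<in>{5..11}. ff n 14 (nat (3*K + i))) = (\<Sum>i\<in>{5..11}. farF K 2 14 i)"
    by (rule sum.cong) (use assms(2) in \<open>simp_all add: far_pt[OF assms(1)]\<close>)
  show ?thesis unfolding sum_FWs_int w unfolding sum_shift_int unfolding c unfolding sum_upto_int using assms(2)
    by (simp add: farF_def gsh upto_rec1)
qed

lemma PSI_14_3: assumes "int n = 6*K + 3" "K \<ge> 5" shows "(\<Sum>t\<in>FWs n 14. ff n 14 t) = -2"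
proof -
  have w: "{s. 0 \<le> s \<and> s < int n \<and> \<bar>2*s - int 14 - int n\<bar> < 8} = {3*K + 5 .. 3*K + 12}"
    unfolding assms(1) using assms(2) by (auto simp: abs_less_iff; presburger)
  have c: "(\<Sum>i\<in>{5..12}. ff n 14 (nat (3*K + i))) = (\<Sum>i\<in>{5..12}. farF K 3 14 i)"
    by (rule sum.cong) (use assms(2) in \<open>simp_all add: far_pt[OF assms(1)]\<close>)
  show ?thesis unfolding sum_FWs_int w unfolding sum_shift_int unfolding c unfolding sum_upto_int using assms(2)
    by (simp add: farF_def gsh upto_rec1)
qed

lemma PSI_14_4: assumes "int n = 6*K + 4" "K \<ge> 5" shows "(\<Sum>t\<in>FWs n 14. ff n 14 t) = -2"
proof -
  have w: "{s. 0 \<le> s \<and> s < int n \<and> \<bar>2*s - int 14 - int n\<bar> < 8} = {3*K + 6 .. 3*K + 12}"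
    unfolding assms(1) using assms(2) by (auto simp: abs_less_iff; presburger)
  have c: "(\<Sum>i\<in>{6..12}. ff n 14 (nat (3*K + i))) = (\<Sum>i\<in>{6..12}. farF K 4 14 i)"
    by (rule sum.cong) (use assms(2) in \<open>simp_all add: far_pt[OF assms(1)]\<close>)
  show ?thesis unfolding sum_FWs_int w unfolding sum_shift_int unfolding c unfolding sum_upto_int using assms(2)
    by (simp add: farF_def gsh upto_rec1)
qed

lemma PSI_14_5: assumes "int n = 6*K + 5" "K \<ge> 5" shows "(\<Sum>t\<in>FWs n 14. ff n 14 t) = -2"
proof -
  have w: "{s. 0 \<le> s \<and> s < int n \<and> \<bar>2*s - int 14 - int n\<bar> < 8} = {3*K + 6 .. 3*K + 13}"
    unfolding assms(1) using assms(2) by (auto simp: abs_less_iff; presburger)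
  have c: "(\<Sum>i\<in>{6..13}. ff n 14 (nat (3*K + i))) = (\<Sum>i\<in>{6..13}. farF K 5 14 i)"
    by (rule sum.cong) (use assms(2) in \<open>simp_all add: far_pt[OF assms(1)]\<close>)
  show ?thesis unfolding sum_FWs_int w unfolding sum_shift_int unfolding c unfolding sum_upto_int using assms(2)
    by (simp add: farF_def gsh upto_rec1)
qed

lemma PSI_17_0: assumes "int n = 6*K + 0" "K \<ge> 5" shows "(\<Sum>t\<in>FWs n 17. ff n 17 t) = -2"
proof -
  have w: "{s. 0 \<le> s \<and> s < int n \<and> \<bar>2*s - int 17 - int n\<bar> < 8} = {3*K + 5 .. 3*K + 12}"
    unfolding assms(1) using assms(2) by (auto simp: abs_less_iff; presburger)
  have c: "(\<Sum>i\<in>{5..12}. ff n 17 (nat (3*K + i))) = (\<Sum>i\<in>{5..12}. farF K 0 17 i)"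
    by (rule sum.cong) (use assms(2) in \<open>simp_all add: far_pt[OF assms(1)]\<close>)
  show ?thesis unfolding sum_FWs_int w unfolding sum_shift_int unfolding c unfolding sum_upto_int using assms(2)
    by (simp add: farF_def gsh upto_rec1)
qed

lemma PSI_17_1: assumes "int n = 6*K + 1" "K \<ge> 5" shows "(\<Sum>t\<in>FWs n 17. ff n 17 t) = -2"
proof -
  have w: "{s. 0 \<le> s \<and> s < int n \<and> \<bar>2*s - int 17 - int n\<bar> < 8} = {3*K + 6 .. 3*K + 12}"
    unfolding assms(1) using assms(2) by (auto simp: abs_less_iff; presburger)
  have c: "(\<Sum>i\<in>{6..12}. ff n 17 (nat (3*K + i))) = (\<Sum>i\<in>{6..12}. farF K 1 17 i)"
    by (rule sum.cong) (use assms(2) in \<open>simp_all add: far_pt[OF assms(1)]\<close>)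
  show ?thesis unfolding sum_FWs_int w unfolding sum_shift_int unfolding c unfolding sum_upto_int using assms(2)
    by (simp add: farF_def gsh upto_rec1)
qed

lemma PSI_17_2: assumes "int n = 6*K + 2" "K \<ge> 5" shows "(\<Sum>t\<in>FWs n 17. ff n 17 t) = -2"
proof -
  have w: "{s. 0 \<le> s \<and> s < int n \<and> \<bar>2*s - int 17 - int n\<bar> < 8} = {3*K + 6 .. 3*K + 13}"
    unfolding assms(1) using assms(2) by (auto simp: abs_less_iff; presburger)
  have c: "(\<Sum>i\<in>{6..13}. ff n 17 (nat (3*K + i))) = (\<Sum>i\<in>{6..13}. farF K 2 17 i)"
    by (rule sum.cong) (use assms(2) in \<open>simp_all add: far_pt[OF assms(1)]\<close>)
  show ?thesis unfolding sum_FWs_int w unfolding sum_shift_int unfolding c unfolding sum_upto_int using assms(2)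
    by (simp add: farF_def gsh upto_rec1)
qed

lemma PSI_17_3: assumes "int n = 6*K + 3" "K \<ge> 5" shows "(\<Sum>t\<in>FWs n 17. ff n 17 t) = -2"
proof -
  have w: "{s. 0 \<le> s \<and> s < int n \<and> \<bar>2*s - int 17 - int n\<bar> < 8} = {3*K + 7 .. 3*K + 13}"
    unfolding assms(1) using assms(2) by (auto simp: abs_less_iff; presburger)
  have c: "(\<Sum>i\<in>{7..13}. ff n 17 (nat (3*K + i))) = (\<Sum>i\<in>{7..13}. farF K 3 17 i)"
    by (rule sum.cong) (use assms(2) in \<open>simp_all add: far_pt[OF assms(1)]\<close>)
  show ?thesis unfolding sum_FWs_int w unfolding sum_shift_int unfolding c unfolding sum_upto_int using assms(2)
    by (simp add: farF_def gsh upto_rec1)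
qed

lemma PSI_17_4: assumes "int n = 6*K + 4" "K \<ge> 5" shows "(\<Sum>t\<in>FWs n 17. ff n 17 t) = -2"
proof -
  have w: "{s. 0 \<le> s \<and> s < int n \<and> \<bar>2*s - int 17 - int n\<bar> < 8} = {3*K + 7 .. 3*K + 14}"
    unfolding assms(1) using assms(2) by (auto simp: abs_less_iff; presburger)
  have c: "(\<Sum>i\<in>{7..14}. ff n 17 (nat (3*K + i))) = (\<Sum>i\<in>{7..14}. farF K 4 17 i)"
    by (rule sum.cong) (use assms(2) in \<open>simp_all add: far_pt[OF assms(1)]\<close>)
  show ?thesis unfolding sum_FWs_int w unfolding sum_shift_int unfolding c unfolding sum_upto_int using assms(2)
    by (simp add: farF_def gsh upto_rec1)
qed

lemma PSI_17_5: assumes "int n = 6*K + 5" "K \<ge> 5" shows "(\<Sum>t\<in>FWs n 17. ff n 17 t) = -2"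
proof -
  have w: "{s. 0 \<le> s \<and> s < int n \<and> \<bar>2*s - int 17 - int n\<bar> < 8} = {3*K + 8 .. 3*K + 14}"
    unfolding assms(1) using assms(2) by (auto simp: abs_less_iff; presburger)
  have c: "(\<Sum>i\<in>{8..14}. ff n 17 (nat (3*K + i))) = (\<Sum>i\<in>{8..14}. farF K 5 17 i)"
    by (rule sum.cong) (use assms(2) in \<open>simp_all add: far_pt[OF assms(1)]\<close>)
  show ?thesis unfolding sum_FWs_int w unfolding sum_shift_int unfolding c unfolding sum_upto_int using assms(2)
    by (simp add: farF_def gsh upto_rec1)
qed



lemma PSI_all: assumes "24 \<le> n" "j \<in> {6, 8, 9, 11, 14, 17}" "j \<ge> 14 \<Longrightarrow> 30 \<le> n"
  shows "(\<Sum>t\<in>FWs n j. ff n j t) = -2"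
proof -
  define K where "K = int (n div 6)"
  have K: "K \<ge> 4" using assms K_def by simp
  have K5: "j \<ge> 14 \<Longrightarrow> K \<ge> 5" using assms K_def by simp
  have n: "int n = 6*K + int (n mod 6)" unfolding K_def by presburger
  have "n mod 6 = 0 \<or> n mod 6 = 1 \<or> n mod 6 = 2 \<or> n mod 6 = 3 \<or> n mod 6 = 4 \<or> n mod 6 = 5" by presburger
  then show ?thesis
  proof (elim disjE)
    assume "n mod 6 = 0"
    then have nK: "int n = 6*K + 0" using n by simp
    show ?thesis using assms(2) PSI_6_0[OF nK K] PSI_8_0[OF nK K] PSI_9_0[OF nK K] PSI_11_0[OF nK K]
      PSI_14_0[OF nK K5] PSI_17_0[OF nK K5] by auto
  next
    assume "n mod 6 = 1"
    then have nK: "int n = 6*K + 1" using n by simp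
    show ?thesis using assms(2) PSI_6_1[OF nK K] PSI_8_1[OF nK K] PSI_9_1[OF nK K] PSI_11_1[OF nK K]
      PSI_14_1[OF nK K5] PSI_17_1[OF nK K5] by auto
  next
    assume "n mod 6 = 2"
    then have nK: "int n = 6*K + 2" using n by simp
    show ?thesis using assms(2) PSI_6_2[OF nK K] PSI_8_2[OF nK K] PSI_9_2[OF nK K] PSI_11_2[OF nK K]
      PSI_14_2[OF nK K5] PSI_17_2[OF nK K5] by auto
  next
    assume "n mod 6 = 3"
    then have nK: "int n = 6*K + 3" using n by simp
    show ?thesis using assms(2) PSI_6_3[OF nK K] PSI_8_3[OF nK K] PSI_9_3[OF nK K] PSI_11_3[OF nK K]
      PSI_14_3[OF nK K5] PSI_17_3[OF nK K5] by auto
  next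
    assume "n mod 6 = 4"
    then have nK: "int n = 6*K + 4" using n by simp
    show ?thesis using assms(2) PSI_6_4[OF nK K] PSI_8_4[OF nK K] PSI_9_4[OF nK K] PSI_11_4[OF nK K]
      PSI_14_4[OF nK K5] PSI_17_4[OF nK K5] by auto
  next
    assume "n mod 6 = 5"
    then have nK: "int n = 6*K + 5" using n by simp
    show ?thesis using assms(2) PSI_6_5[OF nK K] PSI_8_5[OF nK K] PSI_9_5[OF nK K] PSI_11_5[OF nK K]
      PSI_14_5[OF nK K5] PSI_17_5[OF nK K5] by auto
  qed
qed

lemma gvv_6: "gvv (a + 6) = gvv a + 2" using gvv_sh[of 2 a] by (simp add: add.commute)
lemma guv_6: "guv (a + 6) = guv a + 2" using guv_sh[of 2 a] by (simp add: add.commute)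

lemma ff6_zero: assumes "17 \<le> n" "t < n" "t \<notin> NWs n 6" "t \<notin> FWs n 6"
  shows "ff n 6 t = 0"
proof (cases "8 \<le> \<bar>hh n (DD n t 6) - hh n (DD n t 0)\<bar>")
  case True
  then show ?thesis unfolding ff_def using sig_outside[of n t 6] assms by simp
next
  case False
  have t1: "\<bar>2 * int t - 6\<bar> \<ge> 8" "\<bar>2 * int t - 6 - int n\<bar> \<ge> 8" using assms unfolding NWs_def FWs_def by auto
  then have t7: "t \<ge> 7" by (auto simp: abs_if split: if_splits)
  have d0: "DD n t 0 = int n - int t" using DD0[of t n] assms t7 by simp
  have dj: "DD n t 6 = int n - (int t - 6)" using DDj[of t n 6] assms t7 by simp
  have ab: "2 * int t \<le> int n - 2 \<or> 2 * int t \<ge> int n + 14" using t1 by (auto simp: abs_if split: if_splits)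
  then show ?thesis
  proof
    assume A: "2 * int t \<le> int n - 2"
    have h0: "hh n (DD n t 0) = int t" unfolding d0 hh_def using A by simp
    have hj: "hh n (DD n t 6) = int t - 6" unfolding dj hh_def using A t7 by simp
    have R: "RR n 6 t = -1" unfolding RR_def h0 hj by simp
    have uC: "3 * HH n False True (DD n t 6) \<le> int t - 6 + 7"
      using HH_up[of "DD n t 6" n False True] hj dj assms A t7 unfolding UB_def by simp
    have lA: "int t + 6 \<le> 3 * HH n False False (DD n t 0)"
      using HH_lo[of "DD n t 0" n False False] h0 d0 assms A t7 unfolding LB_def by simp
    have s1: "sig n 6 False t = -1" unfolding sig_def using uC lA by simp
    have C: "HH n True True (DD n t 6) \<le> gvv (int t - 6)"
      unfolding HH_def dj gg_def by simp
    have e1: "gvv (int t - 6) + 2 = gvv (int t)" using gvv_6[of "int t - 6"] by simp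
    have e2: "gvv (int t) \<le> guv (int t) + 1" using sw2[of "int t"] by simp
    have e3: "3 * gvv (int t - 6) \<le> int t - 6 + 10" using gvv_b[of "int t - 6"] t7 by simp
    have e4: "int n - int t + 3 \<le> 3 * guv (int n - int t)" using guv_b[of "int n - int t"] assms by simp
    have Av: "HH n True False (DD n t 0) = min (guv (int n - int t)) (guv (int t))"
      unfolding HH_def d0 gg_def by simp
    have s2: "sig n 6 True t = -1" unfolding sig_def Av using C e1 e2 e3 e4 A by simp
    show ?thesis unfolding ff_def s1 s2 R by simp
  next
    assume B: "2 * int t \<ge> int n + 14"
    define a where "a = int n - int t"
    have a: "a \<ge> 1" "int t - a \<ge> 14" using B assms a_def by auto
    have h0: "hh n (DD n t 0) = a" unfolding d0 hh_def a_def using B by simp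
    have hj: "hh n (DD n t 6) = a + 6" unfolding dj hh_def a_def using B by simp
    have R: "RR n 6 t = 1" unfolding RR_def h0 hj by simp
    have Au: "HH n False False (DD n t 0) \<le> guu a" unfolding HH_def d0 gg_def a_def by simp
    have Av: "HH n True False (DD n t 0) \<le> guv a" unfolding HH_def d0 gg_def a_def by simp
    have Cu: "HH n False True (DD n t 6) = min (guv (a + 6)) (guv (int t - 6))"
      unfolding HH_def dj gg_def a_def by (simp add: algebra_simps)
    have Cv: "HH n True True (DD n t 6) = min (gvv (a + 6)) (gvv (int t - 6))"
      unfolding HH_def dj gg_def a_def by (simp add: algebra_simps)
    have f1: "guu a \<le> guv a + 1" "gvv a \<ge> guv a - 1" using sw1[of a] sw2[of a] a by auto
    have f2: "3 * guu a \<le> a + 10" "3 * guv a \<le> a + 7" using guu_up[of a] guv_b[of a] a by auto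
    have f3: "int t - 6 + 3 \<le> 3 * guv (int t - 6)" "int t - 6 \<le> 3 * gvv (int t - 6)"
      using guv_b[of "int t - 6"] gvv_b[of "int t - 6"] t7 by auto
    have s1: "sig n 6 False t = 1" unfolding sig_def Cu
      using Au guv_6[of a] f1 f2 f3 a by (simp add: min_def)
    have s2: "sig n 6 True t = 1" unfolding sig_def Cv
      using Av gvv_6[of a] f1 f2 f3 a by (simp add: min_def)
    show ?thesis unfolding ff_def s1 s2 R by simp
  qed
qed



definition nearF :: "int \<Rightarrow> int \<Rightarrow> int \<Rightarrow> int \<Rightarrow> int" where
  "nearF K r j c = sgn (min (guv (j - c)) (guv (6*K + (r - j + c))) - min (guu (6*K + (r - c))) (guu c))
   + sgn (min (gvv (j - c)) (gvv (6*K + (r - j + c))) - min (guv (6*K + (r - c))) (guv c))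
   - 2 * sgn (min (j - c) (6*K + (r - j + c)) - min (6*K + (r - c)) c)"

lemma near_pt: assumes "int n = 6*K + r" "0 \<le> c" "c \<le> int j" "int j < int n"
  shows "ff n j (nat c) = nearF K r (int j) c"
proof -
  define t where "t = nat c"
  have ti: "int t = c" unfolding t_def using assms by simp
  have t: "t < n" "t \<le> j" using ti assms by auto
  have dj: "DD n t j = int j - c" using DDj[of t n j] t ti assms by simp
  have ej: "int n - (int j - c) = 6*K + (r - int j + c)" using assms by simp
  have H0: "HH n p False (DD n t 0) = min (gg p False (6*K + (r - c))) (gg p False c)" for p
  proof (cases "t = 0")
    case True
    then have "c = 0" "DD n t 0 = 0" using ti DD0[of t n] t by auto
    then show ?thesis unfolding HH_def using assms(1) by (simp add: min.commute)
  next
    case False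
    then have d0: "DD n t 0 = 6*K + (r - c)" using DD0[of t n] t ti assms by simp
    have e0: "int n - (6*K + (r - c)) = c" using assms by simp
    show ?thesis unfolding HH_def d0 e0 ..
  qed
  have h0: "hh n (DD n t 0) = min (6*K + (r - c)) c"
  proof (cases "t = 0")
    case True
    then have "c = 0" "DD n t 0 = 0" using ti DD0[of t n] t by auto
    then show ?thesis unfolding hh_def using assms by (simp add: min_def)
  next
    case False
    then have d0: "DD n t 0 = 6*K + (r - c)" using DD0[of t n] t ti assms by simp
    have e0: "int n - (6*K + (r - c)) = c" using assms by simp
    show ?thesis unfolding hh_def d0 e0 ..
  qed
  show ?thesis unfolding t_def[symmetric] ff_def sig_def RR_def unfolding dj H0 h0
    unfolding HH_def hh_def ej nearF_def
    by (simp add: gg_def)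
qed

lemma sum_NWs_int: "(\<Sum>t\<in>NWs n j. f t) = (\<Sum>s\<in>{s. 0 \<le> s \<and> s < int n \<and> \<bar>2*s - int j\<bar> < 8}. f (nat s))"
proof -
  have "int ` NWs n j = {s. 0 \<le> s \<and> s < int n \<and> \<bar>2*s - int j\<bar> < 8}"
  proof
    show "int ` NWs n j \<subseteq> {s. 0 \<le> s \<and> s < int n \<and> \<bar>2*s - int j\<bar> < 8}" unfolding NWs_def by auto
    show "{s. 0 \<le> s \<and> s < int n \<and> \<bar>2*s - int j\<bar> < 8} \<subseteq> int ` NWs n j"
    proof
      fix s assume "s \<in> {s. 0 \<le> s \<and> s < int n \<and> \<bar>2*s - int j\<bar> < 8}"
      then have "nat s \<in> NWs n j" "s = int (nat s)" unfolding NWs_def by auto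
      then show "s \<in> int ` NWs n j" by blast
    qed
  qed
  then have "(\<Sum>s\<in>{s. 0 \<le> s \<and> s < int n \<and> \<bar>2*s - int j\<bar> < 8}. f (nat s)) = (\<Sum>s\<in>int ` NWs n j. f (nat s))" by simp
  also have "... = (\<Sum>t\<in>NWs n j. f t)" by (simp add: sum.reindex)
  finally show ?thesis by simp
qed



lemma PNI_6_0: assumes nK: "int n = 6*K + 0" and K: "K \<ge> 4" shows "(\<Sum>t\<in>NWs n 6. ff n 6 t) = 0"
proof -
  have w: "{s. 0 \<le> s \<and> s < int n \<and> \<bar>2*s - int 6\<bar> < 8} = {0 .. 6}"
    unfolding nK using K by (auto simp: abs_less_iff)
  have c: "(\<Sum>i\<in>{0..6}. ff n 6 (nat i)) = (\<Sum>i\<in>{0..6}. nearF K 0 6 i)"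
  proof (rule sum.cong)
    fix x :: int assume "x \<in> {0..6}"
    then show "ff n 6 (nat x) = nearF K 0 6 x" using near_pt[OF nK, of x 6] nK K by simp
  qed simp
  show ?thesis unfolding sum_NWs_int w unfolding c unfolding sum_upto_int using K
    by (simp add: nearF_def gsh gsh6 upto_rec1)
qed

lemma PNI_6_1: assumes nK: "int n = 6*K + 1" and K: "K \<ge> 4" shows "(\<Sum>t\<in>NWs n 6. ff n 6 t) = 0"
proof -
  have w: "{s. 0 \<le> s \<and> s < int n \<and> \<bar>2*s - int 6\<bar> < 8} = {0 .. 6}"
    unfolding nK using K by (auto simp: abs_less_iff)
  have c: "(\<Sum>i\<in>{0..6}. ff n 6 (nat i)) = (\<Sum>i\<in>{0..6}. nearF K 1 6 i)"
  proof (rule sum.cong)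
    fix x :: int assume "x \<in> {0..6}"
    then show "ff n 6 (nat x) = nearF K 1 6 x" using near_pt[OF nK, of x 6] nK K by simp
  qed simp
  show ?thesis unfolding sum_NWs_int w unfolding c unfolding sum_upto_int using K
    by (simp add: nearF_def gsh gsh6 upto_rec1)
qed

lemma PNI_6_2: assumes nK: "int n = 6*K + 2" and K: "K \<ge> 4" shows "(\<Sum>t\<in>NWs n 6. ff n 6 t) = 0"
proof -
  have w: "{s. 0 \<le> s \<and> s < int n \<and> \<bar>2*s - int 6\<bar> < 8} = {0 .. 6}"
    unfolding nK using K by (auto simp: abs_less_iff)
  have c: "(\<Sum>i\<in>{0..6}. ff n 6 (nat i)) = (\<Sum>i\<in>{0..6}. nearF K 2 6 i)"
  proof (rule sum.cong)
    fix x :: int assume "x \<in> {0..6}"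
    then show "ff n 6 (nat x) = nearF K 2 6 x" using near_pt[OF nK, of x 6] nK K by simp
  qed simp
  show ?thesis unfolding sum_NWs_int w unfolding c unfolding sum_upto_int using K
    by (simp add: nearF_def gsh gsh6 upto_rec1)
qed

lemma PNI_6_3: assumes nK: "int n = 6*K + 3" and K: "K \<ge> 4" shows "(\<Sum>t\<in>NWs n 6. ff n 6 t) = 0"
proof -
  have w: "{s. 0 \<le> s \<and> s < int n \<and> \<bar>2*s - int 6\<bar> < 8} = {0 .. 6}"
    unfolding nK using K by (auto simp: abs_less_iff)
  have c: "(\<Sum>i\<in>{0..6}. ff n 6 (nat i)) = (\<Sum>i\<in>{0..6}. nearF K 3 6 i)"
  proof (rule sum.cong)
    fix x :: int assume "x \<in> {0..6}"
    then show "ff n 6 (nat x) = nearF K 3 6 x" using near_pt[OF nK, of x 6] nK K by simp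
  qed simp
  show ?thesis unfolding sum_NWs_int w unfolding c unfolding sum_upto_int using K
    by (simp add: nearF_def gsh gsh6 upto_rec1)
qed

lemma PNI_6_4: assumes nK: "int n = 6*K + 4" and K: "K \<ge> 4" shows "(\<Sum>t\<in>NWs n 6. ff n 6 t) = 0"
proof -
  have w: "{s. 0 \<le> s \<and> s < int n \<and> \<bar>2*s - int 6\<bar> < 8} = {0 .. 6}"
    unfolding nK using K by (auto simp: abs_less_iff)
  have c: "(\<Sum>i\<in>{0..6}. ff n 6 (nat i)) = (\<Sum>i\<in>{0..6}. nearF K 4 6 i)"
  proof (rule sum.cong)
    fix x :: int assume "x \<in> {0..6}"
    then show "ff n 6 (nat x) = nearF K 4 6 x" using near_pt[OF nK, of x 6] nK K by simp
  qed simp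
  show ?thesis unfolding sum_NWs_int w unfolding c unfolding sum_upto_int using K
    by (simp add: nearF_def gsh gsh6 upto_rec1)
qed

lemma PNI_6_5: assumes nK: "int n = 6*K + 5" and K: "K \<ge> 4" shows "(\<Sum>t\<in>NWs n 6. ff n 6 t) = 0"
proof -
  have w: "{s. 0 \<le> s \<and> s < int n \<and> \<bar>2*s - int 6\<bar> < 8} = {0 .. 6}"
    unfolding nK using K by (auto simp: abs_less_iff)
  have c: "(\<Sum>i\<in>{0..6}. ff n 6 (nat i)) = (\<Sum>i\<in>{0..6}. nearF K 5 6 i)"
  proof (rule sum.cong)
    fix x :: int assume "x \<in> {0..6}"
    then show "ff n 6 (nat x) = nearF K 5 6 x" using near_pt[OF nK, of x 6] nK K by simp
  qed simp
  show ?thesis unfolding sum_NWs_int w unfolding c unfolding sum_upto_int using K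
    by (simp add: nearF_def gsh gsh6 upto_rec1)
qed

lemma PNI_8_0: assumes nK: "int n = 6*K + 0" and K: "K \<ge> 4" shows "(\<Sum>t\<in>NWs n 8. ff n 8 t) = 0"
proof -
  have w: "{s. 0 \<le> s \<and> s < int n \<and> \<bar>2*s - int 8\<bar> < 8} = {1 .. 7}"
    unfolding nK using K by (auto simp: abs_less_iff)
  have c: "(\<Sum>i\<in>{1..7}. ff n 8 (nat i)) = (\<Sum>i\<in>{1..7}. nearF K 0 8 i)"
  proof (rule sum.cong)
    fix x :: int assume "x \<in> {1..7}"
    then show "ff n 8 (nat x) = nearF K 0 8 x" using near_pt[OF nK, of x 8] nK K by simp
  qed simp
  show ?thesis unfolding sum_NWs_int w unfolding c unfolding sum_upto_int using K
    by (simp add: nearF_def gsh gsh6 upto_rec1)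
qed

lemma PNI_8_1: assumes nK: "int n = 6*K + 1" and K: "K \<ge> 4" shows "(\<Sum>t\<in>NWs n 8. ff n 8 t) = 0"
proof -
  have w: "{s. 0 \<le> s \<and> s < int n \<and> \<bar>2*s - int 8\<bar> < 8} = {1 .. 7}"
    unfolding nK using K by (auto simp: abs_less_iff)
  have c: "(\<Sum>i\<in>{1..7}. ff n 8 (nat i)) = (\<Sum>i\<in>{1..7}. nearF K 1 8 i)"
  proof (rule sum.cong)
    fix x :: int assume "x \<in> {1..7}"
    then show "ff n 8 (nat x) = nearF K 1 8 x" using near_pt[OF nK, of x 8] nK K by simp
  qed simp
  show ?thesis unfolding sum_NWs_int w unfolding c unfolding sum_upto_int using K
    by (simp add: nearF_def gsh gsh6 upto_rec1)
qed

lemma PNI_8_2: assumes nK: "int n = 6*K + 2" and K: "K \<ge> 4" shows "(\<Sum>t\<in>NWs n 8. ff n 8 t) = 0"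
proof -
  have w: "{s. 0 \<le> s \<and> s < int n \<and> \<bar>2*s - int 8\<bar> < 8} = {1 .. 7}"
    unfolding nK using K by (auto simp: abs_less_iff)
  have c: "(\<Sum>i\<in>{1..7}. ff n 8 (nat i)) = (\<Sum>i\<in>{1..7}. nearF K 2 8 i)"
  proof (rule sum.cong)
    fix x :: int assume "x \<in> {1..7}"
    then show "ff n 8 (nat x) = nearF K 2 8 x" using near_pt[OF nK, of x 8] nK K by simp
  qed simp
  show ?thesis unfolding sum_NWs_int w unfolding c unfolding sum_upto_int using K
    by (simp add: nearF_def gsh gsh6 upto_rec1)
qed

lemma PNI_8_3: assumes nK: "int n = 6*K + 3" and K: "K \<ge> 4" shows "(\<Sum>t\<in>NWs n 8. ff n 8 t) = 0"
proof -
  have w: "{s. 0 \<le> s \<and> s < int n \<and> \<bar>2*s - int 8\<bar> < 8} = {1 .. 7}"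
    unfolding nK using K by (auto simp: abs_less_iff)
  have c: "(\<Sum>i\<in>{1..7}. ff n 8 (nat i)) = (\<Sum>i\<in>{1..7}. nearF K 3 8 i)"
  proof (rule sum.cong)
    fix x :: int assume "x \<in> {1..7}"
    then show "ff n 8 (nat x) = nearF K 3 8 x" using near_pt[OF nK, of x 8] nK K by simp
  qed simp
  show ?thesis unfolding sum_NWs_int w unfolding c unfolding sum_upto_int using K
    by (simp add: nearF_def gsh gsh6 upto_rec1)
qed

lemma PNI_8_4: assumes nK: "int n = 6*K + 4" and K: "K \<ge> 4" shows "(\<Sum>t\<in>NWs n 8. ff n 8 t) = 0"
proof -
  have w: "{s. 0 \<le> s \<and> s < int n \<and> \<bar>2*s - int 8\<bar> < 8} = {1 .. 7}"
    unfolding nK using K by (auto simp: abs_less_iff)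
  have c: "(\<Sum>i\<in>{1..7}. ff n 8 (nat i)) = (\<Sum>i\<in>{1..7}. nearF K 4 8 i)"
  proof (rule sum.cong)
    fix x :: int assume "x \<in> {1..7}"
    then show "ff n 8 (nat x) = nearF K 4 8 x" using near_pt[OF nK, of x 8] nK K by simp
  qed simp
  show ?thesis unfolding sum_NWs_int w unfolding c unfolding sum_upto_int using K
    by (simp add: nearF_def gsh gsh6 upto_rec1)
qed

lemma PNI_8_5: assumes nK: "int n = 6*K + 5" and K: "K \<ge> 4" shows "(\<Sum>t\<in>NWs n 8. ff n 8 t) = 0"
proof -
  have w: "{s. 0 \<le> s \<and> s < int n \<and> \<bar>2*s - int 8\<bar> < 8} = {1 .. 7}"
    unfolding nK using K by (auto simp: abs_less_iff)
  have c: "(\<Sum>i\<in>{1..7}. ff n 8 (nat i)) = (\<Sum>i\<in>{1..7}. nearF K 5 8 i)"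
  proof (rule sum.cong)
    fix x :: int assume "x \<in> {1..7}"
    then show "ff n 8 (nat x) = nearF K 5 8 x" using near_pt[OF nK, of x 8] nK K by simp
  qed simp
  show ?thesis unfolding sum_NWs_int w unfolding c unfolding sum_upto_int using K
    by (simp add: nearF_def gsh gsh6 upto_rec1)
qed

lemma PNI_9_0: assumes nK: "int n = 6*K + 0" and K: "K \<ge> 4" shows "(\<Sum>t\<in>NWs n 9. ff n 9 t) = -1"
proof -
  have w: "{s. 0 \<le> s \<and> s < int n \<and> \<bar>2*s - int 9\<bar> < 8} = {1 .. 8}"
    unfolding nK using K by (auto simp: abs_less_iff)
  have c: "(\<Sum>i\<in>{1..8}. ff n 9 (nat i)) = (\<Sum>i\<in>{1..8}. nearF K 0 9 i)"
  proof (rule sum.cong)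
    fix x :: int assume "x \<in> {1..8}"
    then show "ff n 9 (nat x) = nearF K 0 9 x" using near_pt[OF nK, of x 9] nK K by simp
  qed simp
  show ?thesis unfolding sum_NWs_int w unfolding c unfolding sum_upto_int using K
    by (simp add: nearF_def gsh gsh6 upto_rec1)
qed

lemma PNI_9_1: assumes nK: "int n = 6*K + 1" and K: "K \<ge> 4" shows "(\<Sum>t\<in>NWs n 9. ff n 9 t) = -1"
proof -
  have w: "{s. 0 \<le> s \<and> s < int n \<and> \<bar>2*s - int 9\<bar> < 8} = {1 .. 8}"
    unfolding nK using K by (auto simp: abs_less_iff)
  have c: "(\<Sum>i\<in>{1..8}. ff n 9 (nat i)) = (\<Sum>i\<in>{1..8}. nearF K 1 9 i)"
  proof (rule sum.cong)
    fix x :: int assume "x \<in> {1..8}"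
    then show "ff n 9 (nat x) = nearF K 1 9 x" using near_pt[OF nK, of x 9] nK K by simp
  qed simp
  show ?thesis unfolding sum_NWs_int w unfolding c unfolding sum_upto_int using K
    by (simp add: nearF_def gsh gsh6 upto_rec1)
qed

lemma PNI_9_2: assumes nK: "int n = 6*K + 2" and K: "K \<ge> 4" shows "(\<Sum>t\<in>NWs n 9. ff n 9 t) = -1"
proof -
  have w: "{s. 0 \<le> s \<and> s < int n \<and> \<bar>2*s - int 9\<bar> < 8} = {1 .. 8}"
    unfolding nK using K by (auto simp: abs_less_iff)
  have c: "(\<Sum>i\<in>{1..8}. ff n 9 (nat i)) = (\<Sum>i\<in>{1..8}. nearF K 2 9 i)"
  proof (rule sum.cong)
    fix x :: int assume "x \<in> {1..8}"
    then show "ff n 9 (nat x) = nearF K 2 9 x" using near_pt[OF nK, of x 9] nK K by simp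
  qed simp
  show ?thesis unfolding sum_NWs_int w unfolding c unfolding sum_upto_int using K
    by (simp add: nearF_def gsh gsh6 upto_rec1)
qed

lemma PNI_9_3: assumes nK: "int n = 6*K + 3" and K: "K \<ge> 4" shows "(\<Sum>t\<in>NWs n 9. ff n 9 t) = -1"
proof -
  have w: "{s. 0 \<le> s \<and> s < int n \<and> \<bar>2*s - int 9\<bar> < 8} = {1 .. 8}"
    unfolding nK using K by (auto simp: abs_less_iff)
  have c: "(\<Sum>i\<in>{1..8}. ff n 9 (nat i)) = (\<Sum>i\<in>{1..8}. nearF K 3 9 i)"
  proof (rule sum.cong)
    fix x :: int assume "x \<in> {1..8}"
    then show "ff n 9 (nat x) = nearF K 3 9 x" using near_pt[OF nK, of x 9] nK K by simp
  qed simp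
  show ?thesis unfolding sum_NWs_int w unfolding c unfolding sum_upto_int using K
    by (simp add: nearF_def gsh gsh6 upto_rec1)
qed

lemma PNI_9_4: assumes nK: "int n = 6*K + 4" and K: "K \<ge> 4" shows "(\<Sum>t\<in>NWs n 9. ff n 9 t) = -1"
proof -
  have w: "{s. 0 \<le> s \<and> s < int n \<and> \<bar>2*s - int 9\<bar> < 8} = {1 .. 8}"
    unfolding nK using K by (auto simp: abs_less_iff)
  have c: "(\<Sum>i\<in>{1..8}. ff n 9 (nat i)) = (\<Sum>i\<in>{1..8}. nearF K 4 9 i)"
  proof (rule sum.cong)
    fix x :: int assume "x \<in> {1..8}"
    then show "ff n 9 (nat x) = nearF K 4 9 x" using near_pt[OF nK, of x 9] nK K by simp
  qed simp
  show ?thesis unfolding sum_NWs_int w unfolding c unfolding sum_upto_int using K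
    by (simp add: nearF_def gsh gsh6 upto_rec1)
qed

lemma PNI_9_5: assumes nK: "int n = 6*K + 5" and K: "K \<ge> 4" shows "(\<Sum>t\<in>NWs n 9. ff n 9 t) = -1"
proof -
  have w: "{s. 0 \<le> s \<and> s < int n \<and> \<bar>2*s - int 9\<bar> < 8} = {1 .. 8}"
    unfolding nK using K by (auto simp: abs_less_iff)
  have c: "(\<Sum>i\<in>{1..8}. ff n 9 (nat i)) = (\<Sum>i\<in>{1..8}. nearF K 5 9 i)"
  proof (rule sum.cong)
    fix x :: int assume "x \<in> {1..8}"
    then show "ff n 9 (nat x) = nearF K 5 9 x" using near_pt[OF nK, of x 9] nK K by simp
  qed simp
  show ?thesis unfolding sum_NWs_int w unfolding c unfolding sum_upto_int using K
    by (simp add: nearF_def gsh gsh6 upto_rec1)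
qed

lemma PNI_11_0: assumes nK: "int n = 6*K + 0" and K: "K \<ge> 4" shows "(\<Sum>t\<in>NWs n 11. ff n 11 t) = -1"
proof -
  have w: "{s. 0 \<le> s \<and> s < int n \<and> \<bar>2*s - int 11\<bar> < 8} = {2 .. 9}"
    unfolding nK using K by (auto simp: abs_less_iff)
  have c: "(\<Sum>i\<in>{2..9}. ff n 11 (nat i)) = (\<Sum>i\<in>{2..9}. nearF K 0 11 i)"
  proof (rule sum.cong)
    fix x :: int assume "x \<in> {2..9}"
    then show "ff n 11 (nat x) = nearF K 0 11 x" using near_pt[OF nK, of x 11] nK K by simp
  qed simp
  show ?thesis unfolding sum_NWs_int w unfolding c unfolding sum_upto_int using K
    by (simp add: nearF_def gsh gsh6 upto_rec1)
qed

lemma PNI_11_1: assumes nK: "int n = 6*K + 1" and K: "K \<ge> 4" shows "(\<Sum>t\<in>NWs n 11. ff n 11 t) = -1"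
proof -
  have w: "{s. 0 \<le> s \<and> s < int n \<and> \<bar>2*s - int 11\<bar> < 8} = {2 .. 9}"
    unfolding nK using K by (auto simp: abs_less_iff)
  have c: "(\<Sum>i\<in>{2..9}. ff n 11 (nat i)) = (\<Sum>i\<in>{2..9}. nearF K 1 11 i)"
  proof (rule sum.cong)
    fix x :: int assume "x \<in> {2..9}"
    then show "ff n 11 (nat x) = nearF K 1 11 x" using near_pt[OF nK, of x 11] nK K by simp
  qed simp
  show ?thesis unfolding sum_NWs_int w unfolding c unfolding sum_upto_int using K
    by (simp add: nearF_def gsh gsh6 upto_rec1)
qed

lemma PNI_11_2: assumes nK: "int n = 6*K + 2" and K: "K \<ge> 4" shows "(\<Sum>t\<in>NWs n 11. ff n 11 t) = -1"
proof -
  have w: "{s. 0 \<le> s \<and> s < int n \<and> \<bar>2*s - int 11\<bar> < 8} = {2 .. 9}"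
    unfolding nK using K by (auto simp: abs_less_iff)
  have c: "(\<Sum>i\<in>{2..9}. ff n 11 (nat i)) = (\<Sum>i\<in>{2..9}. nearF K 2 11 i)"
  proof (rule sum.cong)
    fix x :: int assume "x \<in> {2..9}"
    then show "ff n 11 (nat x) = nearF K 2 11 x" using near_pt[OF nK, of x 11] nK K by simp
  qed simp
  show ?thesis unfolding sum_NWs_int w unfolding c unfolding sum_upto_int using K
    by (simp add: nearF_def gsh gsh6 upto_rec1)
qed

lemma PNI_11_3: assumes nK: "int n = 6*K + 3" and K: "K \<ge> 4" shows "(\<Sum>t\<in>NWs n 11. ff n 11 t) = -1"
proof -
  have w: "{s. 0 \<le> s \<and> s < int n \<and> \<bar>2*s - int 11\<bar> < 8} = {2 .. 9}"
    unfolding nK using K by (auto simp: abs_less_iff)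
  have c: "(\<Sum>i\<in>{2..9}. ff n 11 (nat i)) = (\<Sum>i\<in>{2..9}. nearF K 3 11 i)"
  proof (rule sum.cong)
    fix x :: int assume "x \<in> {2..9}"
    then show "ff n 11 (nat x) = nearF K 3 11 x" using near_pt[OF nK, of x 11] nK K by simp
  qed simp
  show ?thesis unfolding sum_NWs_int w unfolding c unfolding sum_upto_int using K
    by (simp add: nearF_def gsh gsh6 upto_rec1)
qed

lemma PNI_11_4: assumes nK: "int n = 6*K + 4" and K: "K \<ge> 4" shows "(\<Sum>t\<in>NWs n 11. ff n 11 t) = -1"
proof -
  have w: "{s. 0 \<le> s \<and> s < int n \<and> \<bar>2*s - int 11\<bar> < 8} = {2 .. 9}"
    unfolding nK using K by (auto simp: abs_less_iff)
  have c: "(\<Sum>i\<in>{2..9}. ff n 11 (nat i)) = (\<Sum>i\<in>{2..9}. nearF K 4 11 i)"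
  proof (rule sum.cong)
    fix x :: int assume "x \<in> {2..9}"
    then show "ff n 11 (nat x) = nearF K 4 11 x" using near_pt[OF nK, of x 11] nK K by simp
  qed simp
  show ?thesis unfolding sum_NWs_int w unfolding c unfolding sum_upto_int using K
    by (simp add: nearF_def gsh gsh6 upto_rec1)
qed

lemma PNI_11_5: assumes nK: "int n = 6*K + 5" and K: "K \<ge> 4" shows "(\<Sum>t\<in>NWs n 11. ff n 11 t) = -1"
proof -
  have w: "{s. 0 \<le> s \<and> s < int n \<and> \<bar>2*s - int 11\<bar> < 8} = {2 .. 9}"
    unfolding nK using K by (auto simp: abs_less_iff)
  have c: "(\<Sum>i\<in>{2..9}. ff n 11 (nat i)) = (\<Sum>i\<in>{2..9}. nearF K 5 11 i)"
  proof (rule sum.cong)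
    fix x :: int assume "x \<in> {2..9}"
    then show "ff n 11 (nat x) = nearF K 5 11 x" using near_pt[OF nK, of x 11] nK K by simp
  qed simp
  show ?thesis unfolding sum_NWs_int w unfolding c unfolding sum_upto_int using K
    by (simp add: nearF_def gsh gsh6 upto_rec1)
qed

lemma PNI_14_0: assumes nK: "int n = 6*K + 0" and K: "K \<ge> 4" shows "(\<Sum>t\<in>NWs n 14. ff n 14 t) = -2"
proof -
  have w: "{s. 0 \<le> s \<and> s < int n \<and> \<bar>2*s - int 14\<bar> < 8} = {4 .. 10}"
    unfolding nK using K by (auto simp: abs_less_iff)
  have c: "(\<Sum>i\<in>{4..10}. ff n 14 (nat i)) = (\<Sum>i\<in>{4..10}. nearF K 0 14 i)"
  proof (rule sum.cong)
    fix x :: int assume "x \<in> {4..10}"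
    then show "ff n 14 (nat x) = nearF K 0 14 x" using near_pt[OF nK, of x 14] nK K by simp
  qed simp
  show ?thesis unfolding sum_NWs_int w unfolding c unfolding sum_upto_int using K
    by (simp add: nearF_def gsh gsh6 upto_rec1)
qed

lemma PNI_14_1: assumes nK: "int n = 6*K + 1" and K: "K \<ge> 4" shows "(\<Sum>t\<in>NWs n 14. ff n 14 t) = -2"
proof -
  have w: "{s. 0 \<le> s \<and> s < int n \<and> \<bar>2*s - int 14\<bar> < 8} = {4 .. 10}"
    unfolding nK using K by (auto simp: abs_less_iff)
  have c: "(\<Sum>i\<in>{4..10}. ff n 14 (nat i)) = (\<Sum>i\<in>{4..10}. nearF K 1 14 i)"
  proof (rule sum.cong)
    fix x :: int assume "x \<in> {4..10}"
    then show "ff n 14 (nat x) = nearF K 1 14 x" using near_pt[OF nK, of x 14] nK K by simp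
  qed simp
  show ?thesis unfolding sum_NWs_int w unfolding c unfolding sum_upto_int using K
    by (simp add: nearF_def gsh gsh6 upto_rec1)
qed

lemma PNI_14_2: assumes nK: "int n = 6*K + 2" and K: "K \<ge> 4" shows "(\<Sum>t\<in>NWs n 14. ff n 14 t) = -2"
proof -
  have w: "{s. 0 \<le> s \<and> s < int n \<and> \<bar>2*s - int 14\<bar> < 8} = {4 .. 10}"
    unfolding nK using K by (auto simp: abs_less_iff)
  have c: "(\<Sum>i\<in>{4..10}. ff n 14 (nat i)) = (\<Sum>i\<in>{4..10}. nearF K 2 14 i)"
  proof (rule sum.cong)
    fix x :: int assume "x \<in> {4..10}"
    then show "ff n 14 (nat x) = nearF K 2 14 x" using near_pt[OF nK, of x 14] nK K by simp
  qed simp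
  show ?thesis unfolding sum_NWs_int w unfolding c unfolding sum_upto_int using K
    by (simp add: nearF_def gsh gsh6 upto_rec1)
qed

lemma PNI_14_3: assumes nK: "int n = 6*K + 3" and K: "K \<ge> 4" shows "(\<Sum>t\<in>NWs n 14. ff n 14 t) = -2"
proof -
  have w: "{s. 0 \<le> s \<and> s < int n \<and> \<bar>2*s - int 14\<bar> < 8} = {4 .. 10}"
    unfolding nK using K by (auto simp: abs_less_iff)
  have c: "(\<Sum>i\<in>{4..10}. ff n 14 (nat i)) = (\<Sum>i\<in>{4..10}. nearF K 3 14 i)"
  proof (rule sum.cong)
    fix x :: int assume "x \<in> {4..10}"
    then show "ff n 14 (nat x) = nearF K 3 14 x" using near_pt[OF nK, of x 14] nK K by simp
  qed simp
  show ?thesis unfolding sum_NWs_int w unfolding c unfolding sum_upto_int using K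
    by (simp add: nearF_def gsh gsh6 upto_rec1)
qed

lemma PNI_14_4: assumes nK: "int n = 6*K + 4" and K: "K \<ge> 4" shows "(\<Sum>t\<in>NWs n 14. ff n 14 t) = -2"
proof -
  have w: "{s. 0 \<le> s \<and> s < int n \<and> \<bar>2*s - int 14\<bar> < 8} = {4 .. 10}"
    unfolding nK using K by (auto simp: abs_less_iff)
  have c: "(\<Sum>i\<in>{4..10}. ff n 14 (nat i)) = (\<Sum>i\<in>{4..10}. nearF K 4 14 i)"
  proof (rule sum.cong)
    fix x :: int assume "x \<in> {4..10}"
    then show "ff n 14 (nat x) = nearF K 4 14 x" using near_pt[OF nK, of x 14] nK K by simp
  qed simp
  show ?thesis unfolding sum_NWs_int w unfolding c unfolding sum_upto_int using K
    by (simp add: nearF_def gsh gsh6 upto_rec1)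
qed

lemma PNI_14_5: assumes nK: "int n = 6*K + 5" and K: "K \<ge> 4" shows "(\<Sum>t\<in>NWs n 14. ff n 14 t) = -2"
proof -
  have w: "{s. 0 \<le> s \<and> s < int n \<and> \<bar>2*s - int 14\<bar> < 8} = {4 .. 10}"
    unfolding nK using K by (auto simp: abs_less_iff)
  have c: "(\<Sum>i\<in>{4..10}. ff n 14 (nat i)) = (\<Sum>i\<in>{4..10}. nearF K 5 14 i)"
  proof (rule sum.cong)
    fix x :: int assume "x \<in> {4..10}"
    then show "ff n 14 (nat x) = nearF K 5 14 x" using near_pt[OF nK, of x 14] nK K by simp
  qed simp
  show ?thesis unfolding sum_NWs_int w unfolding c unfolding sum_upto_int using K
    by (simp add: nearF_def gsh gsh6 upto_rec1)
qed

lemma PNI_17_0: assumes nK: "int n = 6*K + 0" and K: "K \<ge> 4" shows "(\<Sum>t\<in>NWs n 17. ff n 17 t) = -2"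
proof -
  have w: "{s. 0 \<le> s \<and> s < int n \<and> \<bar>2*s - int 17\<bar> < 8} = {5 .. 12}"
    unfolding nK using K by (auto simp: abs_less_iff)
  have c: "(\<Sum>i\<in>{5..12}. ff n 17 (nat i)) = (\<Sum>i\<in>{5..12}. nearF K 0 17 i)"
  proof (rule sum.cong)
    fix x :: int assume "x \<in> {5..12}"
    then show "ff n 17 (nat x) = nearF K 0 17 x" using near_pt[OF nK, of x 17] nK K by simp
  qed simp
  show ?thesis unfolding sum_NWs_int w unfolding c unfolding sum_upto_int using K
    by (simp add: nearF_def gsh gsh6 upto_rec1)
qed

lemma PNI_17_1: assumes nK: "int n = 6*K + 1" and K: "K \<ge> 4" shows "(\<Sum>t\<in>NWs n 17. ff n 17 t) = -2"
proof -
  have w: "{s. 0 \<le> s \<and> s < int n \<and> \<bar>2*s - int 17\<bar> < 8} = {5 .. 12}"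
    unfolding nK using K by (auto simp: abs_less_iff)
  have c: "(\<Sum>i\<in>{5..12}. ff n 17 (nat i)) = (\<Sum>i\<in>{5..12}. nearF K 1 17 i)"
  proof (rule sum.cong)
    fix x :: int assume "x \<in> {5..12}"
    then show "ff n 17 (nat x) = nearF K 1 17 x" using near_pt[OF nK, of x 17] nK K by simp
  qed simp
  show ?thesis unfolding sum_NWs_int w unfolding c unfolding sum_upto_int using K
    by (simp add: nearF_def gsh gsh6 upto_rec1)
qed

lemma PNI_17_2: assumes nK: "int n = 6*K + 2" and K: "K \<ge> 4" shows "(\<Sum>t\<in>NWs n 17. ff n 17 t) = -2"
proof -
  have w: "{s. 0 \<le> s \<and> s < int n \<and> \<bar>2*s - int 17\<bar> < 8} = {5 .. 12}"
    unfolding nK using K by (auto simp: abs_less_iff)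
  have c: "(\<Sum>i\<in>{5..12}. ff n 17 (nat i)) = (\<Sum>i\<in>{5..12}. nearF K 2 17 i)"
  proof (rule sum.cong)
    fix x :: int assume "x \<in> {5..12}"
    then show "ff n 17 (nat x) = nearF K 2 17 x" using near_pt[OF nK, of x 17] nK K by simp
  qed simp
  show ?thesis unfolding sum_NWs_int w unfolding c unfolding sum_upto_int using K
    by (simp add: nearF_def gsh gsh6 upto_rec1)
qed

lemma PNI_17_3: assumes nK: "int n = 6*K + 3" and K: "K \<ge> 4" shows "(\<Sum>t\<in>NWs n 17. ff n 17 t) = -2"
proof -
  have w: "{s. 0 \<le> s \<and> s < int n \<and> \<bar>2*s - int 17\<bar> < 8} = {5 .. 12}"
    unfolding nK using K by (auto simp: abs_less_iff)
  have c: "(\<Sum>i\<in>{5..12}. ff n 17 (nat i)) = (\<Sum>i\<in>{5..12}. nearF K 3 17 i)"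
  proof (rule sum.cong)
    fix x :: int assume "x \<in> {5..12}"
    then show "ff n 17 (nat x) = nearF K 3 17 x" using near_pt[OF nK, of x 17] nK K by simp
  qed simp
  show ?thesis unfolding sum_NWs_int w unfolding c unfolding sum_upto_int using K
    by (simp add: nearF_def gsh gsh6 upto_rec1)
qed

lemma PNI_17_4: assumes nK: "int n = 6*K + 4" and K: "K \<ge> 4" shows "(\<Sum>t\<in>NWs n 17. ff n 17 t) = -2"
proof -
  have w: "{s. 0 \<le> s \<and> s < int n \<and> \<bar>2*s - int 17\<bar> < 8} = {5 .. 12}"
    unfolding nK using K by (auto simp: abs_less_iff)
  have c: "(\<Sum>i\<in>{5..12}. ff n 17 (nat i)) = (\<Sum>i\<in>{5..12}. nearF K 4 17 i)"
  proof (rule sum.cong)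
    fix x :: int assume "x \<in> {5..12}"
    then show "ff n 17 (nat x) = nearF K 4 17 x" using near_pt[OF nK, of x 17] nK K by simp
  qed simp
  show ?thesis unfolding sum_NWs_int w unfolding c unfolding sum_upto_int using K
    by (simp add: nearF_def gsh gsh6 upto_rec1)
qed

lemma PNI_17_5: assumes nK: "int n = 6*K + 5" and K: "K \<ge> 4" shows "(\<Sum>t\<in>NWs n 17. ff n 17 t) = -2"
proof -
  have w: "{s. 0 \<le> s \<and> s < int n \<and> \<bar>2*s - int 17\<bar> < 8} = {5 .. 12}"
    unfolding nK using K by (auto simp: abs_less_iff)
  have c: "(\<Sum>i\<in>{5..12}. ff n 17 (nat i)) = (\<Sum>i\<in>{5..12}. nearF K 5 17 i)"
  proof (rule sum.cong)
    fix x :: int assume "x \<in> {5..12}"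
    then show "ff n 17 (nat x) = nearF K 5 17 x" using near_pt[OF nK, of x 17] nK K by simp
  qed simp
  show ?thesis unfolding sum_NWs_int w unfolding c unfolding sum_upto_int using K
    by (simp add: nearF_def gsh gsh6 upto_rec1)
qed



lemma SS_split: assumes "17 \<le> n" "2*j \<le> n" "j = 6 \<or> 8 \<le> j"
  shows "SS n j = (\<Sum>t\<in>NWs n j. ff n j t) + (\<Sum>t\<in>FWs n j. ff n j t)"
proof (rule SS_windows)
  show "17 \<le> n" "j < n" using assms by auto
  fix t assume "t < n" "t \<notin> NWs n j" "t \<notin> FWs n j"
  then show "ff n j t = 0" using assms ff6_zero[of n t] ff_zero_general[of j n t] by auto
qed

lemma CS_17_6: "SS 17 6 < 0"
proof -
  have nK: "int 17 = 6*2 + 5" by simp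
  have w1: "{s. 0 \<le> s \<and> s < int 17 \<and> \<bar>2*s - int 6\<bar> < 8} = {0 .. 6}"
    by (auto simp: abs_less_iff)
  have c1: "(\<Sum>i\<in>{0..6}. ff 17 6 (nat i)) = (\<Sum>i\<in>{0..6}. nearF 2 5 6 i)"
  proof (rule sum.cong)
    fix x :: int assume "x \<in> {0..6}"
    then show "ff 17 6 (nat x) = nearF 2 5 6 x" using near_pt[OF nK, of x 6] by simp
  qed simp
  have N: "(\<Sum>t\<in>NWs 17 6. ff 17 6 t) = 0"
    unfolding sum_NWs_int w1 unfolding c1 unfolding sum_upto_int
    by (simp add: nearF_def gsh upto_rec1)
  have w2: "{s. 0 \<le> s \<and> s < int 17 \<and> \<bar>2*s - int 6 - int 17\<bar> < 8} = {3*2 + 2 .. 3*2 + 9}"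
    by (auto simp: abs_less_iff)
  have c2: "(\<Sum>i\<in>{2..9}. ff 17 6 (nat (3*2 + i))) = (\<Sum>i\<in>{2..9}. farF 2 5 6 i)"
  proof (rule sum.cong)
    fix x :: int assume "x \<in> {2..9}"
    then show "ff 17 6 (nat (3*2 + x)) = farF 2 5 6 x" using far_pt[OF nK, of 6 x] by simp
  qed simp
  have F: "(\<Sum>t\<in>FWs 17 6. ff 17 6 t) = -1"
    unfolding sum_FWs_int w2 unfolding sum_shift_int unfolding c2 unfolding sum_upto_int
    by (simp add: farF_def gsh upto_rec1)
  show ?thesis using SS_split[of 17 6] N F by simp
qed

lemma CS_17_8: "SS 17 8 < 0"
proof -
  have nK: "int 17 = 6*2 + 5" by simp
  have w1: "{s. 0 \<le> s \<and> s < int 17 \<and> \<bar>2*s - int 8\<bar> < 8} = {1 .. 7}"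
    by (auto simp: abs_less_iff)
  have c1: "(\<Sum>i\<in>{1..7}. ff 17 8 (nat i)) = (\<Sum>i\<in>{1..7}. nearF 2 5 8 i)"
  proof (rule sum.cong)
    fix x :: int assume "x \<in> {1..7}"
    then show "ff 17 8 (nat x) = nearF 2 5 8 x" using near_pt[OF nK, of x 8] by simp
  qed simp
  have N: "(\<Sum>t\<in>NWs 17 8. ff 17 8 t) = 0"
    unfolding sum_NWs_int w1 unfolding c1 unfolding sum_upto_int
    by (simp add: nearF_def gsh upto_rec1)
  have w2: "{s. 0 \<le> s \<and> s < int 17 \<and> \<bar>2*s - int 8 - int 17\<bar> < 8} = {3*2 + 3 .. 3*2 + 10}"
    by (auto simp: abs_less_iff)
  have c2: "(\<Sum>i\<in>{3..10}. ff 17 8 (nat (3*2 + i))) = (\<Sum>i\<in>{3..10}. farF 2 5 8 i)"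
  proof (rule sum.cong)
    fix x :: int assume "x \<in> {3..10}"
    then show "ff 17 8 (nat (3*2 + x)) = farF 2 5 8 x" using far_pt[OF nK, of 8 x] by simp
  qed simp
  have F: "(\<Sum>t\<in>FWs 17 8. ff 17 8 t) = -1"
    unfolding sum_FWs_int w2 unfolding sum_shift_int unfolding c2 unfolding sum_upto_int
    by (simp add: farF_def gsh upto_rec1)
  show ?thesis using SS_split[of 17 8] N F by simp
qed

lemma CS_18_6: "SS 18 6 < 0"
proof -
  have nK: "int 18 = 6*3 + 0" by simp
  have w1: "{s. 0 \<le> s \<and> s < int 18 \<and> \<bar>2*s - int 6\<bar> < 8} = {0 .. 6}"
    by (auto simp: abs_less_iff)
  have c1: "(\<Sum>i\<in>{0..6}. ff 18 6 (nat i)) = (\<Sum>i\<in>{0..6}. nearF 3 0 6 i)"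
  proof (rule sum.cong)
    fix x :: int assume "x \<in> {0..6}"
    then show "ff 18 6 (nat x) = nearF 3 0 6 x" using near_pt[OF nK, of x 6] by simp
  qed simp
  have N: "(\<Sum>t\<in>NWs 18 6. ff 18 6 t) = 0"
    unfolding sum_NWs_int w1 unfolding c1 unfolding sum_upto_int
    by (simp add: nearF_def gsh upto_rec1)
  have w2: "{s. 0 \<le> s \<and> s < int 18 \<and> \<bar>2*s - int 6 - int 18\<bar> < 8} = {3*3 + 0 .. 3*3 + 6}"
    by (auto simp: abs_less_iff)
  have c2: "(\<Sum>i\<in>{0..6}. ff 18 6 (nat (3*3 + i))) = (\<Sum>i\<in>{0..6}. farF 3 0 6 i)"
  proof (rule sum.cong)
    fix x :: int assume "x \<in> {0..6}"
    then show "ff 18 6 (nat (3*3 + x)) = farF 3 0 6 x" using far_pt[OF nK, of 6 x] by simp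
  qed simp
  have F: "(\<Sum>t\<in>FWs 18 6. ff 18 6 t) = -2"
    unfolding sum_FWs_int w2 unfolding sum_shift_int unfolding c2 unfolding sum_upto_int
    by (simp add: farF_def gsh upto_rec1)
  show ?thesis using SS_split[of 18 6] N F by simp
qed

lemma CS_18_9: "SS 18 9 < 0"
proof -
  have nK: "int 18 = 6*3 + 0" by simp
  have w1: "{s. 0 \<le> s \<and> s < int 18 \<and> \<bar>2*s - int 9\<bar> < 8} = {1 .. 8}"
    by (auto simp: abs_less_iff)
  have c1: "(\<Sum>i\<in>{1..8}. ff 18 9 (nat i)) = (\<Sum>i\<in>{1..8}. nearF 3 0 9 i)"
  proof (rule sum.cong)
    fix x :: int assume "x \<in> {1..8}"
    then show "ff 18 9 (nat x) = nearF 3 0 9 x" using near_pt[OF nK, of x 9] by simp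
  qed simp
  have N: "(\<Sum>t\<in>NWs 18 9. ff 18 9 t) = -1"
    unfolding sum_NWs_int w1 unfolding c1 unfolding sum_upto_int
    by (simp add: nearF_def gsh upto_rec1)
  have w2: "{s. 0 \<le> s \<and> s < int 18 \<and> \<bar>2*s - int 9 - int 18\<bar> < 8} = {3*3 + 1 .. 3*3 + 8}"
    by (auto simp: abs_less_iff)
  have c2: "(\<Sum>i\<in>{1..8}. ff 18 9 (nat (3*3 + i))) = (\<Sum>i\<in>{1..8}. farF 3 0 9 i)"
  proof (rule sum.cong)
    fix x :: int assume "x \<in> {1..8}"
    then show "ff 18 9 (nat (3*3 + x)) = farF 3 0 9 x" using far_pt[OF nK, of 9 x] by simp
  qed simp
  have F: "(\<Sum>t\<in>FWs 18 9. ff 18 9 t) = -1"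
    unfolding sum_FWs_int w2 unfolding sum_shift_int unfolding c2 unfolding sum_upto_int
    by (simp add: farF_def gsh upto_rec1)
  show ?thesis using SS_split[of 18 9] N F by simp
qed

lemma CS_18_8: "SS 18 8 < 0"
proof -
  have nK: "int 18 = 6*3 + 0" by simp
  have w1: "{s. 0 \<le> s \<and> s < int 18 \<and> \<bar>2*s - int 8\<bar> < 8} = {1 .. 7}"
    by (auto simp: abs_less_iff)
  have c1: "(\<Sum>i\<in>{1..7}. ff 18 8 (nat i)) = (\<Sum>i\<in>{1..7}. nearF 3 0 8 i)"
  proof (rule sum.cong)
    fix x :: int assume "x \<in> {1..7}"
    then show "ff 18 8 (nat x) = nearF 3 0 8 x" using near_pt[OF nK, of x 8] by simp
  qed simp
  have N: "(\<Sum>t\<in>NWs 18 8. ff 18 8 t) = 0"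
    unfolding sum_NWs_int w1 unfolding c1 unfolding sum_upto_int
    by (simp add: nearF_def gsh upto_rec1)
  have w2: "{s. 0 \<le> s \<and> s < int 18 \<and> \<bar>2*s - int 8 - int 18\<bar> < 8} = {3*3 + 1 .. 3*3 + 7}"
    by (auto simp: abs_less_iff)
  have c2: "(\<Sum>i\<in>{1..7}. ff 18 8 (nat (3*3 + i))) = (\<Sum>i\<in>{1..7}. farF 3 0 8 i)"
  proof (rule sum.cong)
    fix x :: int assume "x \<in> {1..7}"
    then show "ff 18 8 (nat (3*3 + x)) = farF 3 0 8 x" using far_pt[OF nK, of 8 x] by simp
  qed simp
  have F: "(\<Sum>t\<in>FWs 18 8. ff 18 8 t) = -2"
    unfolding sum_FWs_int w2 unfolding sum_shift_int unfolding c2 unfolding sum_upto_int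
    by (simp add: farF_def gsh upto_rec1)
  show ?thesis using SS_split[of 18 8] N F by simp
qed

lemma CS_19_6: "SS 19 6 < 0"
proof -
  have nK: "int 19 = 6*3 + 1" by simp
  have w1: "{s. 0 \<le> s \<and> s < int 19 \<and> \<bar>2*s - int 6\<bar> < 8} = {0 .. 6}"
    by (auto simp: abs_less_iff)
  have c1: "(\<Sum>i\<in>{0..6}. ff 19 6 (nat i)) = (\<Sum>i\<in>{0..6}. nearF 3 1 6 i)"
  proof (rule sum.cong)
    fix x :: int assume "x \<in> {0..6}"
    then show "ff 19 6 (nat x) = nearF 3 1 6 x" using near_pt[OF nK, of x 6] by simp
  qed simp
  have N: "(\<Sum>t\<in>NWs 19 6. ff 19 6 t) = 0"
    unfolding sum_NWs_int w1 unfolding c1 unfolding sum_upto_int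
    by (simp add: nearF_def gsh upto_rec1)
  have w2: "{s. 0 \<le> s \<and> s < int 19 \<and> \<bar>2*s - int 6 - int 19\<bar> < 8} = {3*3 + 0 .. 3*3 + 7}"
    by (auto simp: abs_less_iff)
  have c2: "(\<Sum>i\<in>{0..7}. ff 19 6 (nat (3*3 + i))) = (\<Sum>i\<in>{0..7}. farF 3 1 6 i)"
  proof (rule sum.cong)
    fix x :: int assume "x \<in> {0..7}"
    then show "ff 19 6 (nat (3*3 + x)) = farF 3 1 6 x" using far_pt[OF nK, of 6 x] by simp
  qed simp
  have F: "(\<Sum>t\<in>FWs 19 6. ff 19 6 t) = -2"
    unfolding sum_FWs_int w2 unfolding sum_shift_int unfolding c2 unfolding sum_upto_int
    by (simp add: farF_def gsh upto_rec1)
  show ?thesis using SS_split[of 19 6] N F by simp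
qed

lemma CS_19_9: "SS 19 9 < 0"
proof -
  have nK: "int 19 = 6*3 + 1" by simp
  have w1: "{s. 0 \<le> s \<and> s < int 19 \<and> \<bar>2*s - int 9\<bar> < 8} = {1 .. 8}"
    by (auto simp: abs_less_iff)
  have c1: "(\<Sum>i\<in>{1..8}. ff 19 9 (nat i)) = (\<Sum>i\<in>{1..8}. nearF 3 1 9 i)"
  proof (rule sum.cong)
    fix x :: int assume "x \<in> {1..8}"
    then show "ff 19 9 (nat x) = nearF 3 1 9 x" using near_pt[OF nK, of x 9] by simp
  qed simp
  have N: "(\<Sum>t\<in>NWs 19 9. ff 19 9 t) = -1"
    unfolding sum_NWs_int w1 unfolding c1 unfolding sum_upto_int
    by (simp add: nearF_def gsh upto_rec1)
  have w2: "{s. 0 \<le> s \<and> s < int 19 \<and> \<bar>2*s - int 9 - int 19\<bar> < 8} = {3*3 + 2 .. 3*3 + 8}"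
    by (auto simp: abs_less_iff)
  have c2: "(\<Sum>i\<in>{2..8}. ff 19 9 (nat (3*3 + i))) = (\<Sum>i\<in>{2..8}. farF 3 1 9 i)"
  proof (rule sum.cong)
    fix x :: int assume "x \<in> {2..8}"
    then show "ff 19 9 (nat (3*3 + x)) = farF 3 1 9 x" using far_pt[OF nK, of 9 x] by simp
  qed simp
  have F: "(\<Sum>t\<in>FWs 19 9. ff 19 9 t) = -2"
    unfolding sum_FWs_int w2 unfolding sum_shift_int unfolding c2 unfolding sum_upto_int
    by (simp add: farF_def gsh upto_rec1)
  show ?thesis using SS_split[of 19 9] N F by simp
qed

lemma CS_19_8: "SS 19 8 < 0"
proof -
  have nK: "int 19 = 6*3 + 1" by simp
  have w1: "{s. 0 \<le> s \<and> s < int 19 \<and> \<bar>2*s - int 8\<bar> < 8} = {1 .. 7}"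
    by (auto simp: abs_less_iff)
  have c1: "(\<Sum>i\<in>{1..7}. ff 19 8 (nat i)) = (\<Sum>i\<in>{1..7}. nearF 3 1 8 i)"
  proof (rule sum.cong)
    fix x :: int assume "x \<in> {1..7}"
    then show "ff 19 8 (nat x) = nearF 3 1 8 x" using near_pt[OF nK, of x 8] by simp
  qed simp
  have N: "(\<Sum>t\<in>NWs 19 8. ff 19 8 t) = 0"
    unfolding sum_NWs_int w1 unfolding c1 unfolding sum_upto_int
    by (simp add: nearF_def gsh upto_rec1)
  have w2: "{s. 0 \<le> s \<and> s < int 19 \<and> \<bar>2*s - int 8 - int 19\<bar> < 8} = {3*3 + 1 .. 3*3 + 8}"
    by (auto simp: abs_less_iff)
  have c2: "(\<Sum>i\<in>{1..8}. ff 19 8 (nat (3*3 + i))) = (\<Sum>i\<in>{1..8}. farF 3 1 8 i)"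
  proof (rule sum.cong)
    fix x :: int assume "x \<in> {1..8}"
    then show "ff 19 8 (nat (3*3 + x)) = farF 3 1 8 x" using far_pt[OF nK, of 8 x] by simp
  qed simp
  have F: "(\<Sum>t\<in>FWs 19 8. ff 19 8 t) = -1"
    unfolding sum_FWs_int w2 unfolding sum_shift_int unfolding c2 unfolding sum_upto_int
    by (simp add: farF_def gsh upto_rec1)
  show ?thesis using SS_split[of 19 8] N F by simp
qed

lemma CS_20_6: "SS 20 6 < 0"
proof -
  have nK: "int 20 = 6*3 + 2" by simp
  have w1: "{s. 0 \<le> s \<and> s < int 20 \<and> \<bar>2*s - int 6\<bar> < 8} = {0 .. 6}"
    by (auto simp: abs_less_iff)
  have c1: "(\<Sum>i\<in>{0..6}. ff 20 6 (nat i)) = (\<Sum>i\<in>{0..6}. nearF 3 2 6 i)"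
  proof (rule sum.cong)
    fix x :: int assume "x \<in> {0..6}"
    then show "ff 20 6 (nat x) = nearF 3 2 6 x" using near_pt[OF nK, of x 6] by simp
  qed simp
  have N: "(\<Sum>t\<in>NWs 20 6. ff 20 6 t) = 0"
    unfolding sum_NWs_int w1 unfolding c1 unfolding sum_upto_int
    by (simp add: nearF_def gsh upto_rec1)
  have w2: "{s. 0 \<le> s \<and> s < int 20 \<and> \<bar>2*s - int 6 - int 20\<bar> < 8} = {3*3 + 1 .. 3*3 + 7}"
    by (auto simp: abs_less_iff)
  have c2: "(\<Sum>i\<in>{1..7}. ff 20 6 (nat (3*3 + i))) = (\<Sum>i\<in>{1..7}. farF 3 2 6 i)"
  proof (rule sum.cong)
    fix x :: int assume "x \<in> {1..7}"
    then show "ff 20 6 (nat (3*3 + x)) = farF 3 2 6 x" using far_pt[OF nK, of 6 x] by simp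
  qed simp
  have F: "(\<Sum>t\<in>FWs 20 6. ff 20 6 t) = -2"
    unfolding sum_FWs_int w2 unfolding sum_shift_int unfolding c2 unfolding sum_upto_int
    by (simp add: farF_def gsh upto_rec1)
  show ?thesis using SS_split[of 20 6] N F by simp
qed

lemma CS_20_9: "SS 20 9 < 0"
proof -
  have nK: "int 20 = 6*3 + 2" by simp
  have w1: "{s. 0 \<le> s \<and> s < int 20 \<and> \<bar>2*s - int 9\<bar> < 8} = {1 .. 8}"
    by (auto simp: abs_less_iff)
  have c1: "(\<Sum>i\<in>{1..8}. ff 20 9 (nat i)) = (\<Sum>i\<in>{1..8}. nearF 3 2 9 i)"
  proof (rule sum.cong)
    fix x :: int assume "x \<in> {1..8}"
    then show "ff 20 9 (nat x) = nearF 3 2 9 x" using near_pt[OF nK, of x 9] by simp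
  qed simp
  have N: "(\<Sum>t\<in>NWs 20 9. ff 20 9 t) = -1"
    unfolding sum_NWs_int w1 unfolding c1 unfolding sum_upto_int
    by (simp add: nearF_def gsh upto_rec1)
  have w2: "{s. 0 \<le> s \<and> s < int 20 \<and> \<bar>2*s - int 9 - int 20\<bar> < 8} = {3*3 + 2 .. 3*3 + 9}"
    by (auto simp: abs_less_iff)
  have c2: "(\<Sum>i\<in>{2..9}. ff 20 9 (nat (3*3 + i))) = (\<Sum>i\<in>{2..9}. farF 3 2 9 i)"
  proof (rule sum.cong)
    fix x :: int assume "x \<in> {2..9}"
    then show "ff 20 9 (nat (3*3 + x)) = farF 3 2 9 x" using far_pt[OF nK, of 9 x] by simp
  qed simp
  have F: "(\<Sum>t\<in>FWs 20 9. ff 20 9 t) = -1"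
    unfolding sum_FWs_int w2 unfolding sum_shift_int unfolding c2 unfolding sum_upto_int
    by (simp add: farF_def gsh upto_rec1)
  show ?thesis using SS_split[of 20 9] N F by simp
qed

lemma CS_20_8: "SS 20 8 < 0"
proof -
  have nK: "int 20 = 6*3 + 2" by simp
  have w1: "{s. 0 \<le> s \<and> s < int 20 \<and> \<bar>2*s - int 8\<bar> < 8} = {1 .. 7}"
    by (auto simp: abs_less_iff)
  have c1: "(\<Sum>i\<in>{1..7}. ff 20 8 (nat i)) = (\<Sum>i\<in>{1..7}. nearF 3 2 8 i)"
  proof (rule sum.cong)
    fix x :: int assume "x \<in> {1..7}"
    then show "ff 20 8 (nat x) = nearF 3 2 8 x" using near_pt[OF nK, of x 8] by simp
  qed simp
  have N: "(\<Sum>t\<in>NWs 20 8. ff 20 8 t) = 0"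
    unfolding sum_NWs_int w1 unfolding c1 unfolding sum_upto_int
    by (simp add: nearF_def gsh upto_rec1)
  have w2: "{s. 0 \<le> s \<and> s < int 20 \<and> \<bar>2*s - int 8 - int 20\<bar> < 8} = {3*3 + 2 .. 3*3 + 8}"
    by (auto simp: abs_less_iff)
  have c2: "(\<Sum>i\<in>{2..8}. ff 20 8 (nat (3*3 + i))) = (\<Sum>i\<in>{2..8}. farF 3 2 8 i)"
  proof (rule sum.cong)
    fix x :: int assume "x \<in> {2..8}"
    then show "ff 20 8 (nat (3*3 + x)) = farF 3 2 8 x" using far_pt[OF nK, of 8 x] by simp
  qed simp
  have F: "(\<Sum>t\<in>FWs 20 8. ff 20 8 t) = -2"
    unfolding sum_FWs_int w2 unfolding sum_shift_int unfolding c2 unfolding sum_upto_int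
    by (simp add: farF_def gsh upto_rec1)
  show ?thesis using SS_split[of 20 8] N F by simp
qed

lemma CS_21_6: "SS 21 6 < 0"
proof -
  have nK: "int 21 = 6*3 + 3" by simp
  have w1: "{s. 0 \<le> s \<and> s < int 21 \<and> \<bar>2*s - int 6\<bar> < 8} = {0 .. 6}"
    by (auto simp: abs_less_iff)
  have c1: "(\<Sum>i\<in>{0..6}. ff 21 6 (nat i)) = (\<Sum>i\<in>{0..6}. nearF 3 3 6 i)"
  proof (rule sum.cong)
    fix x :: int assume "x \<in> {0..6}"
    then show "ff 21 6 (nat x) = nearF 3 3 6 x" using near_pt[OF nK, of x 6] by simp
  qed simp
  have N: "(\<Sum>t\<in>NWs 21 6. ff 21 6 t) = 0"
    unfolding sum_NWs_int w1 unfolding c1 unfolding sum_upto_int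
    by (simp add: nearF_def gsh upto_rec1)
  have w2: "{s. 0 \<le> s \<and> s < int 21 \<and> \<bar>2*s - int 6 - int 21\<bar> < 8} = {3*3 + 1 .. 3*3 + 8}"
    by (auto simp: abs_less_iff)
  have c2: "(\<Sum>i\<in>{1..8}. ff 21 6 (nat (3*3 + i))) = (\<Sum>i\<in>{1..8}. farF 3 3 6 i)"
  proof (rule sum.cong)
    fix x :: int assume "x \<in> {1..8}"
    then show "ff 21 6 (nat (3*3 + x)) = farF 3 3 6 x" using far_pt[OF nK, of 6 x] by simp
  qed simp
  have F: "(\<Sum>t\<in>FWs 21 6. ff 21 6 t) = -2"
    unfolding sum_FWs_int w2 unfolding sum_shift_int unfolding c2 unfolding sum_upto_int
    by (simp add: farF_def gsh upto_rec1)
  show ?thesis using SS_split[of 21 6] N F by simp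
qed

lemma CS_21_9: "SS 21 9 < 0"
proof -
  have nK: "int 21 = 6*3 + 3" by simp
  have w1: "{s. 0 \<le> s \<and> s < int 21 \<and> \<bar>2*s - int 9\<bar> < 8} = {1 .. 8}"
    by (auto simp: abs_less_iff)
  have c1: "(\<Sum>i\<in>{1..8}. ff 21 9 (nat i)) = (\<Sum>i\<in>{1..8}. nearF 3 3 9 i)"
  proof (rule sum.cong)
    fix x :: int assume "x \<in> {1..8}"
    then show "ff 21 9 (nat x) = nearF 3 3 9 x" using near_pt[OF nK, of x 9] by simp
  qed simp
  have N: "(\<Sum>t\<in>NWs 21 9. ff 21 9 t) = -1"
    unfolding sum_NWs_int w1 unfolding c1 unfolding sum_upto_int
    by (simp add: nearF_def gsh upto_rec1)
  have w2: "{s. 0 \<le> s \<and> s < int 21 \<and> \<bar>2*s - int 9 - int 21\<bar> < 8} = {3*3 + 3 .. 3*3 + 9}"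
    by (auto simp: abs_less_iff)
  have c2: "(\<Sum>i\<in>{3..9}. ff 21 9 (nat (3*3 + i))) = (\<Sum>i\<in>{3..9}. farF 3 3 9 i)"
  proof (rule sum.cong)
    fix x :: int assume "x \<in> {3..9}"
    then show "ff 21 9 (nat (3*3 + x)) = farF 3 3 9 x" using far_pt[OF nK, of 9 x] by simp
  qed simp
  have F: "(\<Sum>t\<in>FWs 21 9. ff 21 9 t) = -2"
    unfolding sum_FWs_int w2 unfolding sum_shift_int unfolding c2 unfolding sum_upto_int
    by (simp add: farF_def gsh upto_rec1)
  show ?thesis using SS_split[of 21 9] N F by simp
qed

lemma CS_21_8: "SS 21 8 < 0"
proof -
  have nK: "int 21 = 6*3 + 3" by simp
  have w1: "{s. 0 \<le> s \<and> s < int 21 \<and> \<bar>2*s - int 8\<bar> < 8} = {1 .. 7}"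
    by (auto simp: abs_less_iff)
  have c1: "(\<Sum>i\<in>{1..7}. ff 21 8 (nat i)) = (\<Sum>i\<in>{1..7}. nearF 3 3 8 i)"
  proof (rule sum.cong)
    fix x :: int assume "x \<in> {1..7}"
    then show "ff 21 8 (nat x) = nearF 3 3 8 x" using near_pt[OF nK, of x 8] by simp
  qed simp
  have N: "(\<Sum>t\<in>NWs 21 8. ff 21 8 t) = 0"
    unfolding sum_NWs_int w1 unfolding c1 unfolding sum_upto_int
    by (simp add: nearF_def gsh upto_rec1)
  have w2: "{s. 0 \<le> s \<and> s < int 21 \<and> \<bar>2*s - int 8 - int 21\<bar> < 8} = {3*3 + 2 .. 3*3 + 9}"
    by (auto simp: abs_less_iff)
  have c2: "(\<Sum>i\<in>{2..9}. ff 21 8 (nat (3*3 + i))) = (\<Sum>i\<in>{2..9}. farF 3 3 8 i)"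
  proof (rule sum.cong)
    fix x :: int assume "x \<in> {2..9}"
    then show "ff 21 8 (nat (3*3 + x)) = farF 3 3 8 x" using far_pt[OF nK, of 8 x] by simp
  qed simp
  have F: "(\<Sum>t\<in>FWs 21 8. ff 21 8 t) = -2"
    unfolding sum_FWs_int w2 unfolding sum_shift_int unfolding c2 unfolding sum_upto_int
    by (simp add: farF_def gsh upto_rec1)
  show ?thesis using SS_split[of 21 8] N F by simp
qed

lemma CS_22_6: "SS 22 6 < 0"
proof -
  have nK: "int 22 = 6*3 + 4" by simp
  have w1: "{s. 0 \<le> s \<and> s < int 22 \<and> \<bar>2*s - int 6\<bar> < 8} = {0 .. 6}"
    by (auto simp: abs_less_iff)
  have c1: "(\<Sum>i\<in>{0..6}. ff 22 6 (nat i)) = (\<Sum>i\<in>{0..6}. nearF 3 4 6 i)"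
  proof (rule sum.cong)
    fix x :: int assume "x \<in> {0..6}"
    then show "ff 22 6 (nat x) = nearF 3 4 6 x" using near_pt[OF nK, of x 6] by simp
  qed simp
  have N: "(\<Sum>t\<in>NWs 22 6. ff 22 6 t) = 0"
    unfolding sum_NWs_int w1 unfolding c1 unfolding sum_upto_int
    by (simp add: nearF_def gsh upto_rec1)
  have w2: "{s. 0 \<le> s \<and> s < int 22 \<and> \<bar>2*s - int 6 - int 22\<bar> < 8} = {3*3 + 2 .. 3*3 + 8}"
    by (auto simp: abs_less_iff)
  have c2: "(\<Sum>i\<in>{2..8}. ff 22 6 (nat (3*3 + i))) = (\<Sum>i\<in>{2..8}. farF 3 4 6 i)"
  proof (rule sum.cong)
    fix x :: int assume "x \<in> {2..8}"
    then show "ff 22 6 (nat (3*3 + x)) = farF 3 4 6 x" using far_pt[OF nK, of 6 x] by simp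
  qed simp
  have F: "(\<Sum>t\<in>FWs 22 6. ff 22 6 t) = -2"
    unfolding sum_FWs_int w2 unfolding sum_shift_int unfolding c2 unfolding sum_upto_int
    by (simp add: farF_def gsh upto_rec1)
  show ?thesis using SS_split[of 22 6] N F by simp
qed

lemma CS_22_9: "SS 22 9 < 0"
proof -
  have nK: "int 22 = 6*3 + 4" by simp
  have w1: "{s. 0 \<le> s \<and> s < int 22 \<and> \<bar>2*s - int 9\<bar> < 8} = {1 .. 8}"
    by (auto simp: abs_less_iff)
  have c1: "(\<Sum>i\<in>{1..8}. ff 22 9 (nat i)) = (\<Sum>i\<in>{1..8}. nearF 3 4 9 i)"
  proof (rule sum.cong)
    fix x :: int assume "x \<in> {1..8}"
    then show "ff 22 9 (nat x) = nearF 3 4 9 x" using near_pt[OF nK, of x 9] by simp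
  qed simp
  have N: "(\<Sum>t\<in>NWs 22 9. ff 22 9 t) = -1"
    unfolding sum_NWs_int w1 unfolding c1 unfolding sum_upto_int
    by (simp add: nearF_def gsh upto_rec1)
  have w2: "{s. 0 \<le> s \<and> s < int 22 \<and> \<bar>2*s - int 9 - int 22\<bar> < 8} = {3*3 + 3 .. 3*3 + 10}"
    by (auto simp: abs_less_iff)
  have c2: "(\<Sum>i\<in>{3..10}. ff 22 9 (nat (3*3 + i))) = (\<Sum>i\<in>{3..10}. farF 3 4 9 i)"
  proof (rule sum.cong)
    fix x :: int assume "x \<in> {3..10}"
    then show "ff 22 9 (nat (3*3 + x)) = farF 3 4 9 x" using far_pt[OF nK, of 9 x] by simp
  qed simp
  have F: "(\<Sum>t\<in>FWs 22 9. ff 22 9 t) = -2"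
    unfolding sum_FWs_int w2 unfolding sum_shift_int unfolding c2 unfolding sum_upto_int
    by (simp add: farF_def gsh upto_rec1)
  show ?thesis using SS_split[of 22 9] N F by simp
qed

lemma CS_22_8: "SS 22 8 < 0"
proof -
  have nK: "int 22 = 6*3 + 4" by simp
  have w1: "{s. 0 \<le> s \<and> s < int 22 \<and> \<bar>2*s - int 8\<bar> < 8} = {1 .. 7}"
    by (auto simp: abs_less_iff)
  have c1: "(\<Sum>i\<in>{1..7}. ff 22 8 (nat i)) = (\<Sum>i\<in>{1..7}. nearF 3 4 8 i)"
  proof (rule sum.cong)
    fix x :: int assume "x \<in> {1..7}"
    then show "ff 22 8 (nat x) = nearF 3 4 8 x" using near_pt[OF nK, of x 8] by simp
  qed simp
  have N: "(\<Sum>t\<in>NWs 22 8. ff 22 8 t) = 0"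
    unfolding sum_NWs_int w1 unfolding c1 unfolding sum_upto_int
    by (simp add: nearF_def gsh upto_rec1)
  have w2: "{s. 0 \<le> s \<and> s < int 22 \<and> \<bar>2*s - int 8 - int 22\<bar> < 8} = {3*3 + 3 .. 3*3 + 9}"
    by (auto simp: abs_less_iff)
  have c2: "(\<Sum>i\<in>{3..9}. ff 22 8 (nat (3*3 + i))) = (\<Sum>i\<in>{3..9}. farF 3 4 8 i)"
  proof (rule sum.cong)
    fix x :: int assume "x \<in> {3..9}"
    then show "ff 22 8 (nat (3*3 + x)) = farF 3 4 8 x" using far_pt[OF nK, of 8 x] by simp
  qed simp
  have F: "(\<Sum>t\<in>FWs 22 8. ff 22 8 t) = -2"
    unfolding sum_FWs_int w2 unfolding sum_shift_int unfolding c2 unfolding sum_upto_int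
    by (simp add: farF_def gsh upto_rec1)
  show ?thesis using SS_split[of 22 8] N F by simp
qed

lemma CS_22_11: "SS 22 11 < 0"
proof -
  have nK: "int 22 = 6*3 + 4" by simp
  have w1: "{s. 0 \<le> s \<and> s < int 22 \<and> \<bar>2*s - int 11\<bar> < 8} = {2 .. 9}"
    by (auto simp: abs_less_iff)
  have c1: "(\<Sum>i\<in>{2..9}. ff 22 11 (nat i)) = (\<Sum>i\<in>{2..9}. nearF 3 4 11 i)"
  proof (rule sum.cong)
    fix x :: int assume "x \<in> {2..9}"
    then show "ff 22 11 (nat x) = nearF 3 4 11 x" using near_pt[OF nK, of x 11] by simp
  qed simp
  have N: "(\<Sum>t\<in>NWs 22 11. ff 22 11 t) = -1"
    unfolding sum_NWs_int w1 unfolding c1 unfolding sum_upto_int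
    by (simp add: nearF_def gsh upto_rec1)
  have w2: "{s. 0 \<le> s \<and> s < int 22 \<and> \<bar>2*s - int 11 - int 22\<bar> < 8} = {3*3 + 4 .. 3*3 + 11}"
    by (auto simp: abs_less_iff)
  have c2: "(\<Sum>i\<in>{4..11}. ff 22 11 (nat (3*3 + i))) = (\<Sum>i\<in>{4..11}. farF 3 4 11 i)"
  proof (rule sum.cong)
    fix x :: int assume "x \<in> {4..11}"
    then show "ff 22 11 (nat (3*3 + x)) = farF 3 4 11 x" using far_pt[OF nK, of 11 x] by simp
  qed simp
  have F: "(\<Sum>t\<in>FWs 22 11. ff 22 11 t) = -1"
    unfolding sum_FWs_int w2 unfolding sum_shift_int unfolding c2 unfolding sum_upto_int
    by (simp add: farF_def gsh upto_rec1)
  show ?thesis using SS_split[of 22 11] N F by simp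
qed

lemma CS_23_6: "SS 23 6 < 0"
proof -
  have nK: "int 23 = 6*3 + 5" by simp
  have w1: "{s. 0 \<le> s \<and> s < int 23 \<and> \<bar>2*s - int 6\<bar> < 8} = {0 .. 6}"
    by (auto simp: abs_less_iff)
  have c1: "(\<Sum>i\<in>{0..6}. ff 23 6 (nat i)) = (\<Sum>i\<in>{0..6}. nearF 3 5 6 i)"
  proof (rule sum.cong)
    fix x :: int assume "x \<in> {0..6}"
    then show "ff 23 6 (nat x) = nearF 3 5 6 x" using near_pt[OF nK, of x 6] by simp
  qed simp
  have N: "(\<Sum>t\<in>NWs 23 6. ff 23 6 t) = 0"
    unfolding sum_NWs_int w1 unfolding c1 unfolding sum_upto_int
    by (simp add: nearF_def gsh upto_rec1)
  have w2: "{s. 0 \<le> s \<and> s < int 23 \<and> \<bar>2*s - int 6 - int 23\<bar> < 8} = {3*3 + 2 .. 3*3 + 9}"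
    by (auto simp: abs_less_iff)
  have c2: "(\<Sum>i\<in>{2..9}. ff 23 6 (nat (3*3 + i))) = (\<Sum>i\<in>{2..9}. farF 3 5 6 i)"
  proof (rule sum.cong)
    fix x :: int assume "x \<in> {2..9}"
    then show "ff 23 6 (nat (3*3 + x)) = farF 3 5 6 x" using far_pt[OF nK, of 6 x] by simp
  qed simp
  have F: "(\<Sum>t\<in>FWs 23 6. ff 23 6 t) = -2"
    unfolding sum_FWs_int w2 unfolding sum_shift_int unfolding c2 unfolding sum_upto_int
    by (simp add: farF_def gsh upto_rec1)
  show ?thesis using SS_split[of 23 6] N F by simp
qed

lemma CS_23_9: "SS 23 9 < 0"
proof -
  have nK: "int 23 = 6*3 + 5" by simp
  have w1: "{s. 0 \<le> s \<and> s < int 23 \<and> \<bar>2*s - int 9\<bar> < 8} = {1 .. 8}"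
    by (auto simp: abs_less_iff)
  have c1: "(\<Sum>i\<in>{1..8}. ff 23 9 (nat i)) = (\<Sum>i\<in>{1..8}. nearF 3 5 9 i)"
  proof (rule sum.cong)
    fix x :: int assume "x \<in> {1..8}"
    then show "ff 23 9 (nat x) = nearF 3 5 9 x" using near_pt[OF nK, of x 9] by simp
  qed simp
  have N: "(\<Sum>t\<in>NWs 23 9. ff 23 9 t) = -1"
    unfolding sum_NWs_int w1 unfolding c1 unfolding sum_upto_int
    by (simp add: nearF_def gsh upto_rec1)
  have w2: "{s. 0 \<le> s \<and> s < int 23 \<and> \<bar>2*s - int 9 - int 23\<bar> < 8} = {3*3 + 4 .. 3*3 + 10}"
    by (auto simp: abs_less_iff)
  have c2: "(\<Sum>i\<in>{4..10}. ff 23 9 (nat (3*3 + i))) = (\<Sum>i\<in>{4..10}. farF 3 5 9 i)"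
  proof (rule sum.cong)
    fix x :: int assume "x \<in> {4..10}"
    then show "ff 23 9 (nat (3*3 + x)) = farF 3 5 9 x" using far_pt[OF nK, of 9 x] by simp
  qed simp
  have F: "(\<Sum>t\<in>FWs 23 9. ff 23 9 t) = -2"
    unfolding sum_FWs_int w2 unfolding sum_shift_int unfolding c2 unfolding sum_upto_int
    by (simp add: farF_def gsh upto_rec1)
  show ?thesis using SS_split[of 23 9] N F by simp
qed

lemma CS_23_8: "SS 23 8 < 0"
proof -
  have nK: "int 23 = 6*3 + 5" by simp
  have w1: "{s. 0 \<le> s \<and> s < int 23 \<and> \<bar>2*s - int 8\<bar> < 8} = {1 .. 7}"
    by (auto simp: abs_less_iff)
  have c1: "(\<Sum>i\<in>{1..7}. ff 23 8 (nat i)) = (\<Sum>i\<in>{1..7}. nearF 3 5 8 i)"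
  proof (rule sum.cong)
    fix x :: int assume "x \<in> {1..7}"
    then show "ff 23 8 (nat x) = nearF 3 5 8 x" using near_pt[OF nK, of x 8] by simp
  qed simp
  have N: "(\<Sum>t\<in>NWs 23 8. ff 23 8 t) = 0"
    unfolding sum_NWs_int w1 unfolding c1 unfolding sum_upto_int
    by (simp add: nearF_def gsh upto_rec1)
  have w2: "{s. 0 \<le> s \<and> s < int 23 \<and> \<bar>2*s - int 8 - int 23\<bar> < 8} = {3*3 + 3 .. 3*3 + 10}"
    by (auto simp: abs_less_iff)
  have c2: "(\<Sum>i\<in>{3..10}. ff 23 8 (nat (3*3 + i))) = (\<Sum>i\<in>{3..10}. farF 3 5 8 i)"
  proof (rule sum.cong)
    fix x :: int assume "x \<in> {3..10}"
    then show "ff 23 8 (nat (3*3 + x)) = farF 3 5 8 x" using far_pt[OF nK, of 8 x] by simp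
  qed simp
  have F: "(\<Sum>t\<in>FWs 23 8. ff 23 8 t) = -2"
    unfolding sum_FWs_int w2 unfolding sum_shift_int unfolding c2 unfolding sum_upto_int
    by (simp add: farF_def gsh upto_rec1)
  show ?thesis using SS_split[of 23 8] N F by simp
qed

lemma CS_28_14: "SS 28 14 < 0"
proof -
  have nK: "int 28 = 6*4 + 4" by simp
  have w1: "{s. 0 \<le> s \<and> s < int 28 \<and> \<bar>2*s - int 14\<bar> < 8} = {4 .. 10}"
    by (auto simp: abs_less_iff)
  have c1: "(\<Sum>i\<in>{4..10}. ff 28 14 (nat i)) = (\<Sum>i\<in>{4..10}. nearF 4 4 14 i)"
  proof (rule sum.cong)
    fix x :: int assume "x \<in> {4..10}"
    then show "ff 28 14 (nat x) = nearF 4 4 14 x" using near_pt[OF nK, of x 14] by simp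
  qed simp
  have N: "(\<Sum>t\<in>NWs 28 14. ff 28 14 t) = -2"
    unfolding sum_NWs_int w1 unfolding c1 unfolding sum_upto_int
    by (simp add: nearF_def gsh upto_rec1)
  have w2: "{s. 0 \<le> s \<and> s < int 28 \<and> \<bar>2*s - int 14 - int 28\<bar> < 8} = {3*4 + 6 .. 3*4 + 12}"
    by (auto simp: abs_less_iff)
  have c2: "(\<Sum>i\<in>{6..12}. ff 28 14 (nat (3*4 + i))) = (\<Sum>i\<in>{6..12}. farF 4 4 14 i)"
  proof (rule sum.cong)
    fix x :: int assume "x \<in> {6..12}"
    then show "ff 28 14 (nat (3*4 + x)) = farF 4 4 14 x" using far_pt[OF nK, of 14 x] by simp
  qed simp
  have F: "(\<Sum>t\<in>FWs 28 14. ff 28 14 t) = -2"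
    unfolding sum_FWs_int w2 unfolding sum_shift_int unfolding c2 unfolding sum_upto_int
    by (simp add: farF_def gsh upto_rec1)
  show ?thesis using SS_split[of 28 14] N F by simp
qed



lemma PNI_le: assumes "24 \<le> n" "j \<in> {6, 8, 9, 11, 14, 17}" shows "(\<Sum>t\<in>NWs n j. ff n j t) \<le> 0"
proof -
  define K where "K = int (n div 6)"
  have K: "K \<ge> 4" using assms K_def by simp
  have n: "int n = 6*K + int (n mod 6)" unfolding K_def by presburger
  have "n mod 6 = 0 \<or> n mod 6 = 1 \<or> n mod 6 = 2 \<or> n mod 6 = 3 \<or> n mod 6 = 4 \<or> n mod 6 = 5" by presburger
  then show ?thesis
  proof (elim disjE)
    assume "n mod 6 = 0"
    then have nK: "int n = 6*K + 0" using n by simp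
    show ?thesis using assms(2) PNI_6_0[OF nK K] PNI_8_0[OF nK K] PNI_9_0[OF nK K] PNI_11_0[OF nK K]
      PNI_14_0[OF nK K] PNI_17_0[OF nK K] by auto
  next
    assume "n mod 6 = 1"
    then have nK: "int n = 6*K + 1" using n by simp
    show ?thesis using assms(2) PNI_6_1[OF nK K] PNI_8_1[OF nK K] PNI_9_1[OF nK K] PNI_11_1[OF nK K]
      PNI_14_1[OF nK K] PNI_17_1[OF nK K] by auto
  next
    assume "n mod 6 = 2"
    then have nK: "int n = 6*K + 2" using n by simp
    show ?thesis using assms(2) PNI_6_2[OF nK K] PNI_8_2[OF nK K] PNI_9_2[OF nK K] PNI_11_2[OF nK K]
      PNI_14_2[OF nK K] PNI_17_2[OF nK K] by auto
  next
    assume "n mod 6 = 3"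
    then have nK: "int n = 6*K + 3" using n by simp
    show ?thesis using assms(2) PNI_6_3[OF nK K] PNI_8_3[OF nK K] PNI_9_3[OF nK K] PNI_11_3[OF nK K]
      PNI_14_3[OF nK K] PNI_17_3[OF nK K] by auto
  next
    assume "n mod 6 = 4"
    then have nK: "int n = 6*K + 4" using n by simp
    show ?thesis using assms(2) PNI_6_4[OF nK K] PNI_8_4[OF nK K] PNI_9_4[OF nK K] PNI_11_4[OF nK K]
      PNI_14_4[OF nK K] PNI_17_4[OF nK K] by auto
  next
    assume "n mod 6 = 5"
    then have nK: "int n = 6*K + 5" using n by simp
    show ?thesis using assms(2) PNI_6_5[OF nK K] PNI_8_5[OF nK K] PNI_9_5[OF nK K] PNI_11_5[OF nK K]
      PNI_14_5[OF nK K] PNI_17_5[OF nK K] by auto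
  qed
qed

lemma PHI_small_le: "j \<in> {6, 8, 9, 11, 14, 17} \<Longrightarrow> PHI (int j) \<le> 0"
  using PHI_c6 PHI_c8 PHI_c9 PHI_c11 PHI_c14 PHI_c17 by auto

definition jsel :: "nat \<Rightarrow> nat \<Rightarrow> nat" where
  "jsel n l = (if n = 17 \<and> l = 4 then 8 else if l \<le> 4 then 3*l - 3 else 3*l - 7)"

lemma SS_neg: assumes "24 \<le> n" "2*j \<le> n" "j \<in> {6, 8, 9, 11, 14, 17} \<or> 20 \<le> j"
  "(n = 28 \<or> n = 29) \<Longrightarrow> j \<noteq> 14"
  shows "SS n j < 0"
proof -
  have sp: "SS n j = (\<Sum>t\<in>NWs n j. ff n j t) + (\<Sum>t\<in>FWs n j. ff n j t)"
    by (rule SS_split) (use assms(1,2,3) in auto)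
  show ?thesis
  proof (cases "40 \<le> n")
    case True
    have N: "(\<Sum>t\<in>NWs n j. ff n j t) = PHI (int j)" by (rule near_sum) (use assms(2,3) True in auto)
    have N0: "PHI (int j) \<le> 0"
    proof (cases "20 \<le> j")
      case True then show ?thesis using PHI_ge[of "int j"] by simp
    next
      case False then show ?thesis using assms(3) PHI_small_le[of j] by simp
    qed
    have F: "(\<Sum>t\<in>FWs n j. ff n j t) = -2"
    proof (cases "20 \<le> j")
      case True
      then have "(\<Sum>t\<in>FWs n j. ff n j t) = PHI (int n - int j)"
        using far_sum[of n j] assms(2) \<open>40 \<le> n\<close> by auto
      also have "... = -2" by (rule PHI_ge) (use assms(2) \<open>40 \<le> n\<close> in auto)
      finally show ?thesis .
    next
      case False
      then have "j \<in> {6, 8, 9, 11, 14, 17}" using assms(3) by simp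
      then show ?thesis using PSI_all[of n j] \<open>40 \<le> n\<close> by simp
    qed
    show ?thesis using sp N N0 F by simp
  next
    case False
    then have js: "j \<in> {6, 8, 9, 11, 14, 17}" using assms(2,3) by auto
    have N: "(\<Sum>t\<in>NWs n j. ff n j t) \<le> 0" using PNI_le[of n j] js assms(1) by auto
    have "j \<ge> 14 \<Longrightarrow> 30 \<le> n" using assms(1,2,4) by presburger
    then have F: "(\<Sum>t\<in>FWs n j. ff n j t) = -2" using PSI_all[of n j] js assms(1) by simp
    show ?thesis using sp N F by simp
  qed
qed

lemma SS_neg_small: assumes "17 \<le> n" "n \<le> 23" "3 \<le> l" "int l + 1 \<le> MM n"
  shows "SS n (jsel n l) < 0"
proof -
  have "l \<le> 6" using assms unfolding MM_def by presburger
  then have "(n = 17 \<or> n = 18 \<or> n = 19 \<or> n = 20 \<or> n = 21 \<or> n = 22 \<or> n = 23) \<and> (l = 3 \<or> l = 4 \<or> l = 5 \<or> l = 6)"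
    using assms(1,2,3) by presburger
  then show ?thesis using assms(4) CS_17_6 CS_17_8 CS_18_6 CS_18_9 CS_18_8 CS_19_6 CS_19_9 CS_19_8
    CS_20_6 CS_20_9 CS_20_8 CS_21_6 CS_21_9 CS_21_8 CS_22_6 CS_22_9 CS_22_8 CS_22_11
    CS_23_6 CS_23_9 CS_23_8
    by (elim conjE disjE; simp add: jsel_def MM_def)
qed



lemma HH_le_MM: assumes "17 \<le> n" "0 \<le> d" "d < int n" shows "HH n p q d \<le> MM n"
proof (cases "n = 17")
  case True
  have "0 \<le> d" "d \<le> 16" using assms True by auto
  then have "d = 0 \<or> d = 1 \<or> d = 2 \<or> d = 3 \<or> d = 4 \<or> d = 5 \<or> d = 6 \<or> d = 7 \<or> d = 8 \<or> d = 9 \<or> d = 10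
    \<or> d = 11 \<or> d = 12 \<or> d = 13 \<or> d = 14 \<or> d = 15 \<or> d = 16" by presburger
  then show ?thesis unfolding True MM_def HH_def
    by (elim disjE; cases p; cases q; simp add: gg_def gsh)
next
  case False
  define K where "K = int (n div 6)"
  have K: "K \<ge> 3" using assms False K_def by simp
  have n: "int n = 6*K + int (n mod 6)" unfolding K_def by presburger
  have M: "MM n = K + (if n mod 6 = 4 then 4 else 3)" unfolding MM_def K_def by simp
  show ?thesis
  proof (cases "\<bar>int n - 2*d\<bar> \<ge> 12")
    case True
    have "3 * HH n p q d \<le> hh n d + UB p q" using HH_up[of d n p q] assms by simp
    moreover have "UB p q \<le> 10" unfolding UB_def by simp
    moreover have "2 * hh n d \<le> int n - 12" unfolding hh_def using True by (auto simp: abs_if min_def)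
    moreover have "int (n mod 6) \<le> 5" by simp
    ultimately show ?thesis unfolding M using n by auto
  next
    case False
    define c where "c = d - 3*K"
    have d: "d = 3*K + c" unfolding c_def by simp
    have "n mod 6 = 0 \<or> n mod 6 = 1 \<or> n mod 6 = 2 \<or> n mod 6 = 3 \<or> n mod 6 = 4 \<or> n mod 6 = 5" by presburger
    then show ?thesis
    proof (elim disjE)
      assume r: "n mod 6 = 0"
      then have nK: "int n = 6*K + 0" using n by simp
      show ?thesis unfolding M d using HH_MM_0[OF nK K, of c p q] False r nK d by (auto simp: abs_less_iff)
    next
      assume r: "n mod 6 = 1"
      then have nK: "int n = 6*K + 1" using n by simp
      show ?thesis unfolding M d using HH_MM_1[OF nK K, of c p q] False r nK d by (auto simp: abs_less_iff)
    next
      assume r: "n mod 6 = 2"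
      then have nK: "int n = 6*K + 2" using n by simp
      show ?thesis unfolding M d using HH_MM_2[OF nK K, of c p q] False r nK d by (auto simp: abs_less_iff)
    next
      assume r: "n mod 6 = 3"
      then have nK: "int n = 6*K + 3" using n by simp
      show ?thesis unfolding M d using HH_MM_3[OF nK K, of c p q] False r nK d by (auto simp: abs_less_iff)
    next
      assume r: "n mod 6 = 4"
      then have nK: "int n = 6*K + 4" using n by simp
      show ?thesis unfolding M d using HH_MM_4[OF nK K, of c p q] False r nK d by (auto simp: abs_less_iff)
    next
      assume r: "n mod 6 = 5"
      then have nK: "int n = 6*K + 5" using n by simp
      show ?thesis unfolding M d using HH_MM_5[OF nK K, of c p q] False r nK d by (auto simp: abs_less_iff)
    qed
  qed
qed

lemma gdiam_le: assumes "17 \<le> n" shows "int (gdiam (gp_verts n) (gp_adj n 3)) \<le> MM n"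
proof -
  define Sd where "Sd = {gdist (gp_verts n) (gp_adj n 3) x y | x y. x \<in> gp_verts n \<and> y \<in> gp_verts n}"
  have fin: "finite (gp_verts n)" unfolding gp_verts_def by simp
  have "Sd = (\<lambda>(x, y). gdist (gp_verts n) (gp_adj n 3) x y) ` (gp_verts n \<times> gp_verts n)"
    unfolding Sd_def by auto
  then have finS: "finite Sd" using fin by simp
  have "(False, 0) \<in> gp_verts n" unfolding gp_verts_def using assms by auto
  then have ne: "Sd \<noteq> {}" unfolding Sd_def by blast
  have bnd: "int s \<le> MM n" if sS: "s \<in> Sd" for s
  proof -
    obtain x y where xy: "x \<in> gp_verts n" "y \<in> gp_verts n" "s = gdist (gp_verts n) (gp_adj n 3) x y"
      using sS unfolding Sd_def by blast
    have "s = FF n x y" using gp_dist[of n x y] xy assms by simp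
    moreover have "HH n (fst x) (fst y) (DD n (snd x) (snd y)) \<le> MM n"
      using HH_le_MM[of n "DD n (snd x) (snd y)"] DD_range[of n] assms by auto
    moreover have "HH n (fst x) (fst y) (DD n (snd x) (snd y)) \<ge> 0" using HX_nonneg[of n x y] assms by simp
    ultimately show ?thesis unfolding FF_def by simp
  qed
  have "Max Sd \<in> Sd" using finS ne by simp
  then show ?thesis unfolding gdiam_def Sd_def[symmetric] using bnd by blast
qed



lemma guv_ge0: assumes "0 \<le> q" "3*q \<le> b" shows "q + 1 \<le> guv b"
proof -
  have "b = 3*(b div 3) + b mod 3" "0 \<le> b mod 3" "b mod 3 < 3" by auto
  then have "q \<le> b div 3" using assms by (smt (verit))
  then show ?thesis unfolding guv_def using \<open>0 \<le> b mod 3\<close> by simp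
qed

lemma guv_ge2: assumes "0 \<le> q" "3*q + 4 \<le> b" shows "q + 3 \<le> guv b"
proof -
  have "b = 3*(b div 3) + b mod 3" "0 \<le> b mod 3" "b mod 3 < 3" by auto
  then show ?thesis unfolding guv_def using assms by (smt (verit))
qed

lemma jsel_props: assumes "17 \<le> n" "3 \<le> l" "int l + 1 \<le> MM n"
  shows "2 * jsel n l \<le> n" "HH n False True (int (jsel n l)) = int l"
    "jsel n l \<in> {6, 8, 9, 11, 14, 17} \<or> 20 \<le> jsel n l"
proof -
  have H: "HH n False True d = min (guv d) (guv (int n - d))" for d unfolding HH_def gg_def by simp
  have "(2 * jsel n l \<le> n \<and> HH n False True (int (jsel n l)) = int l) \<and>
        (jsel n l \<in> {6, 8, 9, 11, 14, 17} \<or> 20 \<le> jsel n l)"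
  proof (cases "n = 17 \<and> l = 4")
    case True
    then show ?thesis unfolding jsel_def H by (simp add: gsh)
  next
    case nt: False
    show ?thesis
    proof (cases "l \<le> 4")
      case True
      then have j: "jsel n l = 3*l - 3" using nt unfolding jsel_def by simp
      have n18: "l = 4 \<Longrightarrow> 18 \<le> n" using nt assms by auto
      have l34: "l = 3 \<or> l = 4" using True assms by auto
      have jj: "int (jsel n l) = 3 * (int l - 1)" unfolding j using assms by simp
      have g1: "guv (int (jsel n l)) = int l" unfolding jj guv_def by simp
      have two: "2 * jsel n l \<le> n" unfolding j using l34 n18 assms by auto
      have g2: "int l \<le> guv (int n - int (jsel n l))"
        using guv_ge0[of "int l - 1" "int n - int (jsel n l)"] two assms jj by simp
      show ?thesis using g1 g2 two l34 unfolding H j by auto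
    next
      case False
      then have j: "jsel n l = 3*l - 7" unfolding jsel_def by simp
      have jj: "int (jsel n l) = 3 * (int l - 3) + 2" unfolding j using False by simp
      have g1: "guv (int (jsel n l)) = int l" unfolding jj guv_sh using guv_def by simp
      have M: "int l + 1 \<le> int (n div 6) + (if n mod 6 = 4 then 4 else 3)" using assms(3) unfolding MM_def .
      have two: "2 * jsel n l + 2 \<le> n \<or> 2 * jsel n l = n" unfolding j using M False by presburger
      have g2: "int l \<le> guv (int n - int (jsel n l))"
      proof (cases "2 * jsel n l = n")
        case True
        then have "int n - int (jsel n l) = int (jsel n l)" by linarith
        then show ?thesis using g1 by simp
      next
        case False
        then show ?thesis using guv_ge2[of "int l - 3" "int n - int (jsel n l)"] two jj \<open>\<not> l \<le> 4\<close> by simp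
      qed
      have "l = 5 \<or> l = 6 \<or> l = 7 \<or> l = 8 \<or> 9 \<le> l" using False by presburger
      then have "jsel n l \<in> {6, 8, 9, 11, 14, 17} \<or> 20 \<le> jsel n l" unfolding j by (elim disjE; simp; linarith)
      then show ?thesis using g1 g2 two unfolding H by auto
    qed
  qed
  then show "2 * jsel n l \<le> n" "HH n False True (int (jsel n l)) = int l"
    "jsel n l \<in> {6, 8, 9, 11, 14, 17} \<or> 20 \<le> jsel n l" by auto
qed

lemma card_SS: assumes "17 \<le> n" "j < n"
  shows "int (card (Wset (gp_verts n) (gp_adj n 3) (False, 0) (True, j)))
       - int (card (Wset (gp_verts n) (gp_adj n 3) (True, j) (False, 0))) = SS n j"
proof -
  let ?V = "gp_verts n" and ?E = "gp_adj n 3"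
  have xV: "(False, 0) \<in> ?V" "(True, j) \<in> ?V" unfolding gp_verts_def using assms by auto
  have g1: "gdist ?V ?E w (False, 0) = FF n w (False, 0)" if "w \<in> ?V" for w
    using gp_dist[of n w "(False, 0)"] that xV assms by simp
  have g2: "gdist ?V ?E w (True, j) = FF n w (True, j)" if "w \<in> ?V" for w
    using gp_dist[of n w "(True, j)"] that xV assms by simp
  have W1: "Wset ?V ?E (False, 0) (True, j) = {w \<in> ?V. int (FF n w (False, 0)) < int (FF n w (True, j))}"
    unfolding Wset_def using g1 g2 by auto
  have W2: "Wset ?V ?E (True, j) (False, 0) = {w \<in> ?V. int (FF n w (True, j)) < int (FF n w (False, 0))}"
    unfolding Wset_def using g1 g2 by auto
  have fin: "finite ?V" unfolding gp_verts_def by simp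
  have "int (card (Wset ?V ?E (False, 0) (True, j))) - int (card (Wset ?V ?E (True, j) (False, 0)))
      = (\<Sum>w\<in>?V. sgn (int (FF n w (True, j)) - int (FF n w (False, 0))))"
    unfolding W1 W2 using sum_sgn_card[OF fin, of "\<lambda>w. int (FF n w (True, j))" "\<lambda>w. int (FF n w (False, 0))"]
    by simp
  also have "... = (\<Sum>w\<in>?V. sig n j (fst w) (snd w))"
  proof (rule sum.cong)
    fix w assume "w \<in> ?V"
    have n0: "n > 0" using assms by simp
    have "int (FF n w (True, j)) = HH n (fst w) True (DD n (snd w) j)"
      unfolding FF_def using HX_nonneg[OF n0, of w "(True, j)"] by simp
    moreover have "int (FF n w (False, 0)) = HH n (fst w) False (DD n (snd w) 0)"
      unfolding FF_def using HX_nonneg[OF n0, of w "(False, 0)"] by simp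
    ultimately show "sgn (int (FF n w (True, j)) - int (FF n w (False, 0))) = sig n j (fst w) (snd w)"
      unfolding sig_def by simp
  qed simp
  also have "... = (\<Sum>p\<in>(UNIV::bool set). \<Sum>t\<in>{0..<n}. sig n j p t)"
    unfolding gp_verts_def by (simp add: sum.cartesian_product case_prod_beta)
  also have "... = SS n j" unfolding SS_def by (simp add: UNIV_bool sum.distrib add.commute)
  finally show ?thesis .
qed

theorem proposition2p3:
  fixes n l :: nat
  assumes "n > 16" and "3 \<le> l" and "l < gdiam (gp_verts n) (gp_adj n 3)"
  shows "\<not> distance_balanced_at (gp_verts n) (gp_adj n 3) l"
proof
  assume bal: "distance_balanced_at (gp_verts n) (gp_adj n 3) l"
  have n17: "17 \<le> n" using assms by simp
  have lM: "int l + 1 \<le> MM n" using gdiam_le[OF n17] assms(3) by simp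
  define j where "j = jsel n l"
  have jp: "2 * j \<le> n" "HH n False True (int j) = int l" "j \<in> {6, 8, 9, 11, 14, 17} \<or> 20 \<le> j"
    using jsel_props[OF n17 assms(2) lM] unfolding j_def by auto
  have jn: "j < n" using jp n17 by simp
  have xV: "(False, 0) \<in> gp_verts n" "(True, j) \<in> gp_verts n" unfolding gp_verts_def using jn n17 by auto
  have "DD n 0 j = int j" unfolding DD_def using jn by simp
  then have "FF n (False, 0) (True, j) = l" unfolding FF_def using jp by simp
  then have d: "gdist (gp_verts n) (gp_adj n 3) (False, 0) (True, j) = l"
    using gp_dist[of n "(False, 0)" "(True, j)"] xV n17 by simp
  have neg: "SS n j < 0"
  proof (cases "n \<le> 23")
    case True
    then show ?thesis unfolding j_def using SS_neg_small[OF n17 True assms(2) lM] by simp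
  next
    case False
    show ?thesis
    proof (cases "n = 28 \<and> l = 7")
      case True
      then have "j = 14" unfolding j_def jsel_def by simp
      then show ?thesis using True CS_28_14 by simp
    next
      case nt: False
      have "(n = 28 \<or> n = 29) \<Longrightarrow> j \<noteq> 14"
      proof
        assume n: "n = 28 \<or> n = 29" and j14: "j = 14"
        then have "l = 7" unfolding j_def jsel_def by (auto split: if_splits)
        then show False using n nt lM unfolding MM_def by auto
      qed
      then show ?thesis using SS_neg[of n j] False jp by simp
    qed
  qed
  have "card (Wset (gp_verts n) (gp_adj n 3) (False, 0) (True, j))
      = card (Wset (gp_verts n) (gp_adj n 3) (True, j) (False, 0))"
    using bal xV d unfolding distance_balanced_at_def by blast
  then show False using card_SS[OF n17 jn] neg by simp
qed


end
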